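(* Let $(P,H,V,\theta)$ be a frame resolution of $(M,\Omega^1M)$, $\omega$ a left strong connection on $P$, and $\nabla:\Omega^1M\to\Omega^1M\otimes_M\Omega^1M$ the induced covariant derivative, $\nabla(w)=1\otimes w-\sum_ip_i\otimes\theta(v_i)-\sum_ip_i{}^{(1)}\omega(p_i{}^{(2)})\theta(v_i)$ where $s_\theta^{-1}(w)=\sum_ip_i\otimes v_i$. Define the torsion tensor $T=d-\nabla:\Omega^1M\to\Omega^1M\otimes_M\Omega^1M$. For $v\in V$ with $\theta(v)=\sum_\alpha\theta_\alpha\otimes\theta^\alpha$ define \[\bar D\theta(v)=1\otimes\theta(v)-\sum_\alpha\theta_\alpha\otimes1\otimes\theta^\alpha+\theta(v)\otimes1+\omega(v^{\tilde{(1)}})\,\theta(v^{\tilde{(2)}}),\] where $v^{\tilde{(1)}}\otimes v^{\tilde{(2)}}=S^{-1}(v^{(2)})\otimes v^{(1)}$ and $\omega(\cdot)\theta(\cdot)$ multiplies the adjacent copies of $P$. Then $\bar D\theta:V\to P\Omega^2M$ is right strongly tensorial and $T$ corresponds to it under the correspondence $\theta'\mapsto s_{\theta'}$, i.e. $T\big(\sum_ip_i\theta(v_i)\big)=\sum_ip_i\,\bar D\theta(v_i)$ for all $\sum_ip_i\otimes v_i\in\mathcal{E}$.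
   Context: $k$ is a field. For a unital algebra $A$, $\Omega^1A=\ker(\mu:A\otimes A\to A)$ with $da=1\otimes a-a\otimes1$; $\Omega^nA=\Omega^1A\otimes_A\cdots\otimes_A\Omega^1A\subset A^{\otimes(n+1)}$; products by concatenation (multiplying adjacent factors); $d$ on $\Omega^1A$ is $d(a\otimes b)=1\otimes a\otimes b-a\otimes1\otimes b+a\otimes b\otimes1$. A quantum principal bundle: $H$ Hopf algebra ($\Delta h=h_{(1)}\otimes h_{(2)}$, counit $\epsilon$, invertible antipode $S$); $P$ a right $H$-comodule algebra, $\Delta_R(p)=p^{(1)}\otimes p^{(2)}$; $M=\{p:\Delta_Rp=p\otimes1\}$; $P$ flat over $M$; $P\otimes_MP\to P\otimes H$, $p\otimes p'\mapsto pp'^{(1)}\otimes p'^{(2)}$ bijective. For a right $H$-comodule $V$ ($v\mapsto v^{(1)}\otimes v^{(2)}$), $\mathcal{E}=(P\otimes V)^H$ (invariants of the tensor product coaction). $\theta:V\to\Omega^nP$ is right strongly tensorial if it is a comodule map (tensor product coaction on $P^{\otimes(n+1)}$) with image in $P\Omega^nM$. A frame resolution is such $(P,H,V,\theta)$ with $\theta:V\to P\Omega^1M$ right strongly tensorial and $s_\theta:\mathcal{E}\to\Omega^1M$, $\sum p_i\otimes v_i\mapsto\sum p_i\theta(v_i)$ bijective. A connection: linear $\omega:H\to\Omega^1P$ with $\omega(1)=0$, $\sum\omega_\alpha\omega^\alpha{}^{(1)}\otimes\omega^\alpha{}^{(2)}=1\otimes(h-\epsilon(h)1)$ (writing $\omega(h)=\sum\omega_\alpha\otimes\omega^\alpha$)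 and $\Delta_R\omega(h)=\omega(h_{(2)})\otimes S(h_{(1)})h_{(3)}$; left strong if $(\mathrm{id}-\Pi_\omega)(dp)\in(\Omega^1M)P$ for all $p$, where $\Pi_\omega(\sum p\otimes p')=\sum pp'^{(1)}\omega(p'^{(2)})$. *)

theory Defs
  imports Complex_Main
begin

text \<open>
An element of a tensor product U1 \<otimes> ... \<otimes> Un over k is represented by a finite list of
simple tensors (a list of tuples); two such representatives are identified iff every
k-multilinear form takes the same value on them (over a field the k-dual of a tensor
product is the space of multilinear forms, and functionals separate points).
\<close>

definition bilin :: "('k::field \<Rightarrow> 'a::ab_group_add \<Rightarrow> 'a) \<Rightarrow> ('k \<Rightarrow> 'b::ab_group_add \<Rightarrow> 'b) \<Rightarrow> ('a \<Rightarrow> 'b \<Rightarrow> 'k) \<Rightarrow> bool" where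
  "bilin s1 s2 f \<longleftrightarrow>
     (\<forall>y. Vector_Spaces.linear s1 (*) (\<lambda>x. f x y)) \<and> (\<forall>x. Vector_Spaces.linear s2 (*) (f x))"

definition trilin :: "('k::field \<Rightarrow> 'a::ab_group_add \<Rightarrow> 'a) \<Rightarrow> ('k \<Rightarrow> 'b::ab_group_add \<Rightarrow> 'b) \<Rightarrow> ('k \<Rightarrow> 'c::ab_group_add \<Rightarrow> 'c)
    \<Rightarrow> ('a \<Rightarrow> 'b \<Rightarrow> 'c \<Rightarrow> 'k) \<Rightarrow> bool" where
  "trilin s1 s2 s3 f \<longleftrightarrow>
     (\<forall>y z. Vector_Spaces.linear s1 (*) (\<lambda>x. f x y z)) \<and>
     (\<forall>x z. Vector_Spaces.linear s2 (*) (\<lambda>y. f x y z)) \<and>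
     (\<forall>x y. Vector_Spaces.linear s3 (*) (f x y))"

definition quadrilin :: "('k::field \<Rightarrow> 'a::ab_group_add \<Rightarrow> 'a) \<Rightarrow> ('k \<Rightarrow> 'b::ab_group_add \<Rightarrow> 'b) \<Rightarrow> ('k \<Rightarrow> 'c::ab_group_add \<Rightarrow> 'c)
    \<Rightarrow> ('k \<Rightarrow> 'd::ab_group_add \<Rightarrow> 'd) \<Rightarrow> ('a \<Rightarrow> 'b \<Rightarrow> 'c \<Rightarrow> 'd \<Rightarrow> 'k) \<Rightarrow> bool" where
  "quadrilin s1 s2 s3 s4 f \<longleftrightarrow>
     (\<forall>y z w. Vector_Spaces.linear s1 (*) (\<lambda>x. f x y z w)) \<and>
     (\<forall>x z w. Vector_Spaces.linear s2 (*) (\<lambda>y. f x y z w)) \<and>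
     (\<forall>x y w. Vector_Spaces.linear s3 (*) (\<lambda>z. f x y z w)) \<and>
     (\<forall>x y z. Vector_Spaces.linear s4 (*) (f x y z))"

definition teq2 :: "('k::field \<Rightarrow> 'a::ab_group_add \<Rightarrow> 'a) \<Rightarrow> ('k \<Rightarrow> 'b::ab_group_add \<Rightarrow> 'b)
    \<Rightarrow> ('a \<times> 'b) list \<Rightarrow> ('a \<times> 'b) list \<Rightarrow> bool" where
  "teq2 s1 s2 t u \<longleftrightarrow> (\<forall>f. bilin s1 s2 f \<longrightarrow>
     sum_list (map (\<lambda>(x,y). f x y) t) = sum_list (map (\<lambda>(x,y). f x y) u))"

definition teq3 :: "('k::field \<Rightarrow> 'a::ab_group_add \<Rightarrow> 'a) \<Rightarrow> ('k \<Rightarrow> 'b::ab_group_add \<Rightarrow> 'b) \<Rightarrow> ('k \<Rightarrow> 'c::ab_group_add \<Rightarrow> 'c)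
    \<Rightarrow> ('a \<times> 'b \<times> 'c) list \<Rightarrow> ('a \<times> 'b \<times> 'c) list \<Rightarrow> bool" where
  "teq3 s1 s2 s3 t u \<longleftrightarrow> (\<forall>f. trilin s1 s2 s3 f \<longrightarrow>
     sum_list (map (\<lambda>(x,y,z). f x y z) t) = sum_list (map (\<lambda>(x,y,z). f x y z) u))"

definition teq4 :: "('k::field \<Rightarrow> 'a::ab_group_add \<Rightarrow> 'a) \<Rightarrow> ('k \<Rightarrow> 'b::ab_group_add \<Rightarrow> 'b) \<Rightarrow> ('k \<Rightarrow> 'c::ab_group_add \<Rightarrow> 'c)
    \<Rightarrow> ('k \<Rightarrow> 'd::ab_group_add \<Rightarrow> 'd)
    \<Rightarrow> ('a \<times> 'b \<times> 'c \<times> 'd) list \<Rightarrow> ('a \<times> 'b \<times> 'c \<times> 'd) list \<Rightarrow> bool" where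
  "teq4 s1 s2 s3 s4 t u \<longleftrightarrow> (\<forall>f. quadrilin s1 s2 s3 s4 f \<longrightarrow>
     sum_list (map (\<lambda>(x,y,z,w). f x y z w) t) = sum_list (map (\<lambda>(x,y,z,w). f x y z w) u))"

definition tlin2 :: "('k::field \<Rightarrow> 'w::ab_group_add \<Rightarrow> 'w) \<Rightarrow> ('k \<Rightarrow> 'a::ab_group_add \<Rightarrow> 'a) \<Rightarrow> ('k \<Rightarrow> 'b::ab_group_add \<Rightarrow> 'b)
    \<Rightarrow> ('w \<Rightarrow> ('a \<times> 'b) list) \<Rightarrow> bool" where
  "tlin2 s s1 s2 F \<longleftrightarrow> (\<forall>c x y. teq2 s1 s2 (F (s c x + y))
      (map (\<lambda>(a,b). (s1 c a, b)) (F x) @ F y))"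

definition tlin3 :: "('k::field \<Rightarrow> 'w::ab_group_add \<Rightarrow> 'w) \<Rightarrow> ('k \<Rightarrow> 'a::ab_group_add \<Rightarrow> 'a) \<Rightarrow> ('k \<Rightarrow> 'b::ab_group_add \<Rightarrow> 'b)
    \<Rightarrow> ('k \<Rightarrow> 'c::ab_group_add \<Rightarrow> 'c) \<Rightarrow> ('w \<Rightarrow> ('a \<times> 'b \<times> 'c) list) \<Rightarrow> bool" where
  "tlin3 s s1 s2 s3 F \<longleftrightarrow> (\<forall>c x y. teq3 s1 s2 s3 (F (s c x + y))
      (map (\<lambda>(a,b,d). (s1 c a, b, d)) (F x) @ F y))"

definition k_algebra :: "('k::field \<Rightarrow> 'a::ring_1 \<Rightarrow> 'a) \<Rightarrow> bool" where
  "k_algebra s \<longleftrightarrow> Vector_Spaces.vector_space s \<and>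
     (\<forall>c a b. s c (a * b) = s c a * b \<and> s c (a * b) = a * s c b)"

definition mult2 :: "('a::times \<times> 'b::times) list \<Rightarrow> ('a \<times> 'b) list \<Rightarrow> ('a \<times> 'b) list" where
  "mult2 t u = [(a * c, b * d). (a, b) \<leftarrow> t, (c, d) \<leftarrow> u]"

definition Delta3 :: "('h \<Rightarrow> ('h \<times> 'h) list) \<Rightarrow> 'h \<Rightarrow> ('h \<times> 'h \<times> 'h) list" where
  "Delta3 \<Delta> h = [(a, b, c). (x, c) \<leftarrow> \<Delta> h, (a, b) \<leftarrow> \<Delta> x]"

definition hopf_algebra :: "('k::field \<Rightarrow> 'h::ring_1 \<Rightarrow> 'h) \<Rightarrow> ('h \<Rightarrow> ('h \<times> 'h) list)
    \<Rightarrow> ('h \<Rightarrow> 'k) \<Rightarrow> ('h \<Rightarrow> 'h) \<Rightarrow> bool" where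
  "hopf_algebra sH \<Delta> \<epsilon> S \<longleftrightarrow>
     k_algebra sH \<and>
     tlin2 sH sH sH \<Delta> \<and>
     (\<forall>g h. teq2 sH sH (\<Delta> (g * h)) (mult2 (\<Delta> g) (\<Delta> h))) \<and>
     teq2 sH sH (\<Delta> 1) [(1, 1)] \<and>
     (\<forall>h. teq3 sH sH sH (Delta3 \<Delta> h) [(a, b, c). (a, y) \<leftarrow> \<Delta> h, (b, c) \<leftarrow> \<Delta> y]) \<and>
     Vector_Spaces.linear sH (*) \<epsilon> \<and> \<epsilon> 1 = 1 \<and> (\<forall>g h. \<epsilon> (g * h) = \<epsilon> g * \<epsilon> h) \<and>
     (\<forall>h. sum_list (map (\<lambda>(a, b). sH (\<epsilon> a) b) (\<Delta> h)) = h) \<and>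
     (\<forall>h. sum_list (map (\<lambda>(a, b). sH (\<epsilon> b) a) (\<Delta> h)) = h) \<and>
     Vector_Spaces.linear sH sH S \<and> bij S \<and>
     (\<forall>h. sum_list (map (\<lambda>(a, b). S a * b) (\<Delta> h)) = sH (\<epsilon> h) 1) \<and>
     (\<forall>h. sum_list (map (\<lambda>(a, b). a * S b) (\<Delta> h)) = sH (\<epsilon> h) 1)"

definition right_comodule :: "('k::field \<Rightarrow> 'v::ab_group_add \<Rightarrow> 'v) \<Rightarrow> ('k \<Rightarrow> 'h::ring_1 \<Rightarrow> 'h)
    \<Rightarrow> ('h \<Rightarrow> ('h \<times> 'h) list) \<Rightarrow> ('h \<Rightarrow> 'k) \<Rightarrow> ('v \<Rightarrow> ('v \<times> 'h) list) \<Rightarrow> bool" where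
  "right_comodule sV sH \<Delta> \<epsilon> \<delta> \<longleftrightarrow>
     Vector_Spaces.vector_space sV \<and>
     tlin2 sV sV sH \<delta> \<and>
     (\<forall>v. teq3 sV sH sH [(a, b, c). (x, c) \<leftarrow> \<delta> v, (a, b) \<leftarrow> \<delta> x]
                         [(a, b, c). (a, y) \<leftarrow> \<delta> v, (b, c) \<leftarrow> \<Delta> y]) \<and>
     (\<forall>v. sum_list (map (\<lambda>(a, h). sV (\<epsilon> h) a) (\<delta> v)) = v)"

definition right_comodule_algebra :: "('k::field \<Rightarrow> 'p::ring_1 \<Rightarrow> 'p) \<Rightarrow> ('k \<Rightarrow> 'h::ring_1 \<Rightarrow> 'h)
    \<Rightarrow> ('h \<Rightarrow> ('h \<times> 'h) list) \<Rightarrow> ('h \<Rightarrow> 'k) \<Rightarrow> ('p \<Rightarrow> ('p \<times> 'h) list) \<Rightarrow> bool" where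
  "right_comodule_algebra sP sH \<Delta> \<epsilon> \<delta> \<longleftrightarrow>
     k_algebra sP \<and> right_comodule sP sH \<Delta> \<epsilon> \<delta> \<and>
     (\<forall>p q. teq2 sP sH (\<delta> (p * q)) (mult2 (\<delta> p) (\<delta> q))) \<and>
     teq2 sP sH (\<delta> 1) [(1, 1)]"

definition coinv :: "('k::field \<Rightarrow> 'p::ring_1 \<Rightarrow> 'p) \<Rightarrow> ('k \<Rightarrow> 'h::ring_1 \<Rightarrow> 'h)
    \<Rightarrow> ('p \<Rightarrow> ('p \<times> 'h) list) \<Rightarrow> 'p set" where
  "coinv sP sH \<delta> = {p. teq2 sP sH (\<delta> p) [(p, 1)]}"

text \<open>Flatness of P as a left and as a right M-module (equational criterion).\<close>

definition left_flat :: "'p::ring_1 set \<Rightarrow> bool" where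
  "left_flat M \<longleftrightarrow> (\<forall>n (a :: nat \<Rightarrow> 'p) x. (\<forall>i<n. a i \<in> M) \<and> (\<Sum>i<n. a i * x i) = 0 \<longrightarrow>
     (\<exists>(m::nat) b y. (\<forall>i<n. \<forall>j<m. b i j \<in> M) \<and> (\<forall>i<n. x i = (\<Sum>j<m. b i j * y j)) \<and>
              (\<forall>j<m. (\<Sum>i<n. a i * b i j) = 0)))"

definition right_flat :: "'p::ring_1 set \<Rightarrow> bool" where
  "right_flat M \<longleftrightarrow> (\<forall>n (a :: nat \<Rightarrow> 'p) x. (\<forall>i<n. a i \<in> M) \<and> (\<Sum>i<n. x i * a i) = 0 \<longrightarrow>
     (\<exists>(m::nat) b y. (\<forall>j<m. \<forall>i<n. b j i \<in> M) \<and> (\<forall>i<n. x i = (\<Sum>j<m. y j * b j i)) \<and>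
              (\<forall>j<m. (\<Sum>i<n. b j i * a i) = 0)))"

definition can_map :: "('p \<Rightarrow> ('p::ring_1 \<times> 'h) list) \<Rightarrow> ('p \<times> 'p) list \<Rightarrow> ('p \<times> 'h) list" where
  "can_map \<delta> t = [(p * q', h). (p, q) \<leftarrow> t, (q', h) \<leftarrow> \<delta> q]"

text \<open>Quantum principal bundle: the induced map P \<otimes>_M P \<rightarrow> P \<otimes> H is bijective, i.e.
  can is surjective and its kernel in P \<otimes> P is spanned by the balancing relators
  pm \<otimes> q - p \<otimes> mq (m \<in> M).\<close>

definition quantum_principal_bundle :: "('k::field \<Rightarrow> 'p::ring_1 \<Rightarrow> 'p) \<Rightarrow> ('k \<Rightarrow> 'h::ring_1 \<Rightarrow> 'h)
    \<Rightarrow> ('h \<Rightarrow> ('h \<times> 'h) list) \<Rightarrow> ('h \<Rightarrow> 'k) \<Rightarrow> ('h \<Rightarrow> 'h) \<Rightarrow> ('p \<Rightarrow> ('p \<times> 'h) list) \<Rightarrow> bool" where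
  "quantum_principal_bundle sP sH \<Delta> \<epsilon> S \<delta> \<longleftrightarrow>
     hopf_algebra sH \<Delta> \<epsilon> S \<and>
     right_comodule_algebra sP sH \<Delta> \<epsilon> \<delta> \<and>
     left_flat (coinv sP sH \<delta>) \<and> right_flat (coinv sP sH \<delta>) \<and>
     (\<forall>u. \<exists>t. teq2 sP sH (can_map \<delta> t) u) \<and>
     (\<forall>t. teq2 sP sH (can_map \<delta> t) [] \<longrightarrow>
        (\<exists>rs. (\<forall>(p, m, q) \<in> set rs. m \<in> coinv sP sH \<delta>) \<and>
              teq2 sP sP t (concat [[(p * m, q), (- p, m * q)]. (p, m, q) \<leftarrow> rs])))"

text \<open>Universal calculus.  \<Omega>^1 P \<subseteq> P \<otimes> P; \<Omega>^1 M \<subseteq> M \<otimes> M \<subseteq> P \<otimes> P;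
  \<Omega>^2 M = \<Omega>^1 M \<otimes>_M \<Omega>^1 M \<subseteq> M^{\<otimes>3} \<subseteq> P^{\<otimes>3} (image of concatenation).\<close>

definition in_Omega1 :: "('p::ring_1 \<times> 'p) list \<Rightarrow> bool" where
  "in_Omega1 t \<longleftrightarrow> sum_list (map (\<lambda>(a, b). a * b) t) = 0"

definition Omega1M :: "('k::field \<Rightarrow> 'p::ring_1 \<Rightarrow> 'p) \<Rightarrow> 'p set \<Rightarrow> ('p \<times> 'p) list set" where
  "Omega1M sP M = {t. in_Omega1 t \<and> (\<exists>u. teq2 sP sP t u \<and> (\<forall>(a, b) \<in> set u. a \<in> M \<and> b \<in> M))}"

definition mult11 :: "('p::times \<times> 'p) list \<Rightarrow> ('p \<times> 'p) list \<Rightarrow> ('p \<times> 'p \<times> 'p) list" where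
  "mult11 t u = [(a, b * c, d). (a, b) \<leftarrow> t, (c, d) \<leftarrow> u]"

definition Omega2M :: "('k::field \<Rightarrow> 'p::ring_1 \<Rightarrow> 'p) \<Rightarrow> 'p set \<Rightarrow> ('p \<times> 'p \<times> 'p) list set" where
  "Omega2M sP M = {t. \<exists>xs. (\<forall>(\<xi>, \<eta>) \<in> set xs. \<xi> \<in> Omega1M sP M \<and> \<eta> \<in> Omega1M sP M) \<and>
                          teq3 sP sP sP t (concat (map (\<lambda>(\<xi>, \<eta>). mult11 \<xi> \<eta>) xs))}"

definition lmul2 :: "'p::times \<Rightarrow> ('p \<times> 'p) list \<Rightarrow> ('p \<times> 'p) list" where
  "lmul2 p t = map (\<lambda>(a, b). (p * a, b)) t"

definition rmul2 :: "('p::times \<times> 'p) list \<Rightarrow> 'p \<Rightarrow> ('p \<times> 'p) list" where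
  "rmul2 t p = map (\<lambda>(a, b). (a, b * p)) t"

definition lmul3 :: "'p::times \<Rightarrow> ('p \<times> 'p \<times> 'p) list \<Rightarrow> ('p \<times> 'p \<times> 'p) list" where
  "lmul3 p t = map (\<lambda>(a, b, c). (p * a, b, c)) t"

definition P_Omega1M :: "('k::field \<Rightarrow> 'p::ring_1 \<Rightarrow> 'p) \<Rightarrow> 'p set \<Rightarrow> ('p \<times> 'p) list set" where
  "P_Omega1M sP M = {t. \<exists>xs. (\<forall>(p, \<xi>) \<in> set xs. \<xi> \<in> Omega1M sP M) \<and>
                            teq2 sP sP t (concat (map (\<lambda>(p, \<xi>). lmul2 p \<xi>) xs))}"

definition Omega1M_P :: "('k::field \<Rightarrow> 'p::ring_1 \<Rightarrow> 'p) \<Rightarrow> 'p set \<Rightarrow> ('p \<times> 'p) list set" where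
  "Omega1M_P sP M = {t. \<exists>xs. (\<forall>(\<xi>, p) \<in> set xs. \<xi> \<in> Omega1M sP M) \<and>
                            teq2 sP sP t (concat (map (\<lambda>(\<xi>, p). rmul2 \<xi> p) xs))}"

definition P_Omega2M :: "('k::field \<Rightarrow> 'p::ring_1 \<Rightarrow> 'p) \<Rightarrow> 'p set \<Rightarrow> ('p \<times> 'p \<times> 'p) list set" where
  "P_Omega2M sP M = {t. \<exists>xs. (\<forall>(p, \<xi>) \<in> set xs. \<xi> \<in> Omega2M sP M) \<and>
                            teq3 sP sP sP t (concat (map (\<lambda>(p, \<xi>). lmul3 p \<xi>) xs))}"

definition coact2 :: "('p \<Rightarrow> ('p \<times> 'h::times) list) \<Rightarrow> ('p \<times> 'p) list \<Rightarrow> ('p \<times> 'p \<times> 'h) list" where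
  "coact2 \<delta> t = [(a', b', h * g). (a, b) \<leftarrow> t, (a', h) \<leftarrow> \<delta> a, (b', g) \<leftarrow> \<delta> b]"

definition coact3 :: "('p \<Rightarrow> ('p \<times> 'h::times) list) \<Rightarrow> ('p \<times> 'p \<times> 'p) list \<Rightarrow> ('p \<times> 'p \<times> 'p \<times> 'h) list" where
  "coact3 \<delta> t = [(a', b', c', h * g * f). (a, b, c) \<leftarrow> t, (a', h) \<leftarrow> \<delta> a, (b', g) \<leftarrow> \<delta> b,
                                          (c', f) \<leftarrow> \<delta> c]"

definition rst1 :: "('k::field \<Rightarrow> 'p::ring_1 \<Rightarrow> 'p) \<Rightarrow> ('k \<Rightarrow> 'h::ring_1 \<Rightarrow> 'h) \<Rightarrow> ('k \<Rightarrow> 'v::ab_group_add \<Rightarrow> 'v)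
    \<Rightarrow> ('p \<Rightarrow> ('p \<times> 'h) list) \<Rightarrow> ('v \<Rightarrow> ('v \<times> 'h) list) \<Rightarrow> ('v \<Rightarrow> ('p \<times> 'p) list) \<Rightarrow> bool" where
  "rst1 sP sH sV \<delta>P \<delta>V \<theta> \<longleftrightarrow>
     tlin2 sV sP sP \<theta> \<and>
     (\<forall>v. teq3 sP sP sH (coact2 \<delta>P (\<theta> v)) [(a, b, h). (w, h) \<leftarrow> \<delta>V v, (a, b) \<leftarrow> \<theta> w]) \<and>
     (\<forall>v. \<theta> v \<in> P_Omega1M sP (coinv sP sH \<delta>P))"

definition rst2 :: "('k::field \<Rightarrow> 'p::ring_1 \<Rightarrow> 'p) \<Rightarrow> ('k \<Rightarrow> 'h::ring_1 \<Rightarrow> 'h) \<Rightarrow> ('k \<Rightarrow> 'v::ab_group_add \<Rightarrow> 'v)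
    \<Rightarrow> ('p \<Rightarrow> ('p \<times> 'h) list) \<Rightarrow> ('v \<Rightarrow> ('v \<times> 'h) list) \<Rightarrow> ('v \<Rightarrow> ('p \<times> 'p \<times> 'p) list) \<Rightarrow> bool" where
  "rst2 sP sH sV \<delta>P \<delta>V \<Theta> \<longleftrightarrow>
     tlin3 sV sP sP sP \<Theta> \<and>
     (\<forall>v. teq4 sP sP sP sH (coact3 \<delta>P (\<Theta> v)) [(a, b, c, h). (w, h) \<leftarrow> \<delta>V v, (a, b, c) \<leftarrow> \<Theta> w]) \<and>
     (\<forall>v. \<Theta> v \<in> P_Omega2M sP (coinv sP sH \<delta>P))"

definition Esec :: "('k::field \<Rightarrow> 'p::ring_1 \<Rightarrow> 'p) \<Rightarrow> ('k \<Rightarrow> 'h::ring_1 \<Rightarrow> 'h) \<Rightarrow> ('k \<Rightarrow> 'v::ab_group_add \<Rightarrow> 'v)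
    \<Rightarrow> ('p \<Rightarrow> ('p \<times> 'h) list) \<Rightarrow> ('v \<Rightarrow> ('v \<times> 'h) list) \<Rightarrow> ('p \<times> 'v) list set" where
  "Esec sP sH sV \<delta>P \<delta>V = {t. teq3 sP sV sH
      [(p', v', h * g). (p, v) \<leftarrow> t, (p', h) \<leftarrow> \<delta>P p, (v', g) \<leftarrow> \<delta>V v]
      [(p, v, 1). (p, v) \<leftarrow> t]}"

definition s_theta :: "('v \<Rightarrow> ('p::times \<times> 'p) list) \<Rightarrow> ('p \<times> 'v) list \<Rightarrow> ('p \<times> 'p) list" where
  "s_theta \<theta> t = concat (map (\<lambda>(p, v). lmul2 p (\<theta> v)) t)"

definition frame_resolution :: "('k::field \<Rightarrow> 'p::ring_1 \<Rightarrow> 'p) \<Rightarrow> ('k \<Rightarrow> 'h::ring_1 \<Rightarrow> 'h)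
    \<Rightarrow> ('k \<Rightarrow> 'v::ab_group_add \<Rightarrow> 'v) \<Rightarrow> ('h \<Rightarrow> ('h \<times> 'h) list) \<Rightarrow> ('h \<Rightarrow> 'k) \<Rightarrow> ('h \<Rightarrow> 'h)
    \<Rightarrow> ('p \<Rightarrow> ('p \<times> 'h) list) \<Rightarrow> ('v \<Rightarrow> ('v \<times> 'h) list) \<Rightarrow> ('v \<Rightarrow> ('p \<times> 'p) list) \<Rightarrow> bool" where
  "frame_resolution sP sH sV \<Delta> \<epsilon> S \<delta>P \<delta>V \<theta> \<longleftrightarrow>
     quantum_principal_bundle sP sH \<Delta> \<epsilon> S \<delta>P \<and>
     right_comodule sV sH \<Delta> \<epsilon> \<delta>V \<and>
     rst1 sP sH sV \<delta>P \<delta>V \<theta> \<and>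
     (\<forall>t \<in> Esec sP sH sV \<delta>P \<delta>V. s_theta \<theta> t \<in> Omega1M sP (coinv sP sH \<delta>P)) \<and>
     (\<forall>t \<in> Esec sP sH sV \<delta>P \<delta>V. \<forall>u \<in> Esec sP sH sV \<delta>P \<delta>V.
        teq2 sP sP (s_theta \<theta> t) (s_theta \<theta> u) \<longrightarrow> teq2 sP sV t u) \<and>
     (\<forall>w \<in> Omega1M sP (coinv sP sH \<delta>P). \<exists>t \<in> Esec sP sH sV \<delta>P \<delta>V. teq2 sP sP (s_theta \<theta> t) w)"

definition connection :: "('k::field \<Rightarrow> 'p::ring_1 \<Rightarrow> 'p) \<Rightarrow> ('k \<Rightarrow> 'h::ring_1 \<Rightarrow> 'h)
    \<Rightarrow> ('h \<Rightarrow> ('h \<times> 'h) list) \<Rightarrow> ('h \<Rightarrow> 'k) \<Rightarrow> ('h \<Rightarrow> 'h)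
    \<Rightarrow> ('p \<Rightarrow> ('p \<times> 'h) list) \<Rightarrow> ('h \<Rightarrow> ('p \<times> 'p) list) \<Rightarrow> bool" where
  "connection sP sH \<Delta> \<epsilon> S \<delta>P \<omega> \<longleftrightarrow>
     tlin2 sH sP sP \<omega> \<and>
     (\<forall>h. in_Omega1 (\<omega> h)) \<and>
     teq2 sP sP (\<omega> 1) [] \<and>
     (\<forall>h. teq2 sP sH [(a * b', h'). (a, b) \<leftarrow> \<omega> h, (b', h') \<leftarrow> \<delta>P b]
                     [(1, h - sH (\<epsilon> h) 1)]) \<and>
     (\<forall>h. teq3 sP sP sH (coact2 \<delta>P (\<omega> h))
                     [(a, b, S x * z). (x, y, z) \<leftarrow> Delta3 \<Delta> h, (a, b) \<leftarrow> \<omega> y])"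

definition dP :: "'p::ring_1 \<Rightarrow> ('p \<times> 'p) list" where
  "dP p = [(1, p), (- p, 1)]"

definition Pi_omega :: "('p \<Rightarrow> ('p::ring_1 \<times> 'h) list) \<Rightarrow> ('h \<Rightarrow> ('p \<times> 'p) list)
    \<Rightarrow> ('p \<times> 'p) list \<Rightarrow> ('p \<times> 'p) list" where
  "Pi_omega \<delta>P \<omega> t = concat [lmul2 (p * q') (\<omega> h). (p, q) \<leftarrow> t, (q', h) \<leftarrow> \<delta>P q]"

definition neg2 :: "('p::uminus \<times> 'q) list \<Rightarrow> ('p \<times> 'q) list" where
  "neg2 t = map (\<lambda>(a, b). (- a, b)) t"

definition neg3 :: "('p::uminus \<times> 'q \<times> 'r) list \<Rightarrow> ('p \<times> 'q \<times> 'r) list" where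
  "neg3 t = map (\<lambda>(a, b, c). (- a, b, c)) t"

definition left_strong :: "('k::field \<Rightarrow> 'p::ring_1 \<Rightarrow> 'p) \<Rightarrow> ('k \<Rightarrow> 'h::ring_1 \<Rightarrow> 'h)
    \<Rightarrow> ('p \<Rightarrow> ('p \<times> 'h) list) \<Rightarrow> ('h \<Rightarrow> ('p \<times> 'p) list) \<Rightarrow> bool" where
  "left_strong sP sH \<delta>P \<omega> \<longleftrightarrow>
     (\<forall>p. dP p @ neg2 (Pi_omega \<delta>P \<omega> (dP p)) \<in> Omega1M_P sP (coinv sP sH \<delta>P))"

definition d1 :: "('p::ring_1 \<times> 'p) list \<Rightarrow> ('p \<times> 'p \<times> 'p) list" where
  "d1 t = concat [[(1, a, b), (- a, 1, b), (a, b, 1)]. (a, b) \<leftarrow> t]"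

definition nabla :: "('k::field \<Rightarrow> 'p::ring_1 \<Rightarrow> 'p) \<Rightarrow> ('k \<Rightarrow> 'h::ring_1 \<Rightarrow> 'h) \<Rightarrow> ('k \<Rightarrow> 'v::ab_group_add \<Rightarrow> 'v)
    \<Rightarrow> ('p \<Rightarrow> ('p \<times> 'h) list) \<Rightarrow> ('v \<Rightarrow> ('v \<times> 'h) list) \<Rightarrow> ('v \<Rightarrow> ('p \<times> 'p) list)
    \<Rightarrow> ('h \<Rightarrow> ('p \<times> 'p) list) \<Rightarrow> ('p \<times> 'p) list \<Rightarrow> ('p \<times> 'p \<times> 'p) list" where
  "nabla sP sH sV \<delta>P \<delta>V \<theta> \<omega> w =
    (let t = (SOME t. t \<in> Esec sP sH sV \<delta>P \<delta>V \<and> teq2 sP sP (s_theta \<theta> t) w) in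
      [(1, a, b). (a, b) \<leftarrow> w]
      @ neg3 [(p, a, b). (p, v) \<leftarrow> t, (a, b) \<leftarrow> \<theta> v]
      @ neg3 (concat [lmul3 p' (mult11 (\<omega> h) (\<theta> v)). (p, v) \<leftarrow> t, (p', h) \<leftarrow> \<delta>P p]))"

definition torsion :: "('k::field \<Rightarrow> 'p::ring_1 \<Rightarrow> 'p) \<Rightarrow> ('k \<Rightarrow> 'h::ring_1 \<Rightarrow> 'h) \<Rightarrow> ('k \<Rightarrow> 'v::ab_group_add \<Rightarrow> 'v)
    \<Rightarrow> ('p \<Rightarrow> ('p \<times> 'h) list) \<Rightarrow> ('v \<Rightarrow> ('v \<times> 'h) list) \<Rightarrow> ('v \<Rightarrow> ('p \<times> 'p) list)
    \<Rightarrow> ('h \<Rightarrow> ('p \<times> 'p) list) \<Rightarrow> ('p \<times> 'p) list \<Rightarrow> ('p \<times> 'p \<times> 'p) list" where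
  "torsion sP sH sV \<delta>P \<delta>V \<theta> \<omega> w = d1 w @ neg3 (nabla sP sH sV \<delta>P \<delta>V \<theta> \<omega> w)"

definition Dbar_theta :: "('h \<Rightarrow> 'h) \<Rightarrow> ('v \<Rightarrow> ('v \<times> 'h) list) \<Rightarrow> ('v \<Rightarrow> ('p::ring_1 \<times> 'p) list)
    \<Rightarrow> ('h \<Rightarrow> ('p \<times> 'p) list) \<Rightarrow> 'v \<Rightarrow> ('p \<times> 'p \<times> 'p) list" where
  "Dbar_theta S \<delta>V \<theta> \<omega> v =
      [(1, a, b). (a, b) \<leftarrow> \<theta> v]
      @ [(- a, 1, b). (a, b) \<leftarrow> \<theta> v]
      @ [(a, b, 1). (a, b) \<leftarrow> \<theta> v]
      @ concat [mult11 (\<omega> (inv S h)) (\<theta> w). (w, h) \<leftarrow> \<delta>V v]"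

end

theory Submission
  imports Defs
begin

lemma sum_list_map_concat[simp]: "sum_list (map g (concat xss)) = sum_list (map (\<lambda>xs. sum_list (map g xs)) xss)"
  by (induct xss) auto

definition lin :: "('k::field \<Rightarrow> 'a::ab_group_add \<Rightarrow> 'a) \<Rightarrow> ('a \<Rightarrow> 'k) \<Rightarrow> bool" where
  "lin s \<phi> \<longleftrightarrow> (\<forall>x y. \<phi> (x + y) = \<phi> x + \<phi> y) \<and> (\<forall>c x. \<phi> (s c x) = c * \<phi> x)"

lemma vs_field: "vector_space ((*) :: 'k::field \<Rightarrow> 'k \<Rightarrow> 'k)"
  by unfold_locales (auto simp: algebra_simps)

lemma vs_simps:
  assumes "vector_space s"
  shows "s 1 x = x" "s 0 x = 0" "s c 0 = 0" "s c (x + y) = s c x + s c y" "s (a + b) x = s a x + s b x"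
    "s a (s b x) = s (a * b) x" "s c (- x) = - s c x" "s (- c) x = - s c x" "s c (x - y) = s c x - s c y"
proof -
  interpret vector_space s by fact
  show "s 1 x = x" "s 0 x = 0" "s c 0 = 0" "s c (x + y) = s c x + s c y" "s (a + b) x = s a x + s b x"
    "s a (s b x) = s (a * b) x" "s c (- x) = - s c x" "s (- c) x = - s c x" "s c (x - y) = s c x - s c y"
    by (auto simp: scale_right_diff_distrib scale_left_distrib scale_right_distrib)
qed

lemma linear_iff_lin: "vector_space s \<Longrightarrow> Vector_Spaces.linear s (*) \<phi> \<longleftrightarrow> lin s \<phi>"
  unfolding Vector_Spaces.linear_def lin_def module_hom_axioms_def module_hom_def
  by (auto simp: vs_field module_iff_vector_space)

lemma bilin_iff: "vector_space s1 \<Longrightarrow> vector_space s2 \<Longrightarrow>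
  bilin s1 s2 f \<longleftrightarrow> (\<forall>y. lin s1 (\<lambda>x. f x y)) \<and> (\<forall>x. lin s2 (\<lambda>y. f x y))"
  by (simp add: bilin_def linear_iff_lin)

lemma trilin_iff: "vector_space s1 \<Longrightarrow> vector_space s2 \<Longrightarrow> vector_space s3 \<Longrightarrow>
  trilin s1 s2 s3 f \<longleftrightarrow> (\<forall>y z. lin s1 (\<lambda>x. f x y z)) \<and> (\<forall>x z. lin s2 (\<lambda>y. f x y z)) \<and> (\<forall>x y. lin s3 (\<lambda>z. f x y z))"
  by (simp add: trilin_def linear_iff_lin)

lemma quadrilin_iff: "vector_space s1 \<Longrightarrow> vector_space s2 \<Longrightarrow> vector_space s3 \<Longrightarrow> vector_space s4 \<Longrightarrow>
  quadrilin s1 s2 s3 s4 f \<longleftrightarrow> (\<forall>y z w. lin s1 (\<lambda>x. f x y z w)) \<and> (\<forall>x z w. lin s2 (\<lambda>y. f x y z w)) \<and>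
     (\<forall>x y w. lin s3 (\<lambda>z. f x y z w)) \<and> (\<forall>x y z. lin s4 (\<lambda>w. f x y z w))"
  by (simp add: quadrilin_def linear_iff_lin)

lemma lin_add_eq: "lin s \<phi> \<Longrightarrow> \<phi> (x + y) = \<phi> x + \<phi> y" by (simp add: lin_def)
lemma lin_scale_eq: "lin s \<phi> \<Longrightarrow> \<phi> (s c x) = c * \<phi> x" by (simp add: lin_def)
lemma lin_zero_eq: "vector_space s \<Longrightarrow> lin s \<phi> \<Longrightarrow> \<phi> 0 = 0"
  by (metis lin_scale_eq mult_zero_left module.scale_zero_left module_iff_vector_space)
lemma lin_neg_eq: "vector_space s \<Longrightarrow> lin s \<phi> \<Longrightarrow> \<phi> (- x) = - \<phi> x"
  by (metis add.inverse_inverse add_right_cancel lin_add_eq lin_zero_eq neg_eq_iff_add_eq_0)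
lemma lin_diff_eq: "vector_space s \<Longrightarrow> lin s \<phi> \<Longrightarrow> \<phi> (x - y) = \<phi> x - \<phi> y"
  by (metis diff_conv_add_uminus lin_add_eq lin_neg_eq)
lemma lin_sum_list_eq: "vector_space s \<Longrightarrow> lin s \<phi> \<Longrightarrow> \<phi> (sum_list (map g l)) = sum_list (map (\<lambda>x. \<phi> (g x)) l)"
  by (induct l) (auto simp: lin_zero_eq lin_add_eq)

lemma lin_zero[intro!]: "lin s (\<lambda>x. 0)" by (simp add: lin_def)
lemma lin_add[intro!]: "lin s \<phi> \<Longrightarrow> lin s \<psi> \<Longrightarrow> lin s (\<lambda>x. \<phi> x + \<psi> x)"
  by (simp add: lin_def algebra_simps)
lemma lin_diff[intro!]: "lin s \<phi> \<Longrightarrow> lin s \<psi> \<Longrightarrow> lin s (\<lambda>x. \<phi> x - \<psi> x)"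
  by (simp add: lin_def algebra_simps)
lemma lin_uminus[intro!]: "lin s \<phi> \<Longrightarrow> lin s (\<lambda>x. - \<phi> x)"
  by (simp add: lin_def algebra_simps)
lemma lin_cmult[intro!]: "lin s \<phi> \<Longrightarrow> lin s (\<lambda>x. c * \<phi> x)"
  by (simp add: lin_def algebra_simps)
lemma lin_multc[intro!]: "lin s \<phi> \<Longrightarrow> lin s (\<lambda>x. \<phi> x * c)"
  by (simp add: lin_def algebra_simps)
lemma lin_sum_list[intro!]: "(\<And>p. p \<in> set l \<Longrightarrow> lin s (\<lambda>x. \<Phi> p x)) \<Longrightarrow> lin s (\<lambda>x. sum_list (map (\<lambda>p. \<Phi> p x) l))"
proof (induct l)
  case Nil then show ?case by (simp add: lin_def)
next
  case (Cons a l) then show ?case by (simp add: lin_def algebra_simps)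
qed

lemma teq2_refl[simp]: "teq2 s1 s2 t t" by (simp add: teq2_def)
lemma teq2_sym: "teq2 s1 s2 t u \<Longrightarrow> teq2 s1 s2 u t" by (simp add: teq2_def)
lemma teq2_trans: "teq2 s1 s2 t u \<Longrightarrow> teq2 s1 s2 u w \<Longrightarrow> teq2 s1 s2 t w" by (simp add: teq2_def)
lemma teq3_refl[simp]: "teq3 s1 s2 s3 t t" by (simp add: teq3_def)
lemma teq3_sym: "teq3 s1 s2 s3 t u \<Longrightarrow> teq3 s1 s2 s3 u t" by (simp add: teq3_def)
lemma teq3_trans: "teq3 s1 s2 s3 t u \<Longrightarrow> teq3 s1 s2 s3 u w \<Longrightarrow> teq3 s1 s2 s3 t w" by (simp add: teq3_def)
lemma teq4_refl[simp]: "teq4 s1 s2 s3 s4 t t" by (simp add: teq4_def)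

lemma teq2D: "teq2 s1 s2 t u \<Longrightarrow> vector_space s1 \<Longrightarrow> vector_space s2 \<Longrightarrow>
  (\<And>y. lin s1 (\<lambda>x. f x y)) \<Longrightarrow> (\<And>x. lin s2 (\<lambda>y. f x y)) \<Longrightarrow>
  sum_list (map (\<lambda>p. f (fst p) (snd p)) t) = sum_list (map (\<lambda>p. f (fst p) (snd p)) u)"
  unfolding teq2_def bilin_iff by (auto simp: case_prod_beta')

lemma teq3D: "teq3 s1 s2 s3 t u \<Longrightarrow> vector_space s1 \<Longrightarrow> vector_space s2 \<Longrightarrow> vector_space s3 \<Longrightarrow>
  (\<And>y z. lin s1 (\<lambda>x. f x y z)) \<Longrightarrow> (\<And>x z. lin s2 (\<lambda>y. f x y z)) \<Longrightarrow> (\<And>x y. lin s3 (\<lambda>z. f x y z)) \<Longrightarrow>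
  sum_list (map (\<lambda>p. f (fst p) (fst (snd p)) (snd (snd p))) t) = sum_list (map (\<lambda>p. f (fst p) (fst (snd p)) (snd (snd p))) u)"
  unfolding teq3_def trilin_iff by (auto simp: case_prod_beta')

lemma teq4D: "teq4 s1 s2 s3 s4 t u \<Longrightarrow> vector_space s1 \<Longrightarrow> vector_space s2 \<Longrightarrow> vector_space s3 \<Longrightarrow> vector_space s4 \<Longrightarrow>
  (\<And>y z w. lin s1 (\<lambda>x. f x y z w)) \<Longrightarrow> (\<And>x z w. lin s2 (\<lambda>y. f x y z w)) \<Longrightarrow> (\<And>x y w. lin s3 (\<lambda>z. f x y z w)) \<Longrightarrow> (\<And>x y z. lin s4 (\<lambda>w. f x y z w)) \<Longrightarrow>
  sum_list (map (\<lambda>p. f (fst p) (fst (snd p)) (fst (snd (snd p))) (snd (snd (snd p)))) t) = sum_list (map (\<lambda>p. f (fst p) (fst (snd p)) (fst (snd (snd p))) (snd (snd (snd p)))) u)"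
  unfolding teq4_def quadrilin_iff by (auto simp: case_prod_beta')

lemma teq2I: "vector_space s1 \<Longrightarrow> vector_space s2 \<Longrightarrow>
  (\<And>f. (\<And>y. lin s1 (\<lambda>x. f x y)) \<Longrightarrow> (\<And>x. lin s2 (\<lambda>y. f x y)) \<Longrightarrow>
  sum_list (map (\<lambda>p. f (fst p) (snd p)) t) = sum_list (map (\<lambda>p. f (fst p) (snd p)) u)) \<Longrightarrow> teq2 s1 s2 t u"
  unfolding teq2_def bilin_iff by (auto simp: case_prod_beta')

lemma teq3I: "vector_space s1 \<Longrightarrow> vector_space s2 \<Longrightarrow> vector_space s3 \<Longrightarrow>
  (\<And>f. (\<And>y z. lin s1 (\<lambda>x. f x y z)) \<Longrightarrow> (\<And>x z. lin s2 (\<lambda>y. f x y z)) \<Longrightarrow> (\<And>x y. lin s3 (\<lambda>z. f x y z)) \<Longrightarrow>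
  sum_list (map (\<lambda>p. f (fst p) (fst (snd p)) (snd (snd p))) t) = sum_list (map (\<lambda>p. f (fst p) (fst (snd p)) (snd (snd p))) u)) \<Longrightarrow> teq3 s1 s2 s3 t u"
  unfolding teq3_def trilin_iff by (auto simp: case_prod_beta')

lemma teq4I: "vector_space s1 \<Longrightarrow> vector_space s2 \<Longrightarrow> vector_space s3 \<Longrightarrow> vector_space s4 \<Longrightarrow>
  (\<And>f. (\<And>y z w. lin s1 (\<lambda>x. f x y z w)) \<Longrightarrow> (\<And>x z w. lin s2 (\<lambda>y. f x y z w)) \<Longrightarrow> (\<And>x y w. lin s3 (\<lambda>z. f x y z w)) \<Longrightarrow> (\<And>x y z. lin s4 (\<lambda>w. f x y z w)) \<Longrightarrow>
  sum_list (map (\<lambda>p. f (fst p) (fst (snd p)) (fst (snd (snd p))) (snd (snd (snd p)))) t) = sum_list (map (\<lambda>p. f (fst p) (fst (snd p)) (fst (snd (snd p))) (snd (snd (snd p)))) u)) \<Longrightarrow> teq4 s1 s2 s3 s4 t u"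
  unfolding teq4_def quadrilin_iff by (auto simp: case_prod_beta')

lemma lin_tlin2[intro]:
  assumes "tlin2 s s1 s2 F" "vector_space s" "vector_space s1" "vector_space s2"
    and "\<And>w. lin s1 (\<lambda>u. G (u, w))" "\<And>u. lin s2 (\<lambda>w. G (u, w))"
  shows "lin s (\<lambda>x. sum_list (map G (F x)))"
proof -
  have e: "sum_list (map G (F (s c x + y))) = c * sum_list (map G (F x)) + sum_list (map G (F y))" for c x y
  proof -
    have "teq2 s1 s2 (F (s c x + y)) (map (\<lambda>(a, b). (s1 c a, b)) (F x) @ F y)"
      using assms(1) unfolding tlin2_def by blast
    from teq2D[OF this assms(3,4), of "\<lambda>u w. G (u, w)"] assms(5,6)
    have "sum_list (map G (F (s c x + y))) = sum_list (map (\<lambda>p. G (s1 c (fst p), snd p)) (F x)) + sum_list (map G (F y))"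
      by (simp add: case_prod_beta' comp_def)
    also have "sum_list (map (\<lambda>p. G (s1 c (fst p), snd p)) (F x)) = c * sum_list (map G (F x))"
    proof -
      have "\<forall>p. G (s1 c (fst p), snd p) = c * G p" using assms(5) by (auto simp: lin_def)
      then show ?thesis by (simp add: sum_list_const_mult)
    qed
    finally show ?thesis .
  qed
  have z: "sum_list (map G (F 0)) = 0"
  proof -
    have "sum_list (map G (F 0)) = sum_list (map G (F 0)) + sum_list (map G (F 0))"
      using e[of 1 0 0] assms(2) by (simp add: vs_simps)
    then show ?thesis by (metis add.right_neutral add_left_cancel)
  qed
  show ?thesis unfolding lin_def
  proof safe
    fix x y show "sum_list (map G (F (x + y))) = sum_list (map G (F x)) + sum_list (map G (F y))"
      using e[of 1 x y] assms(2) by (simp add: vs_simps)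
  next
    fix c x show "sum_list (map G (F (s c x))) = c * sum_list (map G (F x))"
      using e[of c x 0] z by simp
  qed
qed

lemma separation:
  assumes vs: "vector_space s" and h: "\<And>\<phi>. lin s \<phi> \<Longrightarrow> \<phi> x = \<phi> y"
  shows "x = y"
proof (rule ccontr)
  assume ne: "x \<noteq> y"
  interpret vector_space s by fact
  define B where "B = extend_basis {}"
  have B: "independent B" "span B = UNIV" unfolding B_def
    using independent_extend_basis span_extend_basis independent_empty by auto
  have "x - y \<noteq> 0" using ne by simp
  then obtain b where b: "representation B (x - y) b \<noteq> 0"
    using sum_nonzero_representation_eq[OF B(1), of "x - y"] B(2) by fastforce
  have l: "lin s (\<lambda>v. representation B v b)"
    using linear_representation[OF B] linear_iff_lin[OF vs] by simp
  from h[OF l] have "representation B x b = representation B y b" .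
  with b show False using lin_diff_eq[OF vs l, of x y] by simp
qed

lemma lin_eqs: "lin s \<phi> \<Longrightarrow> vector_space s \<Longrightarrow>
  \<phi> (x + y) = \<phi> x + \<phi> y \<and> \<phi> (s c x) = c * \<phi> x \<and> \<phi> (- x) = - \<phi> x \<and> \<phi> 0 = 0 \<and> \<phi> (x - y) = \<phi> x - \<phi> y"
  by (simp add: lin_add_eq lin_scale_eq lin_neg_eq lin_zero_eq lin_diff_eq)

locale setting =
  fixes sP :: "'k::field \<Rightarrow> 'p::ring_1 \<Rightarrow> 'p"
    and sH :: "'k \<Rightarrow> 'h::ring_1 \<Rightarrow> 'h"
    and sV :: "'k \<Rightarrow> 'v::ab_group_add \<Rightarrow> 'v"
    and \<Delta> :: "'h \<Rightarrow> ('h \<times> 'h) list" and \<epsilon> :: "'h \<Rightarrow> 'k" and S :: "'h \<Rightarrow> 'h"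
    and \<delta>P :: "'p \<Rightarrow> ('p \<times> 'h) list" and \<delta>V :: "'v \<Rightarrow> ('v \<times> 'h) list"
    and \<theta> :: "'v \<Rightarrow> ('p \<times> 'p) list" and \<omega> :: "'h \<Rightarrow> ('p \<times> 'p) list"
  assumes FR: "frame_resolution sP sH sV \<Delta> \<epsilon> S \<delta>P \<delta>V \<theta>"
    and CN: "connection sP sH \<Delta> \<epsilon> S \<delta>P \<omega>"
    and LS: "left_strong sP sH \<delta>P \<omega>"
begin

abbreviation "M \<equiv> coinv sP sH \<delta>P"
abbreviation "E \<equiv> Esec sP sH sV \<delta>P \<delta>V"

lemma QPB: "quantum_principal_bundle sP sH \<Delta> \<epsilon> S \<delta>P" using FR by (simp add: frame_resolution_def)
lemma HA: "hopf_algebra sH \<Delta> \<epsilon> S" using QPB by (simp add: quantum_principal_bundle_def)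
lemma RCA: "right_comodule_algebra sP sH \<Delta> \<epsilon> \<delta>P" using QPB by (simp add: quantum_principal_bundle_def)
lemma RCP: "right_comodule sP sH \<Delta> \<epsilon> \<delta>P" using RCA by (simp add: right_comodule_algebra_def)
lemma RCV: "right_comodule sV sH \<Delta> \<epsilon> \<delta>V" using FR by (simp add: frame_resolution_def)

lemma vsP: "vector_space sP" using RCP by (simp add: right_comodule_def)
lemma vsV: "vector_space sV" using RCV by (simp add: right_comodule_def)
lemma vsH: "vector_space sH" using HA by (simp add: hopf_algebra_def k_algebra_def)
lemmas vsk = vs_field

lemma kalgP: "sP c a * b = sP c (a * b)" "a * sP c b = sP c (a * b)"
  using RCA unfolding right_comodule_algebra_def k_algebra_def by metis+
lemma kalgH: "sH c a * b = sH c (a * b)" "a * sH c b = sH c (a * b)"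
  using HA unfolding hopf_algebra_def k_algebra_def by metis+

lemma tlinD: "tlin2 sH sH sH \<Delta>" using HA by (simp add: hopf_algebra_def)
lemma Dmult: "teq2 sH sH (\<Delta> (g * h)) (mult2 (\<Delta> g) (\<Delta> h))" using HA by (simp add: hopf_algebra_def)
lemma D1: "teq2 sH sH (\<Delta> 1) [(1, 1)]" using HA by (simp add: hopf_algebra_def)
lemma coassD: "teq3 sH sH sH (Delta3 \<Delta> h) [(a, b, c). (a, y) \<leftarrow> \<Delta> h, (b, c) \<leftarrow> \<Delta> y]"
  using HA by (simp add: hopf_algebra_def)
lemma eps_lin: "lin sH \<epsilon>" using HA vsH by (simp add: hopf_algebra_def linear_iff_lin)
lemma eps1: "\<epsilon> 1 = 1" using HA by (simp add: hopf_algebra_def)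
lemma eps_mult: "\<epsilon> (g * h) = \<epsilon> g * \<epsilon> h" using HA by (simp add: hopf_algebra_def)
lemma counitL: "sum_list (map (\<lambda>(a, b). sH (\<epsilon> a) b) (\<Delta> h)) = h" using HA by (simp add: hopf_algebra_def)
lemma counitR: "sum_list (map (\<lambda>(a, b). sH (\<epsilon> b) a) (\<Delta> h)) = h" using HA by (simp add: hopf_algebra_def)
lemma S_linear: "Vector_Spaces.linear sH sH S" using HA by (simp add: hopf_algebra_def)
lemma S_bij: "bij S" using HA by (simp add: hopf_algebra_def)
lemma antipL: "sum_list (map (\<lambda>(a, b). S a * b) (\<Delta> h)) = sH (\<epsilon> h) 1" using HA by (simp add: hopf_algebra_def)
lemma antipR: "sum_list (map (\<lambda>(a, b). a * S b) (\<Delta> h)) = sH (\<epsilon> h) 1" using HA by (simp add: hopf_algebra_def)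

lemma tlinP: "tlin2 sP sP sH \<delta>P" using RCP by (simp add: right_comodule_def)
lemma coassP: "teq3 sP sH sH [(a, b, c). (x, c) \<leftarrow> \<delta>P v, (a, b) \<leftarrow> \<delta>P x] [(a, b, c). (a, y) \<leftarrow> \<delta>P v, (b, c) \<leftarrow> \<Delta> y]"
  using RCP by (simp add: right_comodule_def)
lemma counitP: "sum_list (map (\<lambda>(a, h). sP (\<epsilon> h) a) (\<delta>P v)) = v" using RCP by (simp add: right_comodule_def)
lemma Pmult: "teq2 sP sH (\<delta>P (p * q)) (mult2 (\<delta>P p) (\<delta>P q))" using RCA by (simp add: right_comodule_algebra_def)
lemma P1: "teq2 sP sH (\<delta>P 1) [(1, 1)]" using RCA by (simp add: right_comodule_algebra_def)

lemma tlinV: "tlin2 sV sV sH \<delta>V" using RCV by (simp add: right_comodule_def)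
lemma coassV: "teq3 sV sH sH [(a, b, c). (x, c) \<leftarrow> \<delta>V v, (a, b) \<leftarrow> \<delta>V x] [(a, b, c). (a, y) \<leftarrow> \<delta>V v, (b, c) \<leftarrow> \<Delta> y]"
  using RCV by (simp add: right_comodule_def)
lemma counitV: "sum_list (map (\<lambda>(a, h). sV (\<epsilon> h) a) (\<delta>V v)) = v" using RCV by (simp add: right_comodule_def)

lemma can_surj: "\<exists>t. teq2 sP sH (can_map \<delta>P t) u" using QPB by (simp add: quantum_principal_bundle_def)

lemma RST1: "rst1 sP sH sV \<delta>P \<delta>V \<theta>" using FR by (simp add: frame_resolution_def)
lemma tlin_theta: "tlin2 sV sP sP \<theta>" using RST1 by (simp add: rst1_def)
lemma equiv_theta: "teq3 sP sP sH (coact2 \<delta>P (\<theta> v)) [(a, b, h). (w, h) \<leftarrow> \<delta>V v, (a, b) \<leftarrow> \<theta> w]"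
  using RST1 by (simp add: rst1_def)
lemma theta_POM: "\<theta> v \<in> P_Omega1M sP M" using RST1 by (simp add: rst1_def)
lemma stheta_Om: "t \<in> E \<Longrightarrow> s_theta \<theta> t \<in> Omega1M sP M" using FR by (simp add: frame_resolution_def)
lemma stheta_inj: "t \<in> E \<Longrightarrow> u \<in> E \<Longrightarrow> teq2 sP sP (s_theta \<theta> t) (s_theta \<theta> u) \<Longrightarrow> teq2 sP sV t u"
  using FR by (simp add: frame_resolution_def)

lemma tlin_omega: "tlin2 sH sP sP \<omega>" using CN by (simp add: connection_def)
lemma omega_Om1: "sum_list (map (\<lambda>(a, b). a * b) (\<omega> h)) = 0" using CN by (simp add: connection_def in_Omega1_def)
lemma omega1: "teq2 sP sP (\<omega> 1) []" using CN by (simp add: connection_def)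
lemma omega_vert: "teq2 sP sH [(a * b', h'). (a, b) \<leftarrow> \<omega> h, (b', h') \<leftarrow> \<delta>P b] [(1, h - sH (\<epsilon> h) 1)]"
  using CN by (simp add: connection_def)
lemma omega_equiv: "teq3 sP sP sH (coact2 \<delta>P (\<omega> h)) [(a, b, S x * z). (x, y, z) \<leftarrow> Delta3 \<Delta> h, (a, b) \<leftarrow> \<omega> y]"
  using CN by (simp add: connection_def)

lemma S_add: "S (x + y) = S x + S y" and S_scale: "S (sH c x) = sH c (S x)"
  using S_linear by (auto simp: Vector_Spaces.linear_def module_hom_def module_hom_axioms_def)

lemma eps_eqs: "\<epsilon> (x + y) = \<epsilon> x + \<epsilon> y" "\<epsilon> (sH c x) = c * \<epsilon> x" "\<epsilon> (- x) = - \<epsilon> x" "\<epsilon> 0 = 0" "\<epsilon> (x - y) = \<epsilon> x - \<epsilon> y"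
  using lin_eqs[OF eps_lin vsH] by auto

end

lemma teq2_use:
  assumes "teq2 s1 s2 t u" "vector_space s1" "vector_space s2"
    "sum_list (map (\<lambda>p. f (fst p) (snd p)) t) = sum_list (map (\<lambda>p. f (fst p) (snd p)) u) \<Longrightarrow> P"
    "\<And>y. lin s1 (\<lambda>x. f x y)" "\<And>x. lin s2 (\<lambda>y. f x y)"
  shows P using assms(4)[OF teq2D[OF assms(1,2,3,5,6)]] .

lemma teq3_use:
  assumes "teq3 s1 s2 s3 t u" "vector_space s1" "vector_space s2" "vector_space s3"
    "sum_list (map (\<lambda>p. f (fst p) (fst (snd p)) (snd (snd p))) t) = sum_list (map (\<lambda>p. f (fst p) (fst (snd p)) (snd (snd p))) u) \<Longrightarrow> P"
    "\<And>y z. lin s1 (\<lambda>x. f x y z)" "\<And>x z. lin s2 (\<lambda>y. f x y z)" "\<And>x y. lin s3 (\<lambda>z. f x y z)"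
  shows P using assms(5)[OF teq3D[OF assms(1,2,3,4,6,7,8)]] .

lemma teq4_use:
  assumes "teq4 s1 s2 s3 s4 t u" "vector_space s1" "vector_space s2" "vector_space s3" "vector_space s4"
    "sum_list (map (\<lambda>p. f (fst p) (fst (snd p)) (fst (snd (snd p))) (snd (snd (snd p)))) t) = sum_list (map (\<lambda>p. f (fst p) (fst (snd p)) (fst (snd (snd p))) (snd (snd (snd p)))) u) \<Longrightarrow> P"
    "\<And>y z w. lin s1 (\<lambda>x. f x y z w)" "\<And>x z w. lin s2 (\<lambda>y. f x y z w)" "\<And>x y w. lin s3 (\<lambda>z. f x y z w)" "\<And>x y z. lin s4 (\<lambda>w. f x y z w)"
  shows P using assms(6)[OF teq4D[OF assms(1,2,3,4,5,7,8,9,10)]] .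

declare comp_def[simp] case_prod_beta'[simp]

lemma sum_list_swap: "(\<Sum>x\<leftarrow>xs. \<Sum>y\<leftarrow>ys. f x y) = (\<Sum>y\<leftarrow>ys. \<Sum>x\<leftarrow>xs. (f x y :: 'a::comm_monoid_add))"
  by (induct xs) (simp_all add: sum_list_addf)

lemma mult_sum_list_left: "(a::'a::semiring_0) * sum_list (map h l) = sum_list (map (\<lambda>x. a * h x) l)"
  by (induct l) (auto simp: distrib_left)
lemma mult_sum_list_right: "sum_list (map h l) * (a::'a::semiring_0) = sum_list (map (\<lambda>x. h x * a) l)"
  by (induct l) (auto simp: distrib_right)


context setting begin

lemma S_zero: "S 0 = 0" using S_scale[of 0 0] by (simp add: vs_simps[OF vsH])
lemma S_neg: "S (- x) = - S x" using S_scale[of "-1" x] by (simp add: vs_simps[OF vsH])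
lemmas antipL' = antipL[simplified] and antipR' = antipR[simplified] and counitL' = counitL[simplified]
  and counitR' = counitR[simplified] and counitP' = counitP[simplified] and counitV' = counitV[simplified]
  and omega_Om1' = omega_Om1[simplified]

lemma S_sum_list: "S (sum_list (map h l)) = sum_list (map (\<lambda>x. S (h x)) l)"
  by (induct l) (auto simp: S_add S_zero)

lemma lin_comp: "lin s \<phi> \<Longrightarrow> (\<And>x y. L (x + y) = L x + L y) \<Longrightarrow> (\<And>c x. L (s' c x) = s c (L x)) \<Longrightarrow> lin s' (\<lambda>x. \<phi> (L x))"
  by (simp add: lin_def)

lemma lin_tlinDS: "(\<And>w. lin sH (\<lambda>u. G (u, w))) \<Longrightarrow> (\<And>u. lin sH (\<lambda>w. G (u, w))) \<Longrightarrow> lin sH (\<lambda>x. sum_list (map G (\<Delta> (S x))))"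
  by (rule lin_comp[OF lin_tlin2[OF tlinD vsH vsH vsH], of G S sH]) (auto simp: S_add S_scale)

lemmas linI = lin_sum_list lin_tlinDS lin_tlin2[OF tlinD vsH vsH vsH] lin_tlin2[OF tlinP vsP vsP vsH]
  lin_tlin2[OF tlinV vsV vsV vsH] lin_tlin2[OF tlin_theta vsV vsP vsP] lin_tlin2[OF tlin_omega vsH vsP vsP]

lemma DB:
  assumes g1: "\<And>y. lin sH (\<lambda>x. g x y)" and g2: "\<And>x. lin sH (\<lambda>y. g x y)"
  shows "(\<Sum>p\<leftarrow>\<Delta> y. \<Sum>q\<leftarrow>\<Delta> (fst p). \<Sum>r\<leftarrow>\<Delta> (snd p). g (fst q * S (snd r)) (snd q * S (fst r)))
     = \<epsilon> y * g 1 1"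
proof -
  note ge = lin_eqs[OF g1 vsH] lin_eqs[OF g2 vsH]
  have s1: "(\<Sum>p\<leftarrow>\<Delta> y. \<Sum>q\<leftarrow>\<Delta> (fst p). \<Sum>r\<leftarrow>\<Delta> (snd p). g (fst q * S (snd r)) (snd q * S (fst r)))
     = (\<Sum>p\<leftarrow>\<Delta> y. \<Sum>q\<leftarrow>\<Delta> (snd p). \<Sum>r\<leftarrow>\<Delta> (snd q). g (fst p * S (snd r)) (fst q * S (fst r)))"
    apply (rule teq3_use[OF coassD vsH vsH vsH, of "\<lambda>a b c. \<Sum>r\<leftarrow>\<Delta> c. g (a * S (snd r)) (b * S (fst r))" y])
    subgoal by (simp add: Delta3_def)
    apply ((intro linI)?; simp add: lin_def ge S_add S_scale kalgH distrib_left distrib_right)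
    apply ((intro linI)?; simp add: lin_def ge S_add S_scale kalgH distrib_left distrib_right)
    apply ((intro linI)?; simp add: lin_def ge S_add S_scale kalgH distrib_left distrib_right)
    done
  have s2: "(\<Sum>q\<leftarrow>\<Delta> z. \<Sum>r\<leftarrow>\<Delta> (snd q). g (u * S (snd r)) (fst q * S (fst r)))
     = (\<Sum>q\<leftarrow>\<Delta> z. \<Sum>r\<leftarrow>\<Delta> (fst q). g (u * S (snd q)) (fst r * S (snd r)))" for u z
    apply (rule teq3_use[OF teq3_sym[OF coassD] vsH vsH vsH, of "\<lambda>a b c. g (u * S c) (a * S b)" z])
    subgoal by (simp add: Delta3_def)
    apply ((intro linI)?; simp add: lin_def ge S_add S_scale kalgH distrib_left distrib_right)
    apply ((intro linI)?; simp add: lin_def ge S_add S_scale kalgH distrib_left distrib_right)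
    apply ((intro linI)?; simp add: lin_def ge S_add S_scale kalgH distrib_left distrib_right)
    done
  have s3: "(\<Sum>r\<leftarrow>\<Delta> x. g a (fst r * S (snd r))) = \<epsilon> x * g a 1" for a x
  proof -
    have "g a (sH (\<epsilon> x) 1) = g a (\<Sum>r\<leftarrow>\<Delta> x. fst r * S (snd r))" by (simp add: antipR')
    then show ?thesis by (simp add: lin_sum_list_eq[OF vsH g2] ge)
  qed
  have s4: "(\<Sum>q\<leftarrow>\<Delta> z. \<epsilon> (fst q) * g (u * S (snd q)) 1) = g (u * S z) 1" for u z
  proof -
    have "g (u * S z) 1 = g (u * S (\<Sum>q\<leftarrow>\<Delta> z. sH (\<epsilon> (fst q)) (snd q))) 1" using counitL'[of z] by simp
    then show ?thesis by (simp add: lin_sum_list_eq[OF vsH g1] ge S_sum_list mult_sum_list_left S_scale kalgH)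
  qed
  have s5: "(\<Sum>p\<leftarrow>\<Delta> y. g (fst p * S (snd p)) 1) = \<epsilon> y * g 1 1"
  proof -
    have "g (sH (\<epsilon> y) 1) 1 = g (\<Sum>r\<leftarrow>\<Delta> y. fst r * S (snd r)) 1" by (simp add: antipR')
    then show ?thesis by (simp add: lin_sum_list_eq[OF vsH g1] ge)
  qed
  show ?thesis unfolding s1 s2 s3 s4 s5 ..
qed

lemma linD_sum: "lin sH (\<lambda>h. \<Sum>p\<leftarrow>\<Delta> h. g (fst p) (snd p))"
  if "\<And>y. lin sH (\<lambda>x. g x y)" "\<And>x. lin sH (\<lambda>y. g x y)"
  using that by (intro linI) auto

lemma AD:
  assumes g1: "\<And>y. lin sH (\<lambda>x. g x y)" and g2: "\<And>x. lin sH (\<lambda>y. g x y)"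
  shows "(\<Sum>q\<leftarrow>\<Delta> x. \<Sum>a\<leftarrow>\<Delta> (S (fst q)). \<Sum>b\<leftarrow>\<Delta> (snd q). g (fst a * fst b) (snd a * snd b))
     = \<epsilon> x * g 1 1"
proof -
  note ge = lin_eqs[OF g1 vsH] lin_eqs[OF g2 vsH]
  note L = linD_sum[OF g1 g2]
  have s1: "(\<Sum>a\<leftarrow>\<Delta> (S u). \<Sum>b\<leftarrow>\<Delta> w. g (fst a * fst b) (snd a * snd b)) = (\<Sum>p\<leftarrow>\<Delta> (S u * w). g (fst p) (snd p))" for u w
    apply (rule teq2_use[OF Dmult vsH vsH, of g "S u" w])
    subgoal by (simp add: mult2_def)
    using g1 g2 by auto
  have "(\<Sum>q\<leftarrow>\<Delta> x. \<Sum>p\<leftarrow>\<Delta> (S (fst q) * snd q). g (fst p) (snd p))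
     = (\<Sum>p\<leftarrow>\<Delta> (\<Sum>q\<leftarrow>\<Delta> x. S (fst q) * snd q). g (fst p) (snd p))"
    by (rule lin_sum_list_eq[OF vsH L, symmetric])
  also have "\<dots> = \<epsilon> x * g 1 1"
    using lin_scale_eq[OF L, of "\<epsilon> x" 1] teq2D[OF D1 vsH vsH, of g, OF g1 g2] by (simp add: antipL')
  finally show ?thesis by (simp add: s1)
qed

lemma S_anticomult: "teq2 sH sH (\<Delta> (S h)) [(S b, S a). (a, b) \<leftarrow> \<Delta> h]"
proof (rule teq2I[OF vsH vsH])
  fix f assume f1: "\<And>y. lin sH (\<lambda>x. f x y)" and f2: "\<And>x. lin sH (\<lambda>y. f x y)"
  note fe = lin_eqs[OF f1 vsH] lin_eqs[OF f2 vsH]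
  define Q where "Q = (\<Sum>p\<leftarrow>\<Delta> h. \<Sum>q\<leftarrow>\<Delta> (fst p). \<Sum>a\<leftarrow>\<Delta> (S (fst q)). \<Sum>b\<leftarrow>\<Delta> (snd q). \<Sum>c\<leftarrow>\<Delta> (snd p).
     f (fst a * (fst b * S (snd c))) (snd a * (snd b * S (fst c))))"
  have q1: "Q = (\<Sum>p\<leftarrow>\<Delta> h. \<Sum>q\<leftarrow>\<Delta> (snd p). \<Sum>a\<leftarrow>\<Delta> (S (fst p)). \<Sum>b\<leftarrow>\<Delta> (fst q). \<Sum>c\<leftarrow>\<Delta> (snd q).
     f (fst a * (fst b * S (snd c))) (snd a * (snd b * S (fst c))))"
    unfolding Q_def
    apply (rule teq3_use[OF coassD vsH vsH vsH, of "\<lambda>x y z. \<Sum>a\<leftarrow>\<Delta> (S x). \<Sum>b\<leftarrow>\<Delta> y. \<Sum>c\<leftarrow>\<Delta> z.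
     f (fst a * (fst b * S (snd c))) (snd a * (snd b * S (fst c)))" h])
    subgoal by (simp add: Delta3_def)
    subgoal by ((intro linI)?; simp add: lin_def fe S_add S_scale kalgH distrib_left distrib_right)
    subgoal by ((intro linI)?; simp add: lin_def fe S_add S_scale kalgH distrib_left distrib_right)
    subgoal by ((intro linI)?; simp add: lin_def fe S_add S_scale kalgH distrib_left distrib_right)
    done
  have q2: "Q = (\<Sum>p\<leftarrow>\<Delta> (S h). f (fst p) (snd p))"
  proof -
    have "(\<Sum>q\<leftarrow>\<Delta> y. \<Sum>a\<leftarrow>L. \<Sum>b\<leftarrow>\<Delta> (fst q). \<Sum>c\<leftarrow>\<Delta> (snd q). f (fst a * (fst b * S (snd c))) (snd a * (snd b * S (fst c))))
       = (\<Sum>a\<leftarrow>L. \<epsilon> y * f (fst a) (snd a))" for y L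
      apply (subst sum_list_swap)
      apply (rule arg_cong[where f=sum_list], rule map_cong[OF refl])
      apply (rule DB[of "\<lambda>u w. f (fst _ * u) (snd _ * w)" y, simplified])
      by (simp_all add: lin_def fe distrib_left kalgH)
    then have "Q = (\<Sum>p\<leftarrow>\<Delta> h. \<Sum>a\<leftarrow>\<Delta> (S (fst p)). \<epsilon> (snd p) * f (fst a) (snd a))"
      by (simp add: q1)
    also have "\<dots> = (\<Sum>p\<leftarrow>\<Delta> (S h). f (fst p) (snd p))"
    proof -
      have L: "lin sH (\<lambda>x. \<Sum>a\<leftarrow>\<Delta> (S x). f (fst a) (snd a))"
        by ((intro linI)?; simp add: lin_def fe)
      have "(\<Sum>p\<leftarrow>\<Delta> (S h). f (fst p) (snd p)) = (\<Sum>p\<leftarrow>\<Delta> (S (\<Sum>p\<leftarrow>\<Delta> h. sH (\<epsilon> (snd p)) (fst p))). f (fst p) (snd p))"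
        by (simp add: counitR')
      also have "\<dots> = (\<Sum>p\<leftarrow>\<Delta> h. \<epsilon> (snd p) * (\<Sum>a\<leftarrow>\<Delta> (S (fst p)). f (fst a) (snd a)))"
        by (simp add: lin_sum_list_eq[OF vsH L] lin_scale_eq[OF L])
      finally show ?thesis by (simp add: mult_sum_list_left)
    qed
    finally show ?thesis .
  qed
  have q3: "Q = (\<Sum>c\<leftarrow>\<Delta> h. f (S (snd c)) (S (fst c)))"
  proof -
    have sw: "(\<Sum>q\<leftarrow>\<Delta> x. \<Sum>a\<leftarrow>\<Delta> (S (fst q)). \<Sum>b\<leftarrow>\<Delta> (snd q). \<Sum>c\<leftarrow>L. G q a b c)
      = (\<Sum>c\<leftarrow>L. \<Sum>q\<leftarrow>\<Delta> x. \<Sum>a\<leftarrow>\<Delta> (S (fst q)). \<Sum>b\<leftarrow>\<Delta> (snd q). (G q a b c :: 'k))" for x L G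
      by (simp only: sum_list_swap[of _ _ L])
    have ad: "(\<Sum>q\<leftarrow>\<Delta> x. \<Sum>a\<leftarrow>\<Delta> (S (fst q)). \<Sum>b\<leftarrow>\<Delta> (snd q). f (fst a * (fst b * X)) (snd a * (snd b * Y)))
      = \<epsilon> x * f X Y" for x X Y
      using AD[of "\<lambda>u w. f (u * X) (w * Y)" x]
      by (simp add: mult.assoc lin_def fe distrib_right kalgH)
    have "Q = (\<Sum>p\<leftarrow>\<Delta> h. \<Sum>c\<leftarrow>\<Delta> (snd p). \<epsilon> (fst p) * f (S (snd c)) (S (fst c)))"
      unfolding Q_def sw ad ..
    also have "\<dots> = (\<Sum>c\<leftarrow>\<Delta> h. f (S (snd c)) (S (fst c)))"
    proof -
      have L: "lin sH (\<lambda>x. \<Sum>c\<leftarrow>\<Delta> x. f (S (snd c)) (S (fst c)))"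
        by ((intro linI)?; simp add: lin_def fe S_add S_scale)
      have "(\<Sum>c\<leftarrow>\<Delta> h. f (S (snd c)) (S (fst c))) = (\<Sum>c\<leftarrow>\<Delta> (\<Sum>p\<leftarrow>\<Delta> h. sH (\<epsilon> (fst p)) (snd p)). f (S (snd c)) (S (fst c)))"
        by (simp add: counitL')
      also have "\<dots> = (\<Sum>p\<leftarrow>\<Delta> h. \<epsilon> (fst p) * (\<Sum>c\<leftarrow>\<Delta> (snd p). f (S (snd c)) (S (fst c))))"
        by (simp add: lin_sum_list_eq[OF vsH L] lin_scale_eq[OF L])
      finally show ?thesis by (simp add: mult_sum_list_left)
    qed
    finally show ?thesis .
  qed
  show "(\<Sum>p\<leftarrow>\<Delta> (S h). f (fst p) (snd p)) = (\<Sum>p\<leftarrow>[(S b, S a). (a, b) \<leftarrow> \<Delta> h]. f (fst p) (snd p))"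
    using q2 q3 by simp
qed

lemma eps_S: "\<epsilon> (S h) = \<epsilon> h"
proof -
  have L: "lin sH (\<lambda>x. \<epsilon> (S x))" by (rule lin_comp[OF eps_lin]) (auto simp: S_add S_scale)
  have "\<epsilon> (S h) = \<epsilon> (S (\<Sum>p\<leftarrow>\<Delta> h. sH (\<epsilon> (snd p)) (fst p)))" by (simp add: counitR')
  also have "\<dots> = (\<Sum>p\<leftarrow>\<Delta> h. \<epsilon> (snd p) * \<epsilon> (S (fst p)))"
    by (simp add: lin_sum_list_eq[OF vsH L] lin_scale_eq[OF L])
  also have "\<dots> = \<epsilon> (\<Sum>p\<leftarrow>\<Delta> h. S (fst p) * snd p)"
    by (simp add: lin_sum_list_eq[OF vsH eps_lin] eps_mult mult.commute)
  also have "\<dots> = \<epsilon> h" by (simp add: antipL' eps_eqs eps1)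
  finally show ?thesis .
qed

definition Si where "Si = inv S"

lemma S_Si[simp]: "S (Si x) = x" and Si_S[simp]: "Si (S x) = x"
  using S_bij unfolding Si_def by (auto simp: bij_def surj_f_inv_f inv_f_f)

lemma Si_add: "Si (x + y) = Si x + Si y"
  by (metis S_Si Si_S S_add)
lemma Si_scale: "Si (sH c x) = sH c (Si x)"
  by (metis S_Si Si_S S_scale)
lemma Si_zero: "Si 0 = 0" by (metis S_zero Si_S)
lemma Si_neg: "Si (- x) = - Si x" by (metis S_neg S_Si Si_S)
lemma Si_sum_list: "Si (sum_list (map h l)) = sum_list (map (\<lambda>x. Si (h x)) l)"
  by (induct l) (auto simp: Si_add Si_zero)
lemma eps_Si: "\<epsilon> (Si h) = \<epsilon> h" by (metis S_Si eps_S)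

lemma lin_tlinDSi: "(\<And>w. lin sH (\<lambda>u. G (u, w))) \<Longrightarrow> (\<And>u. lin sH (\<lambda>w. G (u, w))) \<Longrightarrow> lin sH (\<lambda>x. sum_list (map G (\<Delta> (Si x))))"
  by (rule lin_comp[OF lin_tlin2[OF tlinD vsH vsH vsH], of G Si sH]) (auto simp: Si_add Si_scale)

lemma Si_anticomult: "teq2 sH sH (\<Delta> (Si h)) [(Si b, Si a). (a, b) \<leftarrow> \<Delta> h]"
proof (rule teq2I[OF vsH vsH])
  fix f assume f1: "\<And>y. lin sH (\<lambda>x. f x y)" and f2: "\<And>x. lin sH (\<lambda>y. f x y)"
  note fe = lin_eqs[OF f1 vsH] lin_eqs[OF f2 vsH]
  have "(\<Sum>p\<leftarrow>\<Delta> (S (Si h)). f (Si (snd p)) (Si (fst p))) = (\<Sum>p\<leftarrow>\<Delta> (Si h). f (fst p) (snd p))"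
    apply (rule teq2_use[OF S_anticomult vsH vsH, of "\<lambda>x y. f (Si y) (Si x)" "Si h"])
    subgoal by simp
    by (simp_all add: lin_def fe Si_add Si_scale)
  then show "(\<Sum>p\<leftarrow>\<Delta> (Si h). f (fst p) (snd p)) = (\<Sum>p\<leftarrow>[(Si b, Si a). (a, b) \<leftarrow> \<Delta> h]. f (fst p) (snd p))"
    by simp
qed

lemma HF1: "(\<Sum>p\<leftarrow>\<Delta> y. snd p * Si (fst p)) = sH (\<epsilon> y) 1"
proof (rule separation[OF vsH])
  fix \<phi> assume L: "lin sH \<phi>"
  note pe = lin_eqs[OF L vsH]
  obtain x where y: "y = S x" by (metis S_Si)
  have "(\<Sum>p\<leftarrow>\<Delta> (S x). \<phi> (snd p * Si (fst p))) = (\<Sum>p\<leftarrow>\<Delta> x. \<phi> (S (fst p) * snd p))"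
    apply (rule teq2_use[OF S_anticomult vsH vsH, of "\<lambda>x y. \<phi> (y * Si x)" x])
    subgoal by simp
    by (simp_all add: lin_def pe Si_add Si_scale distrib_left distrib_right kalgH)
  then show "\<phi> (\<Sum>p\<leftarrow>\<Delta> y. snd p * Si (fst p)) = \<phi> (sH (\<epsilon> y) 1)"
    by (simp add: y lin_sum_list_eq[OF vsH L, symmetric] antipL' eps_S)
qed

lemma HF2: "(\<Sum>p\<leftarrow>\<Delta> y. Si (snd p) * fst p) = sH (\<epsilon> y) 1"
proof (rule separation[OF vsH])
  fix \<phi> assume L: "lin sH \<phi>"
  note pe = lin_eqs[OF L vsH]
  obtain x where y: "y = S x" by (metis S_Si)
  have "(\<Sum>p\<leftarrow>\<Delta> (S x). \<phi> (Si (snd p) * fst p)) = (\<Sum>p\<leftarrow>\<Delta> x. \<phi> (fst p * S (snd p)))"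
    apply (rule teq2_use[OF S_anticomult vsH vsH, of "\<lambda>x y. \<phi> (Si y * x)" x])
    subgoal by simp
    by (simp_all add: lin_def pe Si_add Si_scale distrib_left distrib_right kalgH)
  then show "\<phi> (\<Sum>p\<leftarrow>\<Delta> y. Si (snd p) * fst p) = \<phi> (sH (\<epsilon> y) 1)"
    by (simp add: y lin_sum_list_eq[OF vsH L, symmetric] antipR' eps_S)
qed

end

context setting begin

lemmas linJ = linI lin_tlinDSi

lemma counitV_lin:
  assumes L: "lin sV \<phi>"
  shows "(\<Sum>q\<leftarrow>\<delta>V v. \<epsilon> (snd q) * \<phi> (fst q)) = \<phi> v"
proof -
  have "\<phi> v = \<phi> (\<Sum>q\<leftarrow>\<delta>V v. sV (\<epsilon> (snd q)) (fst q))" by (simp add: counitV')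
  then show ?thesis by (simp add: lin_sum_list_eq[OF vsV L] lin_scale_eq[OF L])
qed

lemma KI:
  assumes t: "t \<in> E"
    and G1: "\<And>v h. lin sP (\<lambda>p. G p v h)" and G2: "\<And>p h. lin sV (\<lambda>v. G p v h)" and G3: "\<And>p v. lin sH (\<lambda>h. G p v h)"
  shows "(\<Sum>x\<leftarrow>t. \<Sum>q\<leftarrow>\<delta>P (fst x). G (fst q) (snd x) (snd q)) = (\<Sum>x\<leftarrow>t. \<Sum>q\<leftarrow>\<delta>V (snd x). G (fst x) (fst q) (Si (snd q)))"
proof -
  note ge = lin_eqs[OF G1 vsP] lin_eqs[OF G2 vsV] lin_eqs[OF G3 vsH]
  have inv: "teq3 sP sV sH [(p', v', h * g). (p, v) \<leftarrow> t, (p', h) \<leftarrow> \<delta>P p, (v', g) \<leftarrow> \<delta>V v] [(p, v, 1). (p, v) \<leftarrow> t]"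
    using t by (simp add: Esec_def)
  have c1: "(\<Sum>q\<leftarrow>\<delta>V v. \<Sum>r\<leftarrow>\<delta>V (fst q). G p (fst r) (h * (snd q * Si (snd r)))) = G p v h" for p v h
  proof -
    have "(\<Sum>q\<leftarrow>\<delta>V v. \<Sum>r\<leftarrow>\<delta>V (fst q). G p (fst r) (h * (snd q * Si (snd r))))
        = (\<Sum>q\<leftarrow>\<delta>V v. \<Sum>r\<leftarrow>\<Delta> (snd q). G p (fst q) (h * (snd r * Si (fst r))))"
      apply (rule teq3_use[OF coassV vsV vsH vsH, of "\<lambda>a b c. G p a (h * (c * Si b))" v])
      subgoal by simp
      by (simp_all add: lin_def ge Si_add Si_scale kalgH distrib_left distrib_right)
    also have "\<dots> = (\<Sum>q\<leftarrow>\<delta>V v. \<epsilon> (snd q) * G p (fst q) h)"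
    proof -
      have "(\<Sum>r\<leftarrow>\<Delta> y. G p a (h * (snd r * Si (fst r)))) = \<epsilon> y * G p a h" for a y
      proof -
        have "G p a (h * sH (\<epsilon> y) 1) = G p a (h * (\<Sum>r\<leftarrow>\<Delta> y. snd r * Si (fst r)))" by (simp add: HF1)
        then show ?thesis by (simp add: mult_sum_list_left lin_sum_list_eq[OF vsH G3] kalgH ge)
      qed
      then show ?thesis by simp
    qed
    also have "\<dots> = G p v h" by (rule counitV_lin[OF G2])
    finally show ?thesis .
  qed
  show ?thesis
    apply (rule teq3_use[OF inv vsP vsV vsH, of "\<lambda>p v h. \<Sum>r\<leftarrow>\<delta>V v. G p (fst r) (h * Si (snd r))"])
    subgoal by (simp add: c1 mult.assoc)
    by ((intro linJ)?; simp add: lin_def ge Si_add Si_scale kalgH distrib_left distrib_right)+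
qed

end

context setting begin

lemma sum_list_negf: "sum_list (map (\<lambda>x. - f x) l) = - sum_list (map f l :: 'a::ab_group_add list)"
  by (induct l) auto

lemma some_sec:
  assumes e: "e \<in> E"
  defines "t' \<equiv> SOME t. t \<in> E \<and> teq2 sP sP (s_theta \<theta> t) (s_theta \<theta> e)"
  shows "t' \<in> E" "teq2 sP sV t' e"
proof -
  have "t' \<in> E \<and> teq2 sP sP (s_theta \<theta> t') (s_theta \<theta> e)"
    unfolding t'_def by (rule someI[of _ e]) (simp add: e)
  then show "t' \<in> E" "teq2 sP sV t' e" using stheta_inj e by auto
qed

lemma torsion_eq:
  assumes e: "e \<in> E"
  shows "teq3 sP sP sP (torsion sP sH sV \<delta>P \<delta>V \<theta> \<omega> (s_theta \<theta> e))
                 (concat (map (\<lambda>(p, v). lmul3 p (Dbar_theta S \<delta>V \<theta> \<omega> v)) e))"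
proof (rule teq3I[OF vsP vsP vsP])
  fix f assume f1: "\<And>y z. lin sP (\<lambda>x. f x y z)" and f2: "\<And>x z. lin sP (\<lambda>y. f x y z)" and f3: "\<And>x y. lin sP (\<lambda>z. f x y z)"
  note fe = lin_eqs[OF f1 vsP] lin_eqs[OF f2 vsP] lin_eqs[OF f3 vsP]
  define t' where "t' \<equiv> SOME t. t \<in> E \<and> teq2 sP sP (s_theta \<theta> t) (s_theta \<theta> e)"
  have t': "t' \<in> E" "teq2 sP sV t' e" using some_sec[OF e] unfolding t'_def by auto
  have E1: "(\<Sum>x\<leftarrow>t'. \<Sum>a\<leftarrow>\<theta> (snd x). f (fst x) (fst a) (snd a)) = (\<Sum>x\<leftarrow>e. \<Sum>a\<leftarrow>\<theta> (snd x). f (fst x) (fst a) (snd a))"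
    apply (rule teq2_use[OF t'(2) vsP vsV, of "\<lambda>p v. \<Sum>a\<leftarrow>\<theta> v. f p (fst a) (snd a)"])
    subgoal by simp
    by ((auto intro!: linJ)?; simp add: lin_def fe)+
  have E2: "(\<Sum>x\<leftarrow>t'. \<Sum>q\<leftarrow>\<delta>P (fst x). \<Sum>a\<leftarrow>\<omega> (snd q). \<Sum>b\<leftarrow>\<theta> (snd x). f (fst q * fst a) (snd a * fst b) (snd b))
     = (\<Sum>x\<leftarrow>e. \<Sum>q\<leftarrow>\<delta>P (fst x). \<Sum>a\<leftarrow>\<omega> (snd q). \<Sum>b\<leftarrow>\<theta> (snd x). f (fst q * fst a) (snd a * fst b) (snd b))"
    apply (rule teq2_use[OF t'(2) vsP vsV, of "\<lambda>p v. \<Sum>q\<leftarrow>\<delta>P p. \<Sum>a\<leftarrow>\<omega> (snd q). \<Sum>b\<leftarrow>\<theta> v. f (fst q * fst a) (snd a * fst b) (snd b)"])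
    subgoal by simp
    by ((auto intro!: linJ)?; simp add: lin_def fe kalgP distrib_left distrib_right)+
  have E3: "(\<Sum>x\<leftarrow>e. \<Sum>q\<leftarrow>\<delta>P (fst x). \<Sum>a\<leftarrow>\<omega> (snd q). \<Sum>b\<leftarrow>\<theta> (snd x). f (fst q * fst a) (snd a * fst b) (snd b))
     = (\<Sum>x\<leftarrow>e. \<Sum>q\<leftarrow>\<delta>V (snd x). \<Sum>a\<leftarrow>\<omega> (Si (snd q)). \<Sum>b\<leftarrow>\<theta> (fst q). f (fst x * fst a) (snd a * fst b) (snd b))"
    apply (rule KI[OF e, of "\<lambda>p v h. \<Sum>a\<leftarrow>\<omega> h. \<Sum>b\<leftarrow>\<theta> v. f (p * fst a) (snd a * fst b) (snd b)"])
    by ((auto intro!: linJ)?; simp add: lin_def fe kalgP distrib_left distrib_right)+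
  show "(\<Sum>p\<leftarrow>torsion sP sH sV \<delta>P \<delta>V \<theta> \<omega> (s_theta \<theta> e). f (fst p) (fst (snd p)) (snd (snd p))) =
        (\<Sum>p\<leftarrow>concat (map (\<lambda>(p, v). lmul3 p (Dbar_theta S \<delta>V \<theta> \<omega> v)) e). f (fst p) (fst (snd p)) (snd (snd p)))"
    unfolding torsion_def nabla_def Let_def t'_def[symmetric]
    apply (simp add: d1_def neg3_def s_theta_def lmul2_def lmul3_def mult11_def Dbar_theta_def Si_def[symmetric] fe
       E1 E2 E3 sum_list_addf sum_list_subtractf sum_list_negf)
    done
qed

end

lemma basis_decomp:
  assumes vs: "vector_space s"
  obtains R where "\<And>\<beta>. lin s (\<lambda>a. R \<beta> a)"
   and "\<And>as. \<exists>L. (\<forall>a\<in>set as. a = sum_list (map (\<lambda>\<beta>. s (R \<beta> a) \<beta>) L)) \<and> ((\<forall>a\<in>set as. a \<in> V) \<longrightarrow> set L \<subseteq> V)"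
proof -
  interpret vector_space s by fact
  obtain BM where BM: "BM \<subseteq> V" "independent BM" "V \<subseteq> span BM" using maximal_independent_subset[of V] by blast
  define BB where "BB = extend_basis BM"
  have BB: "independent BB" "span BB = UNIV" "BM \<subseteq> BB" unfolding BB_def
    using independent_extend_basis[OF BM(2)] span_extend_basis[OF BM(2)] extend_basis_superset[OF BM(2)] by auto
  define R where "R \<beta> a = representation BB a \<beta>" for \<beta> a
  have lin: "lin s (\<lambda>a. R \<beta> a)" for \<beta>
    using linear_representation[OF BB(1,2)] linear_iff_lin[OF vs] unfolding R_def by simp
  have dec: "\<exists>L. (\<forall>a\<in>set as. a = sum_list (map (\<lambda>\<beta>. s (R \<beta> a) \<beta>) L)) \<and> ((\<forall>a\<in>set as. a \<in> V) \<longrightarrow> set L \<subseteq> V)" for as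
  proof -
    define F where "F = (\<Union>a\<in>set as. {\<beta>. R \<beta> a \<noteq> 0})"
    have fF: "finite F" unfolding F_def R_def using finite_representation by auto
    obtain L where L: "set L = F" "distinct L" using finite_distinct_list[OF fF] by blast
    have "a = sum_list (map (\<lambda>\<beta>. s (R \<beta> a) \<beta>) L)" if a: "a \<in> set as" for a
    proof -
      have "sum_list (map (\<lambda>\<beta>. s (R \<beta> a) \<beta>) L) = (\<Sum>\<beta>\<in>F. s (R \<beta> a) \<beta>)"
        using L by (simp add: sum_list_distinct_conv_sum_set)
      also have "\<dots> = (\<Sum>\<beta> | R \<beta> a \<noteq> 0. s (R \<beta> a) \<beta>)"
        by (rule sum.mono_neutral_right[OF fF]) (use a in \<open>auto simp: F_def\<close>)
      also have "\<dots> = a" unfolding R_def using sum_nonzero_representation_eq[OF BB(1)] BB(2) by simp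
      finally show ?thesis by simp
    qed
    moreover have "set L \<subseteq> V" if "\<forall>a\<in>set as. a \<in> V"
    proof
      fix \<beta> assume "\<beta> \<in> set L"
      then obtain a where a: "a \<in> set as" "R \<beta> a \<noteq> 0" using L unfolding F_def by auto
      have "a \<in> span BM" using that a BM(3) by auto
      then have "representation BB a = representation BM a"
        using representation_extend[OF BB(1) _ BB(3)] by simp
      then have "\<beta> \<in> BM" using a(2) representation_ne_zero unfolding R_def by metis
      then show "\<beta> \<in> V" using BM(1) by auto
    qed
    ultimately show ?thesis by blast
  qed
  show ?thesis using that[OF lin dec] .
qed

context setting begin

lemma lin_tlinOSi: "(\<And>w. lin sP (\<lambda>u. G (u, w))) \<Longrightarrow> (\<And>u. lin sP (\<lambda>w. G (u, w))) \<Longrightarrow> lin sH (\<lambda>x. sum_list (map G (\<omega> (Si x))))"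
  by (rule lin_comp[OF lin_tlin2[OF tlin_omega vsH vsP vsP], of G Si sH]) (auto simp: Si_add Si_scale)

lemmas linK = linJ lin_tlinOSi

abbreviation "Dbar \<equiv> Dbar_theta S \<delta>V \<theta> \<omega>"

lemma Dbar_sum: "(\<Sum>p\<leftarrow>Dbar v. f (fst p) (fst (snd p)) (snd (snd p))) =
   (\<Sum>a\<leftarrow>\<theta> v. f 1 (fst a) (snd a)) + ((\<Sum>a\<leftarrow>\<theta> v. f (- fst a) 1 (snd a)) + ((\<Sum>a\<leftarrow>\<theta> v. f (fst a) (snd a) 1) +
   (\<Sum>q\<leftarrow>\<delta>V v. \<Sum>a\<leftarrow>\<omega> (Si (snd q)). \<Sum>b\<leftarrow>\<theta> (fst q). f (fst a) (snd a * fst b) (snd b))))"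
  by (simp add: Dbar_theta_def mult11_def Si_def[symmetric] sum_list_addf)

lemma Dbar_lin:
  assumes f1: "\<And>y z. lin sP (\<lambda>x. f x y z)" and f2: "\<And>x z. lin sP (\<lambda>y. f x y z)" and f3: "\<And>x y. lin sP (\<lambda>z. f x y z)"
  shows "lin sV (\<lambda>v. \<Sum>p\<leftarrow>Dbar v. f (fst p) (fst (snd p)) (snd (snd p)))"
proof -
  note fe = lin_eqs[OF f1 vsP] lin_eqs[OF f2 vsP] lin_eqs[OF f3 vsP]
  show ?thesis unfolding Dbar_sum
    by ((auto intro!: linK)?; simp add: lin_def fe kalgP distrib_left distrib_right)
qed

lemma Dbar_tlin: "tlin3 sV sP sP sP Dbar"
  unfolding tlin3_def
proof (intro allI, rule teq3I[OF vsP vsP vsP])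
  fix c x y f assume f1: "\<And>y z. lin sP (\<lambda>x. f x y z)" and f2: "\<And>x z. lin sP (\<lambda>y. f x y z)" and f3: "\<And>x y. lin sP (\<lambda>z. f x y z)"
  note fe = lin_eqs[OF f1 vsP] lin_eqs[OF f2 vsP] lin_eqs[OF f3 vsP]
  note L = Dbar_lin[OF f1 f2 f3]
  show "(\<Sum>p\<leftarrow>Dbar (sV c x + y). f (fst p) (fst (snd p)) (snd (snd p))) =
    (\<Sum>p\<leftarrow>map (\<lambda>(a, b, d). (sP c a, b, d)) (Dbar x) @ Dbar y. f (fst p) (fst (snd p)) (snd (snd p)))"
    using lin_add_eq[OF L, of "sV c x" y] lin_scale_eq[OF L, of c x]
    by (simp add: fe sum_list_const_mult)
qed

lemma D3Si:
  assumes T1: "\<And>y z. lin sH (\<lambda>x. T x y z)" and T2: "\<And>x z. lin sH (\<lambda>y. T x y z)" and T3: "\<And>x y. lin sH (\<lambda>z. T x y z)"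
  shows "(\<Sum>p\<leftarrow>Delta3 \<Delta> (Si g). T (fst p) (fst (snd p)) (snd (snd p)))
       = (\<Sum>q\<leftarrow>\<Delta> g. \<Sum>r\<leftarrow>\<Delta> (snd q). T (Si (snd r)) (Si (fst r)) (Si (fst q)))"
proof -
  note te = lin_eqs[OF T1 vsH] lin_eqs[OF T2 vsH] lin_eqs[OF T3 vsH]
  have "(\<Sum>p\<leftarrow>Delta3 \<Delta> (Si g). T (fst p) (fst (snd p)) (snd (snd p)))
      = (\<Sum>q\<leftarrow>\<Delta> (Si g). \<Sum>r\<leftarrow>\<Delta> (fst q). T (fst r) (snd r) (snd q))"
    by (simp add: Delta3_def)
  also have "\<dots> = (\<Sum>q\<leftarrow>\<Delta> g. \<Sum>r\<leftarrow>\<Delta> (Si (snd q)). T (fst r) (snd r) (Si (fst q)))"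
    apply (rule teq2_use[OF Si_anticomult vsH vsH, of "\<lambda>x c. \<Sum>r\<leftarrow>\<Delta> x. T (fst r) (snd r) c" g])
    subgoal by simp
    by ((auto intro!: linK)?; simp add: lin_def te)+
  also have "\<dots> = (\<Sum>q\<leftarrow>\<Delta> g. \<Sum>r\<leftarrow>\<Delta> (snd q). T (Si (snd r)) (Si (fst r)) (Si (fst q)))"
  proof -
    have "(\<Sum>r\<leftarrow>\<Delta> (Si y). T (fst r) (snd r) c) = (\<Sum>r\<leftarrow>\<Delta> y. T (Si (snd r)) (Si (fst r)) c)" for y c
      apply (rule teq2_use[OF Si_anticomult vsH vsH, of "\<lambda>a b. T a b c" y])
      subgoal by simp
      by (simp_all add: lin_def te)
    then show ?thesis by simp
  qed
  finally show ?thesis .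
qed

lemma lin_deltaP_sum: "(\<And>w. lin sP (\<lambda>u. G (u, w))) \<Longrightarrow> (\<And>u. lin sH (\<lambda>w. G (u, w))) \<Longrightarrow> lin sP (\<lambda>x. sum_list (map G (\<delta>P x)))"
  by (rule lin_tlin2[OF tlinP vsP vsP vsH])

definition C :: "('p \<Rightarrow> 'p \<Rightarrow> 'p \<Rightarrow> 'h \<Rightarrow> 'k) \<Rightarrow> 'p \<Rightarrow> 'p \<Rightarrow> 'p \<Rightarrow> 'k" where "C f x y z = (\<Sum>a\<leftarrow>\<delta>P x. \<Sum>b\<leftarrow>\<delta>P y. \<Sum>c\<leftarrow>\<delta>P z. f (fst a) (fst b) (fst c) (snd a * snd b * snd c))"

context
  fixes f :: "'p \<Rightarrow> 'p \<Rightarrow> 'p \<Rightarrow> 'h \<Rightarrow> 'k"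
  assumes f1: "\<And>y z w. lin sP (\<lambda>x. f x y z w)" and f2: "\<And>x z w. lin sP (\<lambda>y. f x y z w)"
    and f3: "\<And>x y w. lin sP (\<lambda>z. f x y z w)" and f4: "\<And>x y z. lin sH (\<lambda>w. f x y z w)"
begin

lemmas fe = lin_eqs[OF f1 vsP] lin_eqs[OF f2 vsP] lin_eqs[OF f3 vsP] lin_eqs[OF f4 vsH]

lemma C_lin: "lin sP (\<lambda>x. C f x y z)" "lin sP (\<lambda>y. C f x y z)" "lin sP (\<lambda>z. C f x y z)"
  unfolding C_def by ((auto intro!: linK)?; simp add: lin_def fe kalgH distrib_left distrib_right)+

lemma C1a: "C f 1 y z = (\<Sum>b\<leftarrow>\<delta>P y. \<Sum>c\<leftarrow>\<delta>P z. f 1 (fst b) (fst c) (snd b * snd c))"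
  unfolding C_def
  apply (rule teq2_use[OF P1 vsP vsH, of "\<lambda>a h. \<Sum>b\<leftarrow>\<delta>P y. \<Sum>c\<leftarrow>\<delta>P z. f a (fst b) (fst c) (h * snd b * snd c)"])
  subgoal by simp
  by ((auto intro!: linK)?; simp add: lin_def fe kalgH distrib_left distrib_right)+

lemma C1b: "C f x 1 z = (\<Sum>a\<leftarrow>\<delta>P x. \<Sum>c\<leftarrow>\<delta>P z. f (fst a) 1 (fst c) (snd a * snd c))"
proof -
  have "(\<Sum>b\<leftarrow>\<delta>P 1. \<Sum>c\<leftarrow>\<delta>P z. f u (fst b) (fst c) (m * snd b * snd c)) = (\<Sum>c\<leftarrow>\<delta>P z. f u 1 (fst c) (m * snd c))" for u m
    apply (rule teq2_use[OF P1 vsP vsH, of "\<lambda>b h. \<Sum>c\<leftarrow>\<delta>P z. f u b (fst c) (m * h * snd c)"])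
    subgoal by simp
    by ((auto intro!: linK)?; simp add: lin_def fe kalgH distrib_left distrib_right)+
  then show ?thesis unfolding C_def by simp
qed

lemma C1c: "C f x y 1 = (\<Sum>a\<leftarrow>\<delta>P x. \<Sum>b\<leftarrow>\<delta>P y. f (fst a) (fst b) 1 (snd a * snd b))"
proof -
  have "(\<Sum>c\<leftarrow>\<delta>P 1. f u v (fst c) (m * snd c)) = f u v 1 m" for u v m
    apply (rule teq2_use[OF P1 vsP vsH, of "\<lambda>c h. f u v c (m * h)"])
    subgoal by simp
    by (simp_all add: lin_def fe kalgH distrib_left distrib_right)
  then show ?thesis unfolding C_def by simp
qed

lemma theta_eqv:
  assumes "\<And>y m. lin sP (\<lambda>x. F x y m)" "\<And>x m. lin sP (\<lambda>y. F x y m)" "\<And>x y. lin sH (\<lambda>m. F x y m)"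
  shows "(\<Sum>a\<leftarrow>\<theta> v. \<Sum>b\<leftarrow>\<delta>P (fst a). \<Sum>c\<leftarrow>\<delta>P (snd a). F (fst b) (fst c) (snd b * snd c))
     = (\<Sum>q\<leftarrow>\<delta>V v. \<Sum>a\<leftarrow>\<theta> (fst q). F (fst a) (snd a) (snd q))"
  apply (rule teq3_use[OF equiv_theta vsP vsP vsH, of F v])
  subgoal by (simp add: coact2_def)
  using assms by auto

lemma part1: "(\<Sum>a\<leftarrow>\<theta> v. C f 1 (fst a) (snd a)) = (\<Sum>q\<leftarrow>\<delta>V v. \<Sum>a\<leftarrow>\<theta> (fst q). f 1 (fst a) (snd a) (snd q))"
  unfolding C1a by (rule theta_eqv) (simp_all add: lin_def fe)

lemma part2: "(\<Sum>a\<leftarrow>\<theta> v. C f (- fst a) 1 (snd a)) = (\<Sum>q\<leftarrow>\<delta>V v. \<Sum>a\<leftarrow>\<theta> (fst q). f (- fst a) 1 (snd a) (snd q))"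
proof -
  have "C f (- x) 1 z = - C f x 1 z" for x z using lin_neg_eq[OF vsP C_lin(1)] .
  then have "(\<Sum>a\<leftarrow>\<theta> v. C f (- fst a) 1 (snd a)) = - (\<Sum>a\<leftarrow>\<theta> v. C f (fst a) 1 (snd a))" by (simp add: sum_list_negf)
  also have "(\<Sum>a\<leftarrow>\<theta> v. C f (fst a) 1 (snd a)) = (\<Sum>q\<leftarrow>\<delta>V v. \<Sum>a\<leftarrow>\<theta> (fst q). f (fst a) 1 (snd a) (snd q))"
    unfolding C1b by (rule theta_eqv) (simp_all add: lin_def fe)
  finally show ?thesis by (simp add: fe sum_list_negf)
qed

lemma part3: "(\<Sum>a\<leftarrow>\<theta> v. C f (fst a) (snd a) 1) = (\<Sum>q\<leftarrow>\<delta>V v. \<Sum>a\<leftarrow>\<theta> (fst q). f (fst a) (snd a) 1 (snd q))"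
  unfolding C1c by (rule theta_eqv) (simp_all add: lin_def fe)

lemma CA: "C f \<alpha> (\<beta> * \<gamma>) \<zeta> = (\<Sum>x\<leftarrow>\<delta>P \<alpha>. \<Sum>y1\<leftarrow>\<delta>P \<beta>. \<Sum>y2\<leftarrow>\<delta>P \<gamma>. \<Sum>z\<leftarrow>\<delta>P \<zeta>.
     f (fst x) (fst y1 * fst y2) (fst z) (snd x * (snd y1 * (snd y2 * snd z))))"
proof -
  have "(\<Sum>y\<leftarrow>\<delta>P (\<beta> * \<gamma>). \<Sum>z\<leftarrow>\<delta>P \<zeta>. f u (fst y) (fst z) (m * snd y * snd z)) =
     (\<Sum>y1\<leftarrow>\<delta>P \<beta>. \<Sum>y2\<leftarrow>\<delta>P \<gamma>. \<Sum>z\<leftarrow>\<delta>P \<zeta>. f u (fst y1 * fst y2) (fst z) (m * (snd y1 * (snd y2 * snd z))))" for u m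
    apply (rule teq2_use[OF Pmult vsP vsH, of "\<lambda>b h. \<Sum>z\<leftarrow>\<delta>P \<zeta>. f u b (fst z) (m * h * snd z)" \<beta> \<gamma>])
    subgoal by (simp add: mult2_def mult.assoc)
    by ((auto intro!: linK)?; simp add: lin_def fe kalgH distrib_left distrib_right)+
  then show ?thesis unfolding C_def by simp
qed

lemma stepB: "(\<Sum>a\<leftarrow>\<omega> (Si g). \<Sum>b\<leftarrow>\<theta> w. C f (fst a) (snd a * fst b) (snd b)) =
  (\<Sum>q\<leftarrow>\<Delta> g. \<Sum>r'\<leftarrow>\<Delta> (snd q). \<Sum>a\<leftarrow>\<omega> (Si (fst r')). \<Sum>r\<leftarrow>\<delta>V w. \<Sum>b\<leftarrow>\<theta> (fst r).
     f (fst a) (snd a * fst b) (snd b) (snd r' * (Si (fst q) * snd r)))"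
proof -
  have "(\<Sum>a\<leftarrow>\<omega> (Si g). \<Sum>b\<leftarrow>\<theta> w. C f (fst a) (snd a * fst b) (snd b)) =
     (\<Sum>a\<leftarrow>\<omega> (Si g). \<Sum>x\<leftarrow>\<delta>P (fst a). \<Sum>y1\<leftarrow>\<delta>P (snd a). \<Sum>b\<leftarrow>\<theta> w. \<Sum>y2\<leftarrow>\<delta>P (fst b). \<Sum>z\<leftarrow>\<delta>P (snd b).
      f (fst x) (fst y1 * fst y2) (fst z) (snd x * (snd y1 * (snd y2 * snd z))))"
    unfolding CA by (simp only: sum_list_swap[where xs="\<theta> w"])
  also have "\<dots> = (\<Sum>p\<leftarrow>Delta3 \<Delta> (Si g). \<Sum>a\<leftarrow>\<omega> (fst (snd p)). \<Sum>b\<leftarrow>\<theta> w. \<Sum>y2\<leftarrow>\<delta>P (fst b). \<Sum>z\<leftarrow>\<delta>P (snd b).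
      f (fst a) (snd a * fst y2) (fst z) (S (fst p) * (snd (snd p) * (snd y2 * snd z))))"
    apply (rule teq3_use[OF omega_equiv vsP vsP vsH, of "\<lambda>x y1 m. \<Sum>b\<leftarrow>\<theta> w. \<Sum>y2\<leftarrow>\<delta>P (fst b). \<Sum>z\<leftarrow>\<delta>P (snd b).
      f x (y1 * fst y2) (fst z) (m * (snd y2 * snd z))" "Si g"])
    subgoal by (simp add: coact2_def mult.assoc)
    by ((auto intro!: linK)?; simp add: lin_def fe kalgH kalgP distrib_left distrib_right)+
  also have "\<dots> = (\<Sum>p\<leftarrow>Delta3 \<Delta> (Si g). \<Sum>a\<leftarrow>\<omega> (fst (snd p)). \<Sum>r\<leftarrow>\<delta>V w. \<Sum>b\<leftarrow>\<theta> (fst r).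
      f (fst a) (snd a * fst b) (snd b) (S (fst p) * (snd (snd p) * snd r)))"
  proof -
    have "(\<Sum>b\<leftarrow>\<theta> w. \<Sum>y2\<leftarrow>\<delta>P (fst b). \<Sum>z\<leftarrow>\<delta>P (snd b). f \<alpha> (\<beta> * fst y2) (fst z) (M1 * (M2 * (snd y2 * snd z))))
       = (\<Sum>r\<leftarrow>\<delta>V w. \<Sum>b\<leftarrow>\<theta> (fst r). f \<alpha> (\<beta> * fst b) (snd b) (M1 * (M2 * snd r)))" for \<alpha> \<beta> M1 M2
      by (rule theta_eqv[of "\<lambda>u z m. f \<alpha> (\<beta> * u) z (M1 * (M2 * m))"]) (simp_all add: lin_def fe kalgH kalgP distrib_left distrib_right)
    then show ?thesis by (simp add: mult.assoc)
  qed
  also have "\<dots> = (\<Sum>q\<leftarrow>\<Delta> g. \<Sum>r'\<leftarrow>\<Delta> (snd q). \<Sum>a\<leftarrow>\<omega> (Si (fst r')). \<Sum>r\<leftarrow>\<delta>V w. \<Sum>b\<leftarrow>\<theta> (fst r).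
     f (fst a) (snd a * fst b) (snd b) (snd r' * (Si (fst q) * snd r)))"
    apply (rule trans[OF D3Si[of "\<lambda>x0 y0 z0. \<Sum>a\<leftarrow>\<omega> y0. \<Sum>r\<leftarrow>\<delta>V w. \<Sum>b\<leftarrow>\<theta> (fst r).
      f (fst a) (snd a * fst b) (snd b) (S x0 * (z0 * snd r))" g]])
    apply ((auto intro!: linK)?; simp add: lin_def fe kalgH kalgP S_add S_scale distrib_left distrib_right)
    apply ((auto intro!: linK)?; simp add: lin_def fe kalgH kalgP S_add S_scale distrib_left distrib_right)
    apply ((auto intro!: linK)?; simp add: lin_def fe kalgH kalgP S_add S_scale distrib_left distrib_right)
    by simp
  finally show ?thesis .
qed

lemma part4: "(\<Sum>q\<leftarrow>\<delta>V v. \<Sum>a\<leftarrow>\<omega> (Si (snd q)). \<Sum>b\<leftarrow>\<theta> (fst q). C f (fst a) (snd a * fst b) (snd b)) =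
  (\<Sum>q\<leftarrow>\<delta>V v. \<Sum>r\<leftarrow>\<delta>V (fst q). \<Sum>a\<leftarrow>\<omega> (Si (snd r)). \<Sum>b\<leftarrow>\<theta> (fst r). f (fst a) (snd a * fst b) (snd b) (snd q))"
proof -
  define KK where "KK w' y2 h = (\<Sum>r'\<leftarrow>\<Delta> y2. \<Sum>a\<leftarrow>\<omega> (Si (fst r')). \<Sum>b\<leftarrow>\<theta> w'. f (fst a) (snd a * fst b) (snd b) (snd r' * h))" for w' y2 h
  have KKl: "lin sH (\<lambda>h. KK w' y2 h)" "lin sH (\<lambda>y2. KK w' y2 h)" "lin sV (\<lambda>w'. KK w' y2 h)" for w' y2 h
    unfolding KK_def by ((auto intro!: linK)?; simp add: lin_def fe kalgH kalgP distrib_left distrib_right)+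
  have sw: "(\<Sum>q\<leftarrow>\<Delta> g. \<Sum>r'\<leftarrow>\<Delta> (snd q). \<Sum>a\<leftarrow>\<omega> (Si (fst r')). \<Sum>r\<leftarrow>\<delta>V w. X q r' a r) =
     (\<Sum>r\<leftarrow>\<delta>V w. \<Sum>q\<leftarrow>\<Delta> g. \<Sum>r'\<leftarrow>\<Delta> (snd q). \<Sum>a\<leftarrow>\<omega> (Si (fst r')). (X q r' a r :: 'k))" for g w X
    by (simp only: sum_list_swap[where ys="\<delta>V w"])
  have "(\<Sum>q\<leftarrow>\<delta>V v. \<Sum>a\<leftarrow>\<omega> (Si (snd q)). \<Sum>b\<leftarrow>\<theta> (fst q). C f (fst a) (snd a * fst b) (snd b)) =
     (\<Sum>p\<leftarrow>\<delta>V v. \<Sum>r\<leftarrow>\<delta>V (fst p). \<Sum>q\<leftarrow>\<Delta> (snd p). KK (fst r) (snd q) (Si (fst q) * snd r))"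
    unfolding stepB sw KK_def by simp
  also have "\<dots> = (\<Sum>p\<leftarrow>\<delta>V v. \<Sum>q'\<leftarrow>\<Delta> (snd p). \<Sum>q\<leftarrow>\<Delta> (snd q'). KK (fst p) (snd q) (Si (fst q) * fst q'))"
    apply (rule teq3_use[OF coassV vsV vsH vsH, of "\<lambda>w' g' g. \<Sum>q\<leftarrow>\<Delta> g. KK w' (snd q) (Si (fst q) * g')" v])
    subgoal by simp
    using KKl by ((auto intro!: linK)?; simp add: lin_def lin_eqs[OF KKl(1) vsH] lin_eqs[OF KKl(2) vsH] lin_eqs[OF KKl(3) vsV]
       kalgH Si_add Si_scale distrib_left distrib_right)+
  also have "\<dots> = (\<Sum>p\<leftarrow>\<delta>V v. KK (fst p) (snd p) 1)"
  proof -
    have "(\<Sum>q'\<leftarrow>\<Delta> y. \<Sum>q\<leftarrow>\<Delta> (snd q'). KK w' (snd q) (Si (fst q) * fst q')) =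
          (\<Sum>x\<leftarrow>\<Delta> y. \<Sum>s\<leftarrow>\<Delta> (fst x). KK w' (snd x) (Si (snd s) * fst s))" for w' y
      apply (rule teq3_use[OF teq3_sym[OF coassD] vsH vsH vsH, of "\<lambda>g' g1 y2. KK w' y2 (Si g1 * g')" y])
      subgoal by (simp add: Delta3_def)
      by (simp_all add: lin_def lin_eqs[OF KKl(1) vsH] lin_eqs[OF KKl(2) vsH] kalgH Si_add Si_scale distrib_left distrib_right)
    also have "\<dots> w' y = (\<Sum>x\<leftarrow>\<Delta> y. \<epsilon> (fst x) * KK w' (snd x) 1)" for w' y
    proof -
      have "(\<Sum>s\<leftarrow>\<Delta> x. KK w' y2 (Si (snd s) * fst s)) = \<epsilon> x * KK w' y2 1" for x y2
        using lin_sum_list_eq[OF vsH KKl(1), of w' y2 "\<lambda>s. Si (snd s) * fst s" "\<Delta> x", symmetric]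
          lin_scale_eq[OF KKl(1), of w' y2 "\<epsilon> x" 1] by (simp add: HF2)
      then show ?thesis by simp
    qed
    also have "\<dots> w' y = KK w' y 1" for w' y
    proof -
      have "KK w' y 1 = KK w' (\<Sum>x\<leftarrow>\<Delta> y. sH (\<epsilon> (fst x)) (snd x)) 1" by (simp add: counitL')
      then show ?thesis by (simp add: lin_sum_list_eq[OF vsH KKl(2)] lin_scale_eq[OF KKl(2)])
    qed
    finally show ?thesis by simp
  qed
  also have "\<dots> = (\<Sum>q\<leftarrow>\<delta>V v. \<Sum>r\<leftarrow>\<delta>V (fst q). \<Sum>a\<leftarrow>\<omega> (Si (snd r)). \<Sum>b\<leftarrow>\<theta> (fst r). f (fst a) (snd a * fst b) (snd b) (snd q))"
    unfolding KK_def
    apply (rule teq3_use[OF teq3_sym[OF coassV] vsV vsH vsH, of "\<lambda>w' g' h. \<Sum>a\<leftarrow>\<omega> (Si g'). \<Sum>b\<leftarrow>\<theta> w'. f (fst a) (snd a * fst b) (snd b) h" v])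
    subgoal by simp
    by ((auto intro!: linK)?; simp add: lin_def fe kalgH kalgP distrib_left distrib_right)+
  finally show ?thesis .
qed

end

lemma Dbar_comod: "teq4 sP sP sP sH (coact3 \<delta>P (Dbar v)) [(a, b, c, h). (w, h) \<leftarrow> \<delta>V v, (a, b, c) \<leftarrow> Dbar w]"
proof (rule teq4I[OF vsP vsP vsP vsH])
  fix f :: "'p \<Rightarrow> 'p \<Rightarrow> 'p \<Rightarrow> 'h \<Rightarrow> 'k"
  assume f1: "\<And>y z w. lin sP (\<lambda>x. f x y z w)" and f2: "\<And>x z w. lin sP (\<lambda>y. f x y z w)"
    and f3: "\<And>x y w. lin sP (\<lambda>z. f x y z w)" and f4: "\<And>x y z. lin sH (\<lambda>w. f x y z w)"
  have "(\<Sum>p\<leftarrow>coact3 \<delta>P (Dbar v). f (fst p) (fst (snd p)) (fst (snd (snd p))) (snd (snd (snd p))))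
     = (\<Sum>p\<leftarrow>Dbar v. C f (fst p) (fst (snd p)) (snd (snd p)))"
    unfolding C_def by (simp add: coact3_def)
  also have "\<dots> = (\<Sum>p\<leftarrow>[(a, b, c, h). (w, h) \<leftarrow> \<delta>V v, (a, b, c) \<leftarrow> Dbar w]. f (fst p) (fst (snd p)) (fst (snd (snd p))) (snd (snd (snd p))))"
  proof -
    have ds: "(\<Sum>p\<leftarrow>Dbar w. f (fst p) (fst (snd p)) (snd (snd p)) h) =
     (\<Sum>a\<leftarrow>\<theta> w. f 1 (fst a) (snd a) h) + ((\<Sum>a\<leftarrow>\<theta> w. f (- fst a) 1 (snd a) h) + ((\<Sum>a\<leftarrow>\<theta> w. f (fst a) (snd a) 1 h) +
     (\<Sum>q\<leftarrow>\<delta>V w. \<Sum>a\<leftarrow>\<omega> (Si (snd q)). \<Sum>b\<leftarrow>\<theta> (fst q). f (fst a) (snd a * fst b) (snd b) h)))" for w h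
      by (rule Dbar_sum)
    show ?thesis
      unfolding Dbar_sum part1[OF f1 f2 f3 f4] part2[OF f1 f2 f3 f4] part3[OF f1 f2 f3 f4] part4[OF f1 f2 f3 f4]
      by (simp add: ds sum_list_addf)
  qed
  finally show "(\<Sum>p\<leftarrow>coact3 \<delta>P (Dbar v). f (fst p) (fst (snd p)) (fst (snd (snd p))) (snd (snd (snd p))))
     = (\<Sum>p\<leftarrow>[(a, b, c, h). (w, h) \<leftarrow> \<delta>V v, (a, b, c) \<leftarrow> Dbar w]. f (fst p) (fst (snd p)) (fst (snd (snd p))) (snd (snd (snd p))))" .
qed

end

context setting begin

definition Yp :: "'p \<Rightarrow> ('p \<times> 'p) list" where
  "Yp p = dP p @ neg2 (Pi_omega \<delta>P \<omega> (dP p))"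

lemma omega_zero_sum:
  assumes g1: "\<And>y. lin sP (\<lambda>x. g x y)" and g2: "\<And>x. lin sP (\<lambda>y. g x y)"
  shows "(\<Sum>a\<leftarrow>\<omega> 1. g (fst a) (snd a)) = 0"
  using teq2D[OF omega1 vsP vsP, of g, OF g1 g2] by simp

lemma Y_sum:
  assumes g1: "\<And>y. lin sP (\<lambda>x. g x y)" and g2: "\<And>x. lin sP (\<lambda>y. g x y)"
  shows "(\<Sum>a\<leftarrow>Yp p. g (fst a) (snd a)) = g 1 p + g (- p) 1 - (\<Sum>q\<leftarrow>\<delta>P p. \<Sum>a\<leftarrow>\<omega> (snd q). g (fst q * fst a) (snd a))"
proof -
  note ge = lin_eqs[OF g1 vsP] lin_eqs[OF g2 vsP]
  have z: "(\<Sum>q\<leftarrow>\<delta>P 1. \<Sum>a\<leftarrow>\<omega> (snd q). g (p * (fst q * fst a)) (snd a)) = 0"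
    apply (rule teq2_use[OF P1 vsP vsH, of "\<lambda>x h. \<Sum>a\<leftarrow>\<omega> h. g (p * (x * fst a)) (snd a)"])
    subgoal using omega_zero_sum[of "\<lambda>x y. g (p * x) y"] by (simp add: lin_def ge kalgP distrib_left)
    by ((auto intro!: linK)?; simp add: lin_def ge kalgP distrib_left distrib_right)+
  show ?thesis
    unfolding Yp_def using z
    by (simp add: dP_def neg2_def Pi_omega_def lmul2_def ge sum_list_negf mult.assoc)
qed

lemma counitL_lin: "lin sH \<phi> \<Longrightarrow> (\<Sum>q\<leftarrow>\<Delta> y. \<epsilon> (fst q) * \<phi> (snd q)) = \<phi> y"
proof -
  assume L: "lin sH \<phi>"
  have "\<phi> y = \<phi> (\<Sum>q\<leftarrow>\<Delta> y. sH (\<epsilon> (fst q)) (snd q))" by (simp add: counitL')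
  then show ?thesis by (simp add: lin_sum_list_eq[OF vsH L] lin_scale_eq[OF L])
qed

lemma HR:
  assumes T1: "\<And>y z. lin sH (\<lambda>x. T x y z)" and T2: "\<And>x z. lin sH (\<lambda>y. T x y z)" and T3: "\<And>x y. lin sH (\<lambda>z. T x y z)"
  shows "(\<Sum>q\<leftarrow>\<Delta> y. \<Sum>r\<leftarrow>\<Delta> (snd q). \<Sum>s\<leftarrow>\<Delta> (fst r). T (fst q * S (fst s)) (snd s) (snd r))
       = (\<Sum>q\<leftarrow>\<Delta> y. T 1 (fst q) (snd q))"
proof -
  note te = lin_eqs[OF T1 vsH] lin_eqs[OF T2 vsH] lin_eqs[OF T3 vsH]
  have "(\<Sum>q\<leftarrow>\<Delta> y. \<Sum>r\<leftarrow>\<Delta> (snd q). \<Sum>s\<leftarrow>\<Delta> (fst r). T (fst q * S (fst s)) (snd s) (snd r))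
      = (\<Sum>q\<leftarrow>\<Delta> y. \<Sum>r\<leftarrow>\<Delta> (fst q). \<Sum>s\<leftarrow>\<Delta> (snd r). T (fst r * S (fst s)) (snd s) (snd q))"
    apply (rule teq3_use[OF teq3_sym[OF coassD] vsH vsH vsH, of "\<lambda>a b c. \<Sum>s\<leftarrow>\<Delta> b. T (a * S (fst s)) (snd s) c" y])
    subgoal by (simp add: Delta3_def)
    by ((auto intro!: linK)?; simp add: lin_def te S_add S_scale kalgH distrib_left distrib_right)+
  also have "\<dots> = (\<Sum>q\<leftarrow>\<Delta> y. \<Sum>u\<leftarrow>\<Delta> (fst q). \<Sum>s\<leftarrow>\<Delta> (fst u). T (fst s * S (snd s)) (snd u) (snd q))"
  proof -
    have "(\<Sum>r\<leftarrow>\<Delta> w. \<Sum>s\<leftarrow>\<Delta> (snd r). T (fst r * S (fst s)) (snd s) c)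
        = (\<Sum>u\<leftarrow>\<Delta> w. \<Sum>s\<leftarrow>\<Delta> (fst u). T (fst s * S (snd s)) (snd u) c)" for w c
      apply (rule teq3_use[OF teq3_sym[OF coassD] vsH vsH vsH, of "\<lambda>a b c'. T (a * S b) c' c" w])
      subgoal by (simp add: Delta3_def)
      by (simp_all add: lin_def te S_add S_scale kalgH distrib_left distrib_right)
    then show ?thesis by simp
  qed
  also have "\<dots> = (\<Sum>q\<leftarrow>\<Delta> y. \<Sum>u\<leftarrow>\<Delta> (fst q). \<epsilon> (fst u) * T 1 (snd u) (snd q))"
  proof -
    have "(\<Sum>s\<leftarrow>\<Delta> x. T (fst s * S (snd s)) y0 c) = \<epsilon> x * T 1 y0 c" for x y0 c
    proof -
      have "T (sH (\<epsilon> x) 1) y0 c = T (\<Sum>s\<leftarrow>\<Delta> x. fst s * S (snd s)) y0 c" by (simp add: antipR')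
      then show ?thesis by (simp add: lin_sum_list_eq[OF vsH T1] te)
    qed
    then show ?thesis by simp
  qed
  also have "\<dots> = (\<Sum>q\<leftarrow>\<Delta> y. T 1 (fst q) (snd q))"
    by (simp add: counitL_lin[OF T2])
  finally show ?thesis .
qed

lemma Y_prod: "sum_list (map (\<lambda>(a, b). a * b) (Yp p)) = 0"
proof -
  have z: "(\<Sum>a\<leftarrow>\<omega> h. c * fst a * snd a) = 0" for c h
    using omega_Om1'[of h] by (simp add: mult.assoc mult_sum_list_left[symmetric])
  have z2: "(\<Sum>a\<leftarrow>\<omega> h. - (c * fst a) * snd a) = 0" for c h
    using z[of "- c" h] by simp
  show ?thesis unfolding Yp_def
    by (simp add: dP_def neg2_def Pi_omega_def lmul2_def z2 del: mult_minus_left)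
qed

lemma Y_eqv: "teq3 sP sP sH (coact2 \<delta>P (Yp p)) [(y1, y2, g). (p', g) \<leftarrow> \<delta>P p, (y1, y2) \<leftarrow> Yp p']"
proof (rule teq3I[OF vsP vsP vsH])
  fix F :: "'p \<Rightarrow> 'p \<Rightarrow> 'h \<Rightarrow> 'k"
  assume F1: "\<And>y z. lin sP (\<lambda>x. F x y z)" and F2: "\<And>x z. lin sP (\<lambda>y. F x y z)" and F3: "\<And>x y. lin sH (\<lambda>z. F x y z)"
  note Fe = lin_eqs[OF F1 vsP] lin_eqs[OF F2 vsP] lin_eqs[OF F3 vsH]
  define G where "G y1 y2 = (\<Sum>a\<leftarrow>\<delta>P y1. \<Sum>b\<leftarrow>\<delta>P y2. F (fst a) (fst b) (snd a * snd b))" for y1 y2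
  have Gl: "lin sP (\<lambda>x. G x y)" "lin sP (\<lambda>y. G x y)" for x y
    unfolding G_def by ((auto intro!: linK)?; simp add: lin_def Fe kalgH distrib_left distrib_right)+
  have l1: "(\<Sum>x\<leftarrow>coact2 \<delta>P (Yp p). F (fst x) (fst (snd x)) (snd (snd x))) = (\<Sum>a\<leftarrow>Yp p. G (fst a) (snd a))"
    by (simp add: coact2_def G_def)
  have g1: "G 1 y = (\<Sum>b\<leftarrow>\<delta>P y. F 1 (fst b) (snd b))" for y
    unfolding G_def
    apply (rule teq2_use[OF P1 vsP vsH, of "\<lambda>x h. \<Sum>b\<leftarrow>\<delta>P y. F x (fst b) (h * snd b)"])
    subgoal by simp
    by ((auto intro!: linK)?; simp add: lin_def Fe kalgH distrib_left distrib_right)+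
  have g2: "G x 1 = (\<Sum>a\<leftarrow>\<delta>P x. F (fst a) 1 (snd a))" for x
  proof -
    have "(\<Sum>b\<leftarrow>\<delta>P 1. F u (fst b) (m * snd b)) = F u 1 m" for u m
      apply (rule teq2_use[OF P1 vsP vsH, of "\<lambda>y h. F u y (m * h)"])
      subgoal by simp
      by (simp_all add: lin_def Fe kalgH distrib_left distrib_right)
    then show ?thesis unfolding G_def by simp
  qed
  have lP: "lin sP (\<lambda>x. \<Sum>a\<leftarrow>\<delta>P x. F (fst a) 1 (snd a))"
    by ((auto intro!: linK)?; simp add: lin_def Fe)
  have pm: "(\<Sum>x\<leftarrow>\<delta>P (u * v). \<Sum>b\<leftarrow>\<delta>P w. F (fst x) (fst b) (snd x * snd b)) =
      (\<Sum>x1\<leftarrow>\<delta>P u. \<Sum>x2\<leftarrow>\<delta>P v. \<Sum>b\<leftarrow>\<delta>P w. F (fst x1 * fst x2) (fst b) (snd x1 * (snd x2 * snd b)))" for u v w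
    apply (rule teq2_use[OF Pmult vsP vsH, of "\<lambda>y h. \<Sum>b\<leftarrow>\<delta>P w. F y (fst b) (h * snd b)" u v])
    subgoal by (simp add: mult2_def mult.assoc)
    by ((auto intro!: linK)?; simp add: lin_def Fe kalgH distrib_left distrib_right)+
  have sw: "(\<Sum>a\<leftarrow>\<omega> h. \<Sum>x1\<leftarrow>\<delta>P u. X a x1) = (\<Sum>x1\<leftarrow>\<delta>P u. \<Sum>a\<leftarrow>\<omega> h. (X a x1 :: 'k))" for h u X
    by (rule sum_list_swap)
  have oe: "(\<Sum>a\<leftarrow>\<omega> h. \<Sum>x2\<leftarrow>\<delta>P (fst a). \<Sum>b\<leftarrow>\<delta>P (snd a). F (c * fst x2) (fst b) (m * (snd x2 * snd b))) =
     (\<Sum>d\<leftarrow>Delta3 \<Delta> h. \<Sum>a\<leftarrow>\<omega> (fst (snd d)). F (c * fst a) (snd a) (m * (S (fst d) * snd (snd d))))" for h c m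
    apply (rule teq3_use[OF omega_equiv vsP vsP vsH, of "\<lambda>x y k. F (c * x) y (m * k)" h])
    subgoal by (simp add: coact2_def)
    by (simp_all add: lin_def Fe kalgH kalgP distrib_left distrib_right)
  have pi: "(\<Sum>q\<leftarrow>\<delta>P p. \<Sum>a\<leftarrow>\<omega> (snd q). G (fst q * fst a) (snd a)) =
      (\<Sum>q\<leftarrow>\<delta>P p. \<Sum>x1\<leftarrow>\<delta>P (fst q). \<Sum>a\<leftarrow>\<omega> (snd x1). F (fst x1 * fst a) (snd a) (snd q))"
  proof -
    have "(\<Sum>q\<leftarrow>\<delta>P p. \<Sum>a\<leftarrow>\<omega> (snd q). G (fst q * fst a) (snd a)) =
      (\<Sum>q\<leftarrow>\<delta>P p. \<Sum>x1\<leftarrow>\<delta>P (fst q). \<Sum>d\<leftarrow>Delta3 \<Delta> (snd q). \<Sum>a\<leftarrow>\<omega> (fst (snd d)).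
          F (fst x1 * fst a) (snd a) (snd x1 * (S (fst d) * snd (snd d))))"
      unfolding G_def pm sw oe ..
    also have "\<dots> = (\<Sum>q\<leftarrow>\<delta>P p. \<Sum>r\<leftarrow>\<Delta> (snd q). \<Sum>d\<leftarrow>Delta3 \<Delta> (snd r). \<Sum>a\<leftarrow>\<omega> (fst (snd d)).
          F (fst q * fst a) (snd a) (fst r * (S (fst d) * snd (snd d))))"
      apply (rule teq3_use[OF coassP vsP vsH vsH, of "\<lambda>x1 k1 k. \<Sum>d\<leftarrow>Delta3 \<Delta> k. \<Sum>a\<leftarrow>\<omega> (fst (snd d)).
          F (x1 * fst a) (snd a) (k1 * (S (fst d) * snd (snd d)))" p])
      subgoal by simp
      by ((auto intro!: linK simp: Delta3_def)?; simp add: lin_def Fe kalgH kalgP S_add S_scale distrib_left distrib_right)+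
    also have "\<dots> = (\<Sum>q\<leftarrow>\<delta>P p. \<Sum>r\<leftarrow>\<Delta> (snd q). \<Sum>a\<leftarrow>\<omega> (fst r). F (fst q * fst a) (snd a) (snd r))"
    proof -
      have "(\<Sum>r\<leftarrow>\<Delta> y. \<Sum>d\<leftarrow>Delta3 \<Delta> (snd r). \<Sum>a\<leftarrow>\<omega> (fst (snd d)). F (c * fst a) (snd a) (fst r * (S (fst d) * snd (snd d))))
          = (\<Sum>r\<leftarrow>\<Delta> y. \<Sum>a\<leftarrow>\<omega> (fst r). F (c * fst a) (snd a) (snd r))" for y c
      proof -
        define T where "T m y0 z0 = (\<Sum>a\<leftarrow>\<omega> y0. F (c * fst a) (snd a) (m * z0))" for m y0 z0
        have T1: "lin sH (\<lambda>x. T x y z)" "lin sH (\<lambda>y. T x y z)" "lin sH (\<lambda>z. T x y z)" for x y z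
          unfolding T_def by ((auto intro!: linK)?; simp add: lin_def Fe kalgH kalgP distrib_left distrib_right)+
        show ?thesis using HR[of T y, OF T1] by (simp add: T_def Delta3_def mult.assoc)
      qed
      then show ?thesis by simp
    qed
    also have "\<dots> = (\<Sum>q\<leftarrow>\<delta>P p. \<Sum>x1\<leftarrow>\<delta>P (fst q). \<Sum>a\<leftarrow>\<omega> (snd x1). F (fst x1 * fst a) (snd a) (snd q))"
      apply (rule teq3_use[OF teq3_sym[OF coassP] vsP vsH vsH, of "\<lambda>x1 w z0. \<Sum>a\<leftarrow>\<omega> w. F (x1 * fst a) (snd a) z0" p])
      subgoal by simp
      by ((auto intro!: linK)?; simp add: lin_def Fe kalgH kalgP distrib_left distrib_right)+
    finally show ?thesis .
  qed
  have rhs: "(\<Sum>x\<leftarrow>[(y1, y2, g). (p', g) \<leftarrow> \<delta>P p, (y1, y2) \<leftarrow> Yp p']. F (fst x) (fst (snd x)) (snd (snd x))) =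
     (\<Sum>q\<leftarrow>\<delta>P p. F 1 (fst q) (snd q) + F (- fst q) 1 (snd q) -
        (\<Sum>x1\<leftarrow>\<delta>P (fst q). \<Sum>a\<leftarrow>\<omega> (snd x1). F (fst x1 * fst a) (snd a) (snd q)))"
  proof -
    have "(\<Sum>a\<leftarrow>Yp y. F (fst a) (snd a) g) = F 1 y g + F (- y) 1 g - (\<Sum>x1\<leftarrow>\<delta>P y. \<Sum>a\<leftarrow>\<omega> (snd x1). F (fst x1 * fst a) (snd a) g)" for y g
      by (rule Y_sum) (simp_all add: F1 F2)
    then show ?thesis by simp
  qed
  show "(\<Sum>x\<leftarrow>coact2 \<delta>P (Yp p). F (fst x) (fst (snd x)) (snd (snd x))) =
     (\<Sum>x\<leftarrow>[(y1, y2, g). (p', g) \<leftarrow> \<delta>P p, (y1, y2) \<leftarrow> Yp p']. F (fst x) (fst (snd x)) (snd (snd x)))"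
    unfolding l1 rhs Y_sum[OF Gl] g1 g2 pi lin_neg_eq[OF vsP lP]
    by (simp add: sum_list_addf sum_list_subtractf Fe sum_list_negf)
qed

lemma sum_list_map_cong': "(\<And>x. x \<in> set l \<Longrightarrow> f x = g x) \<Longrightarrow> sum_list (map f l) = sum_list (map g l)"
  by (metis map_cong)

lemma OM_P_M:
  assumes "t \<in> Omega1M_P sP M"
  shows "\<exists>W. teq2 sP sP t W \<and> (\<forall>x\<in>set W. fst x \<in> M)"
proof -
  obtain xs where xs: "\<forall>(\<xi>, q)\<in>set xs. \<xi> \<in> Omega1M sP M" "teq2 sP sP t (concat (map (\<lambda>(\<xi>, q). rmul2 \<xi> q) xs))"
    using assms unfolding Omega1M_P_def by blast
  define U where "U \<xi> = (SOME u. teq2 sP sP \<xi> u \<and> (\<forall>(a, b)\<in>set u. a \<in> M \<and> b \<in> M))" for \<xi>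
  have U: "teq2 sP sP \<xi> (U \<xi>) \<and> (\<forall>(a, b)\<in>set (U \<xi>). a \<in> M \<and> b \<in> M)" if "\<xi> \<in> Omega1M sP M" for \<xi>
    unfolding U_def by (rule someI_ex) (use that in \<open>auto simp: Omega1M_def\<close>)
  define W where "W = concat (map (\<lambda>(\<xi>, q). rmul2 (U \<xi>) q) xs)"
  have "teq2 sP sP (concat (map (\<lambda>(\<xi>, q). rmul2 \<xi> q) xs)) W"
  proof (rule teq2I[OF vsP vsP])
    fix f assume f1: "\<And>y. lin sP (\<lambda>x. f x y)" and f2: "\<And>x. lin sP (\<lambda>y. f x y)"
    note fe = lin_eqs[OF f1 vsP] lin_eqs[OF f2 vsP]
    have el: "(\<Sum>a\<leftarrow>fst x. f (fst a) (snd a * snd x)) = (\<Sum>a\<leftarrow>U (fst x). f (fst a) (snd a * snd x))" if "x \<in> set xs" for x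
      apply (rule teq2_use[of _ _ "fst x" "U (fst x)", OF _ vsP vsP, of "\<lambda>a b. f a (b * snd x)"])
      using U that xs(1) apply fastforce
      by (simp_all add: lin_def fe kalgP distrib_right)
    show "(\<Sum>p\<leftarrow>concat (map (\<lambda>(\<xi>, q). rmul2 \<xi> q) xs). f (fst p) (snd p)) = (\<Sum>p\<leftarrow>W. f (fst p) (snd p))"
      unfolding W_def rmul2_def apply simp apply (rule sum_list_map_cong') using el by simp
  qed
  moreover have "\<forall>x\<in>set W. fst x \<in> M"
    unfolding W_def rmul2_def using U xs(1) by fastforce
  ultimately show ?thesis using xs(2) teq2_trans by blast
qed

lemma M_sec:
  assumes W: "teq2 sP sP t W" "\<forall>x\<in>set W. fst x \<in> M"
  shows "teq3 sP sP sH [(a, b', g). (a, b) \<leftarrow> t, (b', g) \<leftarrow> \<delta>P b] (coact2 \<delta>P t)"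
proof (rule teq3I[OF vsP vsP vsH])
  fix F :: "'p \<Rightarrow> 'p \<Rightarrow> 'h \<Rightarrow> 'k"
  assume F1: "\<And>y z. lin sP (\<lambda>x. F x y z)" and F2: "\<And>x z. lin sP (\<lambda>y. F x y z)" and F3: "\<And>x y. lin sH (\<lambda>z. F x y z)"
  note Fe = lin_eqs[OF F1 vsP] lin_eqs[OF F2 vsP] lin_eqs[OF F3 vsH]
  have e1: "(\<Sum>x\<leftarrow>t. \<Sum>b\<leftarrow>\<delta>P (snd x). F (fst x) (fst b) (snd b)) = (\<Sum>x\<leftarrow>W. \<Sum>b\<leftarrow>\<delta>P (snd x). F (fst x) (fst b) (snd b))"
    apply (rule teq2_use[OF W(1) vsP vsP, of "\<lambda>a b. \<Sum>b\<leftarrow>\<delta>P b. F a (fst b) (snd b)"])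
    subgoal by simp
    by ((auto intro!: linK)?; simp add: lin_def Fe)+
  have e2: "(\<Sum>x\<leftarrow>t. \<Sum>a\<leftarrow>\<delta>P (fst x). \<Sum>b\<leftarrow>\<delta>P (snd x). F (fst a) (fst b) (snd a * snd b)) =
            (\<Sum>x\<leftarrow>W. \<Sum>a\<leftarrow>\<delta>P (fst x). \<Sum>b\<leftarrow>\<delta>P (snd x). F (fst a) (fst b) (snd a * snd b))"
    apply (rule teq2_use[OF W(1) vsP vsP, of "\<lambda>a b. \<Sum>a\<leftarrow>\<delta>P a. \<Sum>b\<leftarrow>\<delta>P b. F (fst a) (fst b) (snd a * snd b)"])
    subgoal by simp
    by ((auto intro!: linK)?; simp add: lin_def Fe kalgH distrib_left distrib_right)+
  have e3: "(\<Sum>a\<leftarrow>\<delta>P m. \<Sum>b\<leftarrow>\<delta>P y. F (fst a) (fst b) (snd a * snd b)) = (\<Sum>b\<leftarrow>\<delta>P y. F m (fst b) (snd b))" if "m \<in> M" for m y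
  proof -
    have "teq2 sP sH (\<delta>P m) [(m, 1)]" using that by (simp add: coinv_def)
    then show ?thesis
      apply (rule teq2_use[OF _ vsP vsH, of _ _ "\<lambda>x h. \<Sum>b\<leftarrow>\<delta>P y. F x (fst b) (h * snd b)"])
      subgoal by simp
      by ((auto intro!: linK)?; simp add: lin_def Fe kalgH distrib_left distrib_right)+
  qed
  have "(\<Sum>x\<leftarrow>W. \<Sum>a\<leftarrow>\<delta>P (fst x). \<Sum>b\<leftarrow>\<delta>P (snd x). F (fst a) (fst b) (snd a * snd b)) =
        (\<Sum>x\<leftarrow>W. \<Sum>b\<leftarrow>\<delta>P (snd x). F (fst x) (fst b) (snd b))"
    by (rule sum_list_map_cong') (use W(2) e3 in simp)
  then show "(\<Sum>x\<leftarrow>[(a, b', g). (a, b) \<leftarrow> t, (b', g) \<leftarrow> \<delta>P b]. F (fst x) (fst (snd x)) (snd (snd x))) =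
        (\<Sum>x\<leftarrow>coact2 \<delta>P t. F (fst x) (fst (snd x)) (snd (snd x)))"
    using e1 e2 by (simp add: coact2_def)
qed

lemma Y_M: "\<exists>W. teq2 sP sP (Yp p) W \<and> (\<forall>x\<in>set W. fst x \<in> M)"
  using OM_P_M LS unfolding left_strong_def Yp_def by blast

lemma Y4: "teq3 sP sP sH [(y1, y2', g). (y1, y2) \<leftarrow> Yp p, (y2', g) \<leftarrow> \<delta>P y2] [(y1, y2, g). (p', g) \<leftarrow> \<delta>P p, (y1, y2) \<leftarrow> Yp p']"
  using Y_M[of p] M_sec Y_eqv teq3_trans by blast

end

context setting begin

definition ell :: "'h \<Rightarrow> ('p \<times> 'p) list" where
  "ell h = \<omega> h @ [(sP (\<epsilon> h) 1, 1)]"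

lemma ell_sum: "(\<Sum>x\<leftarrow>ell h. g (fst x) (snd x)) = (\<Sum>x\<leftarrow>\<omega> h. g (fst x) (snd x)) + g (sP (\<epsilon> h) 1) 1"
  by (simp add: ell_def)

lemma ell_sum': "(\<Sum>x\<leftarrow>ell h. G x) = (\<Sum>x\<leftarrow>\<omega> h. G x) + G (sP (\<epsilon> h) 1, 1)"
  by (simp add: ell_def)

lemma ell_col: "teq3 sP sP sH [(a, b', g). (a, b) \<leftarrow> ell h, (b', g) \<leftarrow> \<delta>P b] [(a, b, c). (x, c) \<leftarrow> \<Delta> h, (a, b) \<leftarrow> ell x]"
proof -
  obtain t where t: "teq2 sP sH (can_map \<delta>P t) [(1, h)]" using can_surj by blast
  have canE: "(\<Sum>x\<leftarrow>t. \<Sum>q\<leftarrow>\<delta>P (snd x). \<Phi> (fst x * fst q) (snd q)) = \<Phi> 1 h"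
    if "\<And>y. lin sP (\<lambda>x. \<Phi> x y)" "\<And>x. lin sH (\<lambda>y. \<Phi> x y)" for \<Phi>
    using teq2D[OF t vsP vsH, of \<Phi>, OF that] by (simp add: can_map_def)
  have dec: "(\<Sum>x\<leftarrow>ell h. \<Psi> (fst x) (snd x)) = (\<Sum>x\<leftarrow>t. \<Psi> (fst x) (snd x)) - (\<Sum>x\<leftarrow>t. \<Sum>y\<leftarrow>Yp (snd x). \<Psi> (fst x * fst y) (snd y))"
    if P1: "\<And>y. lin sP (\<lambda>x. \<Psi> x y)" and P2: "\<And>x. lin sP (\<lambda>y. \<Psi> x y)" for \<Psi>
  proof -
    note pe = lin_eqs[OF P1 vsP] lin_eqs[OF P2 vsP]
    have ys: "(\<Sum>y\<leftarrow>Yp b. \<Psi> (a * fst y) (snd y)) = \<Psi> a b - \<Psi> (a * b) 1 - (\<Sum>q\<leftarrow>\<delta>P b. \<Sum>w\<leftarrow>\<omega> (snd q). \<Psi> (a * (fst q * fst w)) (snd w))" for a b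
    proof -
      have "(\<Sum>y\<leftarrow>Yp b. \<Psi> (a * fst y) (snd y)) = \<Psi> (a * 1) b + \<Psi> (a * - b) 1 - (\<Sum>q\<leftarrow>\<delta>P b. \<Sum>w\<leftarrow>\<omega> (snd q). \<Psi> (a * (fst q * fst w)) (snd w))"
        by (rule Y_sum[of "\<lambda>x y. \<Psi> (a * x) y" b]) (simp_all add: lin_def pe kalgP distrib_left)
      then show ?thesis by (simp add: pe)
    qed
    have c1: "(\<Sum>x\<leftarrow>t. \<Psi> (fst x * snd x) 1) = \<Psi> (sP (\<epsilon> h) 1) 1"
    proof -
      have "\<Psi> (a * b) 1 = (\<Sum>q\<leftarrow>\<delta>P b. \<epsilon> (snd q) * \<Psi> (a * fst q) 1)" for a b
      proof -
        have "\<Psi> (a * b) 1 = \<Psi> (a * (\<Sum>q\<leftarrow>\<delta>P b. sP (\<epsilon> (snd q)) (fst q))) 1" by (simp add: counitP')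
        then show ?thesis by (simp add: mult_sum_list_left lin_sum_list_eq[OF vsP P1] pe kalgP)
      qed
      then have "(\<Sum>x\<leftarrow>t. \<Psi> (fst x * snd x) 1) = (\<Sum>x\<leftarrow>t. \<Sum>q\<leftarrow>\<delta>P (snd x). \<epsilon> (snd q) * \<Psi> (fst x * fst q) 1)"
        by (intro sum_list_map_cong')
      also have "\<dots> = \<epsilon> h * \<Psi> 1 1"
        by (rule canE[of "\<lambda>x g. \<epsilon> g * \<Psi> x 1"]) (simp_all add: lin_def pe eps_eqs distrib_right distrib_left)
      finally show ?thesis by (simp add: pe)
    qed
    have c2: "(\<Sum>x\<leftarrow>t. \<Sum>q\<leftarrow>\<delta>P (snd x). \<Sum>w\<leftarrow>\<omega> (snd q). \<Psi> (fst x * (fst q * fst w)) (snd w)) = (\<Sum>w\<leftarrow>\<omega> h. \<Psi> (fst w) (snd w))"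
    proof -
      have "(\<Sum>x\<leftarrow>t. \<Sum>q\<leftarrow>\<delta>P (snd x). \<Sum>w\<leftarrow>\<omega> (snd q). \<Psi> (fst x * fst q * fst w) (snd w)) = (\<Sum>w\<leftarrow>\<omega> h. \<Psi> (1 * fst w) (snd w))"
        apply (rule canE[of "\<lambda>x k. \<Sum>w\<leftarrow>\<omega> k. \<Psi> (x * fst w) (snd w)"])
        subgoal by ((auto intro!: linK)?; simp add: lin_def pe kalgP distrib_left distrib_right)
        subgoal by ((auto intro!: linK)?; simp add: lin_def pe kalgP distrib_left distrib_right)
        done
      then show ?thesis by (simp add: mult.assoc)
    qed
    show ?thesis
      unfolding ell_sum ys by (simp add: sum_list_subtractf c1 c2)
  qed
  show ?thesis
  proof (rule teq3I[OF vsP vsP vsH])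
    fix F :: "'p \<Rightarrow> 'p \<Rightarrow> 'h \<Rightarrow> 'k"
    assume F1: "\<And>y z. lin sP (\<lambda>x. F x y z)" and F2: "\<And>x z. lin sP (\<lambda>y. F x y z)" and F3: "\<And>x y. lin sH (\<lambda>z. F x y z)"
    note Fe = lin_eqs[OF F1 vsP] lin_eqs[OF F2 vsP] lin_eqs[OF F3 vsH]
    define SF where "SF a b = (\<Sum>q\<leftarrow>\<delta>P b. F a (fst q) (snd q))" for a b
    have SFl: "lin sP (\<lambda>x. SF x y)" "lin sP (\<lambda>y. SF x y)" for x y
      unfolding SF_def
      subgoal by ((auto intro!: linK)?; simp add: lin_def Fe)
      subgoal by ((auto intro!: linK)?; simp add: lin_def Fe)
      done
    have y4: "(\<Sum>y\<leftarrow>Yp b. SF (a * fst y) (snd y)) = (\<Sum>q\<leftarrow>\<delta>P b. \<Sum>y\<leftarrow>Yp (fst q). F (a * fst y) (snd y) (snd q))" for a b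
      unfolding SF_def
      apply (rule teq3_use[OF Y4 vsP vsP vsH, of "\<lambda>y1 y2 g. F (a * y1) y2 g" b])
      subgoal by simp
      by (simp_all add: lin_def Fe kalgP distrib_left)
    have pt: "F a b' g - (\<Sum>y\<leftarrow>Yp b'. F (a * fst y) (snd y) g) =
       (\<Sum>q\<leftarrow>\<delta>P b'. (\<Sum>w\<leftarrow>\<omega> (snd q). F (a * (fst q * fst w)) (snd w) g) + F (a * sP (\<epsilon> (snd q)) (fst q)) 1 g)" for a b' g
    proof -
      have "F (a * b') 1 g = F (a * (\<Sum>q\<leftarrow>\<delta>P b'. sP (\<epsilon> (snd q)) (fst q))) 1 g" by (simp add: counitP')
      then have e: "F (a * b') 1 g = (\<Sum>q\<leftarrow>\<delta>P b'. F (a * sP (\<epsilon> (snd q)) (fst q)) 1 g)"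
        by (simp add: mult_sum_list_left lin_sum_list_eq[OF vsP F1])
      have "(\<Sum>y\<leftarrow>Yp b'. F (a * fst y) (snd y) g) = F (a * 1) b' g + F (a * - b') 1 g - (\<Sum>q\<leftarrow>\<delta>P b'. \<Sum>w\<leftarrow>\<omega> (snd q). F (a * (fst q * fst w)) (snd w) g)"
        by (rule Y_sum[of "\<lambda>x y. F (a * x) y g" b']) (simp_all add: lin_def Fe kalgP distrib_left)
      then show ?thesis using e by (simp add: Fe sum_list_addf)
    qed
    have "(\<Sum>x\<leftarrow>[(a, b', g). (a, b) \<leftarrow> ell h, (b', g) \<leftarrow> \<delta>P b]. F (fst x) (fst (snd x)) (snd (snd x))) = (\<Sum>x\<leftarrow>ell h. SF (fst x) (snd x))"
      by (simp add: SF_def)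
    also have "\<dots> = (\<Sum>x\<leftarrow>t. \<Sum>q\<leftarrow>\<delta>P (snd x). F (fst x) (fst q) (snd q) - (\<Sum>y\<leftarrow>Yp (fst q). F (fst x * fst y) (snd y) (snd q)))"
      unfolding dec[OF SFl] y4 by (simp add: SF_def sum_list_subtractf)
    also have "\<dots> = (\<Sum>x\<leftarrow>t. \<Sum>q\<leftarrow>\<delta>P (snd x). \<Sum>r\<leftarrow>\<delta>P (fst q). \<Sum>w\<leftarrow>ell (snd r). F (fst x * (fst r * fst w)) (snd w) (snd q))"
      unfolding pt by (simp add: ell_sum' mult.assoc kalgP)
    also have "\<dots> = (\<Sum>x\<leftarrow>t. \<Sum>q\<leftarrow>\<delta>P (snd x). \<Sum>r\<leftarrow>\<Delta> (snd q). \<Sum>w\<leftarrow>ell (fst r). F (fst x * (fst q * fst w)) (snd w) (snd r))"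
    proof -
      have "(\<Sum>q\<leftarrow>\<delta>P b. \<Sum>r\<leftarrow>\<delta>P (fst q). \<Sum>w\<leftarrow>ell (snd r). F (a * (fst r * fst w)) (snd w) (snd q)) =
            (\<Sum>q\<leftarrow>\<delta>P b. \<Sum>r\<leftarrow>\<Delta> (snd q). \<Sum>w\<leftarrow>ell (fst r). F (a * (fst q * fst w)) (snd w) (snd r))" for a b
        apply (rule teq3_use[OF coassP vsP vsH vsH, of "\<lambda>x k g. \<Sum>w\<leftarrow>ell k. F (a * (x * fst w)) (snd w) g" b])
        subgoal by simp
        subgoal by ((auto intro!: linK simp: ell_sum')?; simp add: lin_def Fe kalgP distrib_left distrib_right eps_eqs vs_simps[OF vsP])
        subgoal by ((auto intro!: linK simp: ell_sum')?; simp add: lin_def Fe kalgP distrib_left distrib_right eps_eqs vs_simps[OF vsP])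
        subgoal by ((auto intro!: linK simp: ell_sum')?; simp add: lin_def Fe kalgP distrib_left distrib_right eps_eqs vs_simps[OF vsP])
        done
      then show ?thesis by simp
    qed
    also have "\<dots> = (\<Sum>r\<leftarrow>\<Delta> h. \<Sum>w\<leftarrow>ell (fst r). F (1 * fst w) (snd w) (snd r))"
    proof -
      have "(\<Sum>x\<leftarrow>t. \<Sum>q\<leftarrow>\<delta>P (snd x). (\<lambda>x y. \<Sum>r\<leftarrow>\<Delta> y. \<Sum>w\<leftarrow>ell (fst r). F (x * fst w) (snd w) (snd r)) (fst x * fst q) (snd q))
         = (\<lambda>x y. \<Sum>r\<leftarrow>\<Delta> y. \<Sum>w\<leftarrow>ell (fst r). F (x * fst w) (snd w) (snd r)) 1 h"
        apply (rule canE)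
        apply (simp only: ell_sum')
        apply ((auto intro!: linK)?; simp add: lin_def Fe kalgP distrib_left distrib_right eps_eqs vs_simps[OF vsP])
        apply (simp only: ell_sum')
        apply ((auto intro!: linK)?; simp add: lin_def Fe kalgP distrib_left distrib_right eps_eqs vs_simps[OF vsP])
        done
      then show ?thesis by (simp add: mult.assoc)
    qed
    finally show "(\<Sum>x\<leftarrow>[(a, b', g). (a, b) \<leftarrow> ell h, (b', g) \<leftarrow> \<delta>P b]. F (fst x) (fst (snd x)) (snd (snd x))) =
      (\<Sum>x\<leftarrow>[(a, b, c). (x, c) \<leftarrow> \<Delta> h, (a, b) \<leftarrow> ell x]. F (fst x) (fst (snd x)) (snd (snd x)))"
      by simp
  qed
qed

definition Zl :: "'v \<Rightarrow> ('p \<times> 'p \<times> 'v) list" where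
  "Zl v = concat (map (\<lambda>(w, g). map (\<lambda>(a, b). (a, b, w)) (ell (Si g))) (\<delta>V v))"

lemma lin_ellSi: "(\<And>w. lin sP (\<lambda>u. G (u, w))) \<Longrightarrow> (\<And>u. lin sP (\<lambda>w. G (u, w))) \<Longrightarrow>
   (\<And>u. lin sP (\<lambda>x. G (x, u))) \<Longrightarrow> lin sH (\<lambda>h. sum_list (map G (ell (Si h))))"
  unfolding ell_sum'
  apply (rule lin_add)
   apply (rule lin_tlinOSi; simp)
  apply (rule lin_comp[of sP "\<lambda>x. G (x, 1)"])
  by (auto simp: eps_eqs eps_Si Si_add Si_scale vs_simps[OF vsP])

lemma Z1: "teq2 sP sV [(a * b, w). (a, b, w) \<leftarrow> Zl v] [(1, v)]"
proof (rule teq2I[OF vsP vsV])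
  fix \<Phi> :: "'p \<Rightarrow> 'v \<Rightarrow> 'k"
  assume P1: "\<And>y. lin sP (\<lambda>x. \<Phi> x y)" and P2: "\<And>x. lin sV (\<lambda>y. \<Phi> x y)"
  note pe = lin_eqs[OF P1 vsP] lin_eqs[OF P2 vsV]
  have z: "(\<Sum>a\<leftarrow>\<omega> h. \<Phi> (fst a * snd a) w) = 0" for h w
    using lin_sum_list_eq[OF vsP P1, of "\<lambda>a. fst a * snd a" "\<omega> h" w, symmetric] omega_Om1'[of h] by (simp add: pe)
  have "(\<Sum>p\<leftarrow>[(a * b, w). (a, b, w) \<leftarrow> Zl v]. \<Phi> (fst p) (snd p)) = (\<Sum>q\<leftarrow>\<delta>V v. \<epsilon> (snd q) * \<Phi> 1 (fst q))"
    by (simp add: Zl_def ell_sum' z eps_Si pe)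
  also have "\<dots> = \<Phi> 1 v" by (rule counitV_lin[OF P2])
  finally show "(\<Sum>p\<leftarrow>[(a * b, w). (a, b, w) \<leftarrow> Zl v]. \<Phi> (fst p) (snd p)) = (\<Sum>p\<leftarrow>[(1, v)]. \<Phi> (fst p) (snd p))" by simp
qed

end

context setting begin

lemma Z2:
  "teq4 sP sP sV sH [(a, b', w', g * g'). (a, b, w) \<leftarrow> Zl v, (b', g) \<leftarrow> \<delta>P b, (w', g') \<leftarrow> \<delta>V w] [(a, b, w, 1). (a, b, w) \<leftarrow> Zl v]"
proof (rule teq4I[OF vsP vsP vsV vsH])
  fix F :: "'p \<Rightarrow> 'p \<Rightarrow> 'v \<Rightarrow> 'h \<Rightarrow> 'k"
  assume F1: "\<And>y z w. lin sP (\<lambda>x. F x y z w)" and F2: "\<And>x z w. lin sP (\<lambda>y. F x y z w)"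
    and F3: "\<And>x y w. lin sV (\<lambda>z. F x y z w)" and F4: "\<And>x y z. lin sH (\<lambda>w. F x y z w)"
  note Fe = lin_eqs[OF F1 vsP] lin_eqs[OF F2 vsP] lin_eqs[OF F3 vsV] lin_eqs[OF F4 vsH]
  define KK where "KK w' g2 m = (\<Sum>x\<leftarrow>ell (Si g2). F (fst x) (snd x) w' m)" for w' g2 m
  have KKl: "lin sH (\<lambda>m. KK w' g2 m)" "lin sH (\<lambda>g2. KK w' g2 m)" "lin sV (\<lambda>w'. KK w' g2 m)" for w' g2 m
    unfolding KK_def
      apply ((auto intro!: linK)?; simp add: lin_def Fe)
     apply (rule lin_ellSi; simp add: F1 F2)
    by ((auto intro!: linK)?; simp add: lin_def Fe)
  have s1: "(\<Sum>x\<leftarrow>ell (Si g). \<Sum>q\<leftarrow>\<delta>P (snd x). \<Sum>r\<leftarrow>\<delta>V w. F (fst x) (fst q) (fst r) (snd q * snd r))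
     = (\<Sum>q\<leftarrow>\<Delta> g. \<Sum>r\<leftarrow>\<delta>V w. KK (fst r) (snd q) (Si (fst q) * snd r))" for g w
  proof -
    have "(\<Sum>x\<leftarrow>ell (Si g). \<Sum>q\<leftarrow>\<delta>P (snd x). \<Sum>r\<leftarrow>\<delta>V w. F (fst x) (fst q) (fst r) (snd q * snd r))
       = (\<Sum>c\<leftarrow>\<Delta> (Si g). \<Sum>x\<leftarrow>ell (fst c). \<Sum>r\<leftarrow>\<delta>V w. F (fst x) (snd x) (fst r) (snd c * snd r))"
      apply (rule teq3_use[OF ell_col vsP vsP vsH, of "\<lambda>a b h. \<Sum>r\<leftarrow>\<delta>V w. F a b (fst r) (h * snd r)" "Si g"])
      subgoal by simp
      subgoal by ((auto intro!: linK)?; simp add: lin_def Fe kalgH distrib_right)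
      subgoal by ((auto intro!: linK)?; simp add: lin_def Fe kalgH distrib_right)
      subgoal by ((auto intro!: linK)?; simp add: lin_def Fe kalgH distrib_right)
      done
    also have "\<dots> = (\<Sum>q\<leftarrow>\<Delta> g. \<Sum>x\<leftarrow>ell (Si (snd q)). \<Sum>r\<leftarrow>\<delta>V w. F (fst x) (snd x) (fst r) (Si (fst q) * snd r))"
      apply (rule teq2_use[OF Si_anticomult vsH vsH, of "\<lambda>y c. \<Sum>x\<leftarrow>ell y. \<Sum>r\<leftarrow>\<delta>V w. F (fst x) (snd x) (fst r) (c * snd r)" g])
      subgoal by simp
      apply (simp only: ell_sum')
      apply ((auto intro!: linK)?; simp add: lin_def Fe kalgH kalgP distrib_right eps_eqs vs_simps[OF vsP])
      by ((auto intro!: linK)?; simp add: lin_def Fe kalgH distrib_right)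
    also have "\<dots> = (\<Sum>q\<leftarrow>\<Delta> g. \<Sum>r\<leftarrow>\<delta>V w. KK (fst r) (snd q) (Si (fst q) * snd r))"
      unfolding KK_def by (simp only: sum_list_swap[where ys="\<delta>V w"])
    finally show ?thesis .
  qed
  have "(\<Sum>p\<leftarrow>[(a, b', w', g * g'). (a, b, w) \<leftarrow> Zl v, (b', g) \<leftarrow> \<delta>P b, (w', g') \<leftarrow> \<delta>V w]. F (fst p) (fst (snd p)) (fst (snd (snd p))) (snd (snd (snd p))))
      = (\<Sum>p\<leftarrow>\<delta>V v. \<Sum>q\<leftarrow>\<Delta> (snd p). \<Sum>r\<leftarrow>\<delta>V (fst p). KK (fst r) (snd q) (Si (fst q) * snd r))"
    using s1 by (simp add: Zl_def)
  also have "\<dots> = (\<Sum>p\<leftarrow>\<delta>V v. \<Sum>r\<leftarrow>\<delta>V (fst p). \<Sum>q\<leftarrow>\<Delta> (snd p). KK (fst r) (snd q) (Si (fst q) * snd r))"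
    by (simp only: sum_list_swap[where xs="\<Delta> _"])
  also have "\<dots> = (\<Sum>p\<leftarrow>\<delta>V v. \<Sum>q'\<leftarrow>\<Delta> (snd p). \<Sum>q\<leftarrow>\<Delta> (snd q'). KK (fst p) (snd q) (Si (fst q) * fst q'))"
    apply (rule teq3_use[OF coassV vsV vsH vsH, of "\<lambda>w' g' g. \<Sum>q\<leftarrow>\<Delta> g. KK w' (snd q) (Si (fst q) * g')" v])
    subgoal by simp
    subgoal using KKl by ((auto intro!: linK)?; simp add: lin_def lin_eqs[OF KKl(1) vsH] lin_eqs[OF KKl(2) vsH] lin_eqs[OF KKl(3) vsV]
       kalgH Si_add Si_scale distrib_left distrib_right)
    subgoal using KKl by ((auto intro!: linK)?; simp add: lin_def lin_eqs[OF KKl(1) vsH] lin_eqs[OF KKl(2) vsH] lin_eqs[OF KKl(3) vsV]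
       kalgH Si_add Si_scale distrib_left distrib_right)
    subgoal using KKl by ((auto intro!: linK)?; simp add: lin_def lin_eqs[OF KKl(1) vsH] lin_eqs[OF KKl(2) vsH] lin_eqs[OF KKl(3) vsV]
       kalgH Si_add Si_scale distrib_left distrib_right)
    done
  also have "\<dots> = (\<Sum>p\<leftarrow>\<delta>V v. KK (fst p) (snd p) 1)"
  proof -
    have "(\<Sum>q'\<leftarrow>\<Delta> y. \<Sum>q\<leftarrow>\<Delta> (snd q'). KK w' (snd q) (Si (fst q) * fst q')) =
          (\<Sum>x\<leftarrow>\<Delta> y. \<Sum>s\<leftarrow>\<Delta> (fst x). KK w' (snd x) (Si (snd s) * fst s))" for w' y
      apply (rule teq3_use[OF teq3_sym[OF coassD] vsH vsH vsH, of "\<lambda>g' g1 y2. KK w' y2 (Si g1 * g')" y])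
      subgoal by (simp add: Delta3_def)
      by (simp_all add: lin_def lin_eqs[OF KKl(1) vsH] lin_eqs[OF KKl(2) vsH] kalgH Si_add Si_scale distrib_left distrib_right)
    also have "\<dots> w' y = (\<Sum>x\<leftarrow>\<Delta> y. \<epsilon> (fst x) * KK w' (snd x) 1)" for w' y
    proof -
      have "(\<Sum>s\<leftarrow>\<Delta> x. KK w' y2 (Si (snd s) * fst s)) = \<epsilon> x * KK w' y2 1" for x y2
        using lin_sum_list_eq[OF vsH KKl(1), of w' y2 "\<lambda>s. Si (snd s) * fst s" "\<Delta> x", symmetric]
          lin_scale_eq[OF KKl(1), of w' y2 "\<epsilon> x" 1] by (simp add: HF2)
      then show ?thesis by simp
    qed
    also have "\<dots> w' y = KK w' y 1" for w' y
      by (rule counitL_lin[OF KKl(2)])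
    finally show ?thesis by simp
  qed
  also have "\<dots> = (\<Sum>p\<leftarrow>[(a, b, w, 1). (a, b, w) \<leftarrow> Zl v]. F (fst p) (fst (snd p)) (fst (snd (snd p))) (snd (snd (snd p))))"
    by (simp add: Zl_def KK_def)
  finally show "(\<Sum>p\<leftarrow>[(a, b', w', g * g'). (a, b, w) \<leftarrow> Zl v, (b', g) \<leftarrow> \<delta>P b, (w', g') \<leftarrow> \<delta>V w]. F (fst p) (fst (snd p)) (fst (snd (snd p))) (snd (snd (snd p))))
      = (\<Sum>p\<leftarrow>[(a, b, w, 1). (a, b, w) \<leftarrow> Zl v]. F (fst p) (fst (snd p)) (fst (snd (snd p))) (snd (snd (snd p))))" .
qed

end

context setting begin

lemma one_M: "1 \<in> M" using P1 by (simp add: coinv_def)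

lemma neg_M: assumes "a \<in> M" shows "- a \<in> M"
proof -
  have a: "teq2 sP sH (\<delta>P a) [(a, 1)]" using assms by (simp add: coinv_def)
  have "teq2 sP sH (\<delta>P (- a)) [(- a, 1)]"
  proof (rule teq2I[OF vsP vsH])
    fix g assume g1: "\<And>y. lin sP (\<lambda>x. g x y)" and g2: "\<And>x. lin sH (\<lambda>y. g x y)"
    have L: "lin sP (\<lambda>x. \<Sum>q\<leftarrow>\<delta>P x. g (fst q) (snd q))" using g1 g2 by (intro linK) auto
    have "(\<Sum>q\<leftarrow>\<delta>P (- a). g (fst q) (snd q)) = - (\<Sum>q\<leftarrow>\<delta>P a. g (fst q) (snd q))" by (rule lin_neg_eq[OF vsP L])
    also have "\<dots> = - g a 1" using teq2D[OF a vsP vsH, of g, OF g1 g2] by simp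
    finally show "(\<Sum>q\<leftarrow>\<delta>P (- a). g (fst q) (snd q)) = (\<Sum>q\<leftarrow>[(- a, 1)]. g (fst q) (snd q))"
      using lin_neg_eq[OF vsP g1] by simp
  qed
  then show ?thesis by (simp add: coinv_def)
qed

definition dd :: "'p \<Rightarrow> ('p \<times> 'p) list" where "dd a = [(1, a), (- a, 1)]"
definition nd :: "'p \<Rightarrow> ('p \<times> 'p) list" where "nd a = [(- a, 1), (1, a)]"

lemma dd_Om: "a \<in> M \<Longrightarrow> dd a \<in> Omega1M sP M"
  unfolding Omega1M_def in_Omega1_def dd_def using one_M neg_M by (auto intro!: exI[of _ "[(1, a), (- a, 1)]"])

lemma nd_Om: "a \<in> M \<Longrightarrow> nd a \<in> Omega1M sP M"
  unfolding Omega1M_def in_Omega1_def nd_def using one_M neg_M by (auto intro!: exI[of _ "[(- a, 1), (1, a)]"])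

lemma mult_teq: "teq2 sP sP t u \<Longrightarrow> sum_list (map (\<lambda>(a, b). a * b) t) = sum_list (map (\<lambda>(a, b). a * b) u)"
proof -
  assume tu: "teq2 sP sP t u"
  show ?thesis
  proof (rule separation[OF vsP])
    fix \<phi> assume L: "lin sP \<phi>"
    note pe = lin_eqs[OF L vsP]
    show "\<phi> (sum_list (map (\<lambda>(a, b). a * b) t)) = \<phi> (sum_list (map (\<lambda>(a, b). a * b) u))"
      using teq2D[OF tu vsP vsP, of "\<lambda>a b. \<phi> (a * b)"]
      by (simp add: lin_sum_list_eq[OF vsP L] lin_def pe kalgP distrib_left distrib_right)
  qed
qed

lemma Y_lin: "(\<And>y. lin sP (\<lambda>x. g x y)) \<Longrightarrow> (\<And>x. lin sP (\<lambda>y. g x y)) \<Longrightarrow> lin sP (\<lambda>p. \<Sum>a\<leftarrow>Yp p. g (fst a) (snd a))"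
proof -
  assume g1: "\<And>y. lin sP (\<lambda>x. g x y)" and g2: "\<And>x. lin sP (\<lambda>y. g x y)"
  note ge = lin_eqs[OF g1 vsP] lin_eqs[OF g2 vsP]
  show ?thesis unfolding Y_sum[OF g1 g2]
    by ((auto intro!: linK)?; simp add: lin_def ge kalgP distrib_left distrib_right)
qed

lemma torsion_Om2:
  assumes e: "e \<in> E"
  shows "torsion sP sH sV \<delta>P \<delta>V \<theta> \<omega> (s_theta \<theta> e) \<in> Omega2M sP M"
proof -
  define w where "w = s_theta \<theta> e"
  have wO: "w \<in> Omega1M sP M" using stheta_Om[OF e] w_def by simp
  obtain u where u: "teq2 sP sP w u" "\<forall>(a, b)\<in>set u. a \<in> M \<and> b \<in> M" using wO unfolding Omega1M_def by auto
  have w0: "sum_list (map (\<lambda>(a, b). a * b) w) = 0" using wO unfolding Omega1M_def in_Omega1_def by auto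
  have u0: "sum_list (map (\<lambda>(a, b). a * b) u) = 0" using w0 mult_teq[OF u(1)] by simp
  define t' where "t' \<equiv> SOME t. t \<in> E \<and> teq2 sP sP (s_theta \<theta> t) (s_theta \<theta> e)"
  have t'1: "t' \<in> E \<and> teq2 sP sP (s_theta \<theta> t') (s_theta \<theta> e)"
    unfolding t'_def by (rule someI[of _ e]) (simp add: e)
  then have t'E: "t' \<in> E" and sw: "teq2 sP sP (s_theta \<theta> t') w" using w_def by auto
  define W where "W p = (SOME W. teq2 sP sP (Yp p) W \<and> (\<forall>x\<in>set W. fst x \<in> M))" for p
  have W: "teq2 sP sP (Yp p) (W p) \<and> (\<forall>x\<in>set (W p). fst x \<in> M)" for p
    unfolding W_def by (rule someI_ex[OF Y_M])
  define X where "X = concat (map (\<lambda>(p, v). map (\<lambda>(y1, y2). (y1, y2, v)) (Yp p)) t')"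
  define X' where "X' = concat (map (\<lambda>(p, v). map (\<lambda>(y1, y2). (y1, y2, v)) (W p)) t')"
  have XX': "sum_list (map (\<lambda>x. G (fst x) (fst (snd x)) (snd (snd x))) X) = sum_list (map (\<lambda>x. G (fst x) (fst (snd x)) (snd (snd x))) X')"
    if G1: "\<And>y z. lin sP (\<lambda>x. G x y z)" and G2: "\<And>x z. lin sP (\<lambda>y. G x y z)" for G
    unfolding X_def X'_def apply simp
    apply (rule sum_list_map_cong')
    using teq2D[OF conjunct1[OF W] vsP vsP, of "\<lambda>a b. G a b _", OF G1 G2] by simp
  have X'M: "\<forall>x\<in>set X'. fst x \<in> M" using W unfolding X'_def by auto
  have INV: "teq4 sP sP sV sH [(y1, y2', v', h * g). (y1, y2, v) \<leftarrow> X', (y2', h) \<leftarrow> \<delta>P y2, (v', g) \<leftarrow> \<delta>V v] [(y1, y2, v, 1). (y1, y2, v) \<leftarrow> X']"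
  proof (rule teq4I[OF vsP vsP vsV vsH])
    fix F :: "'p \<Rightarrow> 'p \<Rightarrow> 'v \<Rightarrow> 'h \<Rightarrow> 'k"
    assume F1: "\<And>y z w. lin sP (\<lambda>x. F x y z w)" and F2: "\<And>x z w. lin sP (\<lambda>y. F x y z w)"
      and F3: "\<And>x y w. lin sV (\<lambda>z. F x y z w)" and F4: "\<And>x y z. lin sH (\<lambda>w. F x y z w)"
    note Fe = lin_eqs[OF F1 vsP] lin_eqs[OF F2 vsP] lin_eqs[OF F3 vsV] lin_eqs[OF F4 vsH]
    have "(\<Sum>x\<leftarrow>[(y1, y2', v', h * g). (y1, y2, v) \<leftarrow> X', (y2', h) \<leftarrow> \<delta>P y2, (v', g) \<leftarrow> \<delta>V v]. F (fst x) (fst (snd x)) (fst (snd (snd x))) (snd (snd (snd x))))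
       = (\<Sum>x\<leftarrow>X'. \<Sum>q\<leftarrow>\<delta>P (fst (snd x)). \<Sum>r\<leftarrow>\<delta>V (snd (snd x)). F (fst x) (fst q) (fst r) (snd q * snd r))"
      by simp
    also have "\<dots> = (\<Sum>x\<leftarrow>X. \<Sum>q\<leftarrow>\<delta>P (fst (snd x)). \<Sum>r\<leftarrow>\<delta>V (snd (snd x)). F (fst x) (fst q) (fst r) (snd q * snd r))"
      apply (rule XX'[symmetric])
      subgoal by ((auto intro!: linK)?; simp add: lin_def Fe kalgH distrib_right)
      subgoal by ((auto intro!: linK)?; simp add: lin_def Fe kalgH distrib_right)
      done
    also have "\<dots> = (\<Sum>x\<leftarrow>t'. \<Sum>q\<leftarrow>\<delta>P (fst x). \<Sum>r\<leftarrow>\<delta>V (snd x). \<Sum>y\<leftarrow>Yp (fst q). F (fst y) (snd y) (fst r) (snd q * snd r))"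
    proof -
      have "(\<Sum>y\<leftarrow>Yp p. \<Sum>q\<leftarrow>\<delta>P (snd y). \<Sum>r\<leftarrow>\<delta>V v. F (fst y) (fst q) (fst r) (snd q * snd r))
          = (\<Sum>q\<leftarrow>\<delta>P p. \<Sum>y\<leftarrow>Yp (fst q). \<Sum>r\<leftarrow>\<delta>V v. F (fst y) (snd y) (fst r) (snd q * snd r))" for p v
        apply (rule teq3_use[OF Y4 vsP vsP vsH, of "\<lambda>y1 y2 h. \<Sum>r\<leftarrow>\<delta>V v. F y1 y2 (fst r) (h * snd r)" p])
        subgoal by simp
        subgoal by ((auto intro!: linK)?; simp add: lin_def Fe kalgH distrib_right)
        subgoal by ((auto intro!: linK)?; simp add: lin_def Fe kalgH distrib_right)
        subgoal by ((auto intro!: linK)?; simp add: lin_def Fe kalgH distrib_right)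
        done
      moreover have "(\<Sum>y\<leftarrow>Yp a. \<Sum>r\<leftarrow>\<delta>V v. Q y r) = (\<Sum>r\<leftarrow>\<delta>V v. \<Sum>y\<leftarrow>Yp a. (Q y r :: 'k))" for a v Q
        by (rule sum_list_swap)
      ultimately show ?thesis by (simp add: X_def)
    qed
    also have "\<dots> = (\<Sum>x\<leftarrow>t'. \<Sum>y\<leftarrow>Yp (fst x). F (fst y) (snd y) (snd x) 1)"
    proof -
      have inv: "teq3 sP sV sH [(p', v', h * g). (p, v) \<leftarrow> t', (p', h) \<leftarrow> \<delta>P p, (v', g) \<leftarrow> \<delta>V v] [(p, v, 1). (p, v) \<leftarrow> t']"
        using t'E by (simp add: Esec_def)
      show ?thesis
        apply (rule teq3_use[OF inv vsP vsV vsH, of "\<lambda>p v m. \<Sum>y\<leftarrow>Yp p. F (fst y) (snd y) v m"])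
        subgoal by simp
        subgoal by (rule Y_lin) (simp_all add: F1 F2)
        subgoal by ((auto intro!: linK)?; simp add: lin_def Fe)
        subgoal by ((auto intro!: linK)?; simp add: lin_def Fe)
        done
    qed
    also have "\<dots> = (\<Sum>x\<leftarrow>X'. F (fst x) (fst (snd x)) (snd (snd x)) 1)"
      unfolding XX'[of "\<lambda>a b c. F a b c 1", OF F1 F2, symmetric] by (simp add: X_def)
    finally show "(\<Sum>x\<leftarrow>[(y1, y2', v', h * g). (y1, y2, v) \<leftarrow> X', (y2', h) \<leftarrow> \<delta>P y2, (v', g) \<leftarrow> \<delta>V v]. F (fst x) (fst (snd x)) (fst (snd (snd x))) (snd (snd (snd x))))
      = (\<Sum>x\<leftarrow>[(y1, y2, v, 1). (y1, y2, v) \<leftarrow> X']. F (fst x) (fst (snd x)) (fst (snd (snd x))) (snd (snd (snd x))))" by simp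
  qed
  obtain R where R: "\<And>\<beta>. lin sP (\<lambda>a. R \<beta> a)"
    and dec: "\<And>as. \<exists>L. (\<forall>a\<in>set as. a = sum_list (map (\<lambda>\<beta>. sP (R \<beta> a) \<beta>) L)) \<and> ((\<forall>a\<in>set as. a \<in> M) \<longrightarrow> set L \<subseteq> M)"
    using basis_decomp[OF vsP, where V=M] by blast
  obtain L where L1: "\<forall>a\<in>set (map fst X'). a = sum_list (map (\<lambda>\<beta>. sP (R \<beta> a) \<beta>) L)" and L2: "set L \<subseteq> M"
    using dec[of "map fst X'"] X'M by auto
  define Xb where "Xb \<beta> = map (\<lambda>x. (sP (R \<beta> (fst x)) (fst (snd x)), snd (snd x))) X'" for \<beta>
  have decK: "(\<Sum>x\<leftarrow>X'. K (fst x) (fst (snd x)) (snd (snd x))) = (\<Sum>\<beta>\<leftarrow>L. \<Sum>x\<leftarrow>Xb \<beta>. K \<beta> (fst x) (snd x))"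
    if K1: "\<And>y v. lin sP (\<lambda>x. K x y v)" and K2: "\<And>x v. lin sP (\<lambda>y. K x y v)" for K
  proof -
    have "K (fst x) (fst (snd x)) (snd (snd x)) = (\<Sum>\<beta>\<leftarrow>L. K \<beta> (sP (R \<beta> (fst x)) (fst (snd x))) (snd (snd x)))" if "x \<in> set X'" for x
    proof -
      have e: "fst x = sum_list (map (\<lambda>\<beta>. sP (R \<beta> (fst x)) \<beta>) L)" using L1 that by auto
      have "K (fst x) (fst (snd x)) (snd (snd x)) = K (sum_list (map (\<lambda>\<beta>. sP (R \<beta> (fst x)) \<beta>) L)) (fst (snd x)) (snd (snd x))"
        by (rule arg_cong[where f="\<lambda>z. K z (fst (snd x)) (snd (snd x))"]) (rule e)
      also have "\<dots> = (\<Sum>\<beta>\<leftarrow>L. R \<beta> (fst x) * K \<beta> (fst (snd x)) (snd (snd x)))"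
        by (simp add: lin_sum_list_eq[OF vsP K1] lin_scale_eq[OF K1])
      also have "\<dots> = (\<Sum>\<beta>\<leftarrow>L. K \<beta> (sP (R \<beta> (fst x)) (fst (snd x))) (snd (snd x)))"
        by (simp add: lin_scale_eq[OF K2])
      finally show ?thesis .
    qed
    then have "(\<Sum>x\<leftarrow>X'. K (fst x) (fst (snd x)) (snd (snd x))) = (\<Sum>x\<leftarrow>X'. \<Sum>\<beta>\<leftarrow>L. K \<beta> (sP (R \<beta> (fst x)) (fst (snd x))) (snd (snd x)))"
      by (rule sum_list_map_cong')
    also have "\<dots> = (\<Sum>\<beta>\<leftarrow>L. \<Sum>x\<leftarrow>X'. K \<beta> (sP (R \<beta> (fst x)) (fst (snd x))) (snd (snd x)))"
      by (rule sum_list_swap)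
    finally show ?thesis by (simp add: Xb_def)
  qed
  have XbE: "Xb \<beta> \<in> E" for \<beta>
    unfolding Esec_def mem_Collect_eq
  proof (rule teq3I[OF vsP vsV vsH])
    fix G :: "'p \<Rightarrow> 'v \<Rightarrow> 'h \<Rightarrow> 'k"
    assume G1: "\<And>y z. lin sP (\<lambda>x. G x y z)" and G2: "\<And>x z. lin sV (\<lambda>y. G x y z)" and G3: "\<And>x y. lin sH (\<lambda>z. G x y z)"
    note Ge = lin_eqs[OF G1 vsP] lin_eqs[OF G2 vsV] lin_eqs[OF G3 vsH]
    have LL: "lin sP (\<lambda>p. \<Sum>q\<leftarrow>\<delta>P p. \<Sum>r\<leftarrow>\<delta>V v. G (fst q) (fst r) (snd q * snd r))" for v
      by ((auto intro!: linK)?; simp add: lin_def Ge kalgH distrib_right)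
    have "(\<Sum>x\<leftarrow>[(p', v', h * g). (p, v) \<leftarrow> Xb \<beta>, (p', h) \<leftarrow> \<delta>P p, (v', g) \<leftarrow> \<delta>V v]. G (fst x) (fst (snd x)) (snd (snd x)))
       = (\<Sum>x\<leftarrow>X'. R \<beta> (fst x) * (\<Sum>q\<leftarrow>\<delta>P (fst (snd x)). \<Sum>r\<leftarrow>\<delta>V (snd (snd x)). G (fst q) (fst r) (snd q * snd r)))"
      by (simp add: Xb_def lin_scale_eq[OF LL])
    also have "\<dots> = (\<Sum>x\<leftarrow>X'. R \<beta> (fst x) * G (fst (snd x)) (snd (snd x)) 1)"
      apply (rule teq4_use[OF INV vsP vsP vsV vsH, of "\<lambda>y1 y2 v h. R \<beta> y1 * G y2 v h"])
      subgoal by (simp add: mult_sum_list_left)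
      subgoal by (simp add: lin_def lin_eqs[OF R vsP] distrib_right)
      subgoal by (simp add: lin_def Ge distrib_left)
      subgoal by (simp add: lin_def Ge distrib_left)
      subgoal by (simp add: lin_def Ge distrib_left)
      done
    also have "\<dots> = (\<Sum>x\<leftarrow>[(p, v, 1). (p, v) \<leftarrow> Xb \<beta>]. G (fst x) (fst (snd x)) (snd (snd x)))"
      by (simp add: Xb_def Ge)
    finally show "(\<Sum>x\<leftarrow>[(p', v', h * g). (p, v) \<leftarrow> Xb \<beta>, (p', h) \<leftarrow> \<delta>P p, (v', g) \<leftarrow> \<delta>V v]. G (fst x) (fst (snd x)) (snd (snd x)))
       = (\<Sum>x\<leftarrow>[(p, v, 1). (p, v) \<leftarrow> Xb \<beta>]. G (fst x) (fst (snd x)) (snd (snd x)))" .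
  qed
  define xs where "xs = map (\<lambda>(a, b). (dd a, dd b)) u @ map (\<lambda>\<beta>. (nd \<beta>, s_theta \<theta> (Xb \<beta>))) L"
  have xsO: "\<forall>(\<xi>, \<eta>)\<in>set xs. \<xi> \<in> Omega1M sP M \<and> \<eta> \<in> Omega1M sP M"
    using u(2) L2 dd_Om nd_Om stheta_Om[OF XbE] by (auto simp: xs_def)
  have teq: "teq3 sP sP sP (torsion sP sH sV \<delta>P \<delta>V \<theta> \<omega> (s_theta \<theta> e)) (concat (map (\<lambda>(\<xi>, \<eta>). mult11 \<xi> \<eta>) xs))"
  proof (rule teq3I[OF vsP vsP vsP])
    fix f assume f1: "\<And>y z. lin sP (\<lambda>x. f x y z)" and f2: "\<And>x z. lin sP (\<lambda>y. f x y z)" and f3: "\<And>x y. lin sP (\<lambda>z. f x y z)"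
    note fe = lin_eqs[OF f1 vsP] lin_eqs[OF f2 vsP] lin_eqs[OF f3 vsP]
    define Gf where "Gf y1 y2 v = (\<Sum>b\<leftarrow>\<theta> v. f y1 (y2 * fst b) (snd b))" for y1 y2 v
    define K0 where "K0 y1 y2 v = (\<Sum>b\<leftarrow>\<theta> v. f 1 (y1 * (y2 * fst b)) (snd b))" for y1 y2 v
    have Gfl: "lin sP (\<lambda>x. Gf x y v)" "lin sP (\<lambda>y. Gf x y v)" for x y v
      unfolding Gf_def
      subgoal by ((auto intro!: linK)?; simp add: lin_def fe)
      subgoal by ((auto intro!: linK)?; simp add: lin_def fe kalgP distrib_right)
      done
    have K0l: "lin sP (\<lambda>x. K0 x y v)" "lin sP (\<lambda>y. K0 x y v)" for x y v
      unfolding K0_def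
      subgoal by ((auto intro!: linK)?; simp add: lin_def fe kalgP distrib_right)
      subgoal by ((auto intro!: linK)?; simp add: lin_def fe kalgP distrib_right distrib_left)
      done
    define N where "N = (\<Sum>x\<leftarrow>t'. \<Sum>y\<leftarrow>Yp (fst x). Gf (fst y) (snd y) (snd x))"
    define Dw where "Dw = (\<Sum>a\<leftarrow>w. f 1 (fst a) (snd a) + f (- fst a) 1 (snd a) + f (fst a) (snd a) 1)"
    have sw1: "(\<Sum>a\<leftarrow>w. f 1 (fst a) (snd a)) = (\<Sum>x\<leftarrow>t'. \<Sum>b\<leftarrow>\<theta> (snd x). f 1 (fst x * fst b) (snd b))"
      using teq2D[OF sw vsP vsP, of "f 1"] f2 f3 by (simp add: s_theta_def lmul2_def)
    have nab: "(\<Sum>a\<leftarrow>w. f 1 (fst a) (snd a)) - (\<Sum>x\<leftarrow>t'. \<Sum>b\<leftarrow>\<theta> (snd x). f (fst x) (fst b) (snd b))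
       - (\<Sum>x\<leftarrow>t'. \<Sum>q\<leftarrow>\<delta>P (fst x). \<Sum>a\<leftarrow>\<omega> (snd q). \<Sum>b\<leftarrow>\<theta> (snd x). f (fst q * fst a) (snd a * fst b) (snd b)) = N"
    proof -
      have "(\<Sum>y\<leftarrow>Yp p. Gf (fst y) (snd y) v) = Gf 1 p v + Gf (- p) 1 v - (\<Sum>q\<leftarrow>\<delta>P p. \<Sum>a\<leftarrow>\<omega> (snd q). Gf (fst q * fst a) (snd a) v)" for p v
        by (rule Y_sum) (simp_all add: Gfl)
      then show ?thesis unfolding N_def sw1
        by (simp add: Gf_def sum_list_subtractf sum_list_addf fe sum_list_negf)
    qed
    have lhs: "(\<Sum>x\<leftarrow>torsion sP sH sV \<delta>P \<delta>V \<theta> \<omega> (s_theta \<theta> e). f (fst x) (fst (snd x)) (snd (snd x))) = Dw - N"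
    proof -
      have t'w: "(SOME t. t \<in> E \<and> teq2 sP sP (s_theta \<theta> t) w) = t'" by (simp add: t'_def w_def)
      show ?thesis
        unfolding nab[symmetric] Dw_def torsion_def nabla_def Let_def w_def[symmetric] t'w
        by (simp add: d1_def neg3_def lmul3_def mult11_def fe sum_list_addf sum_list_negf sum_list_subtractf)
    qed
    show "(\<Sum>x\<leftarrow>torsion sP sH sV \<delta>P \<delta>V \<theta> \<omega> (s_theta \<theta> e). f (fst x) (fst (snd x)) (snd (snd x))) =
          (\<Sum>x\<leftarrow>concat (map (\<lambda>(\<xi>, \<eta>). mult11 \<xi> \<eta>) xs). f (fst x) (fst (snd x)) (snd (snd x)))"
    proof -
      have Du: "Dw = (\<Sum>a\<leftarrow>u. f 1 (fst a) (snd a) + f (- fst a) 1 (snd a) + f (fst a) (snd a) 1)"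
        unfolding Dw_def
        apply (rule teq2_use[OF u(1) vsP vsP, of "\<lambda>a b. f 1 a b + f (- a) 1 b + f a b 1"])
        subgoal by simp
        subgoal by (simp add: lin_def fe algebra_simps)
        subgoal by (simp add: lin_def fe algebra_simps)
        done
      have u1: "(\<Sum>a\<leftarrow>u. f 1 (fst a * snd a) 1) = 0"
        using lin_sum_list_eq[OF vsP f2, of 1 "\<lambda>a. fst a * snd a" u 1, symmetric] u0 by (simp add: fe)
      have NX: "N = (\<Sum>\<beta>\<leftarrow>L. \<Sum>x\<leftarrow>Xb \<beta>. Gf \<beta> (fst x) (snd x))"
      proof -
        have "N = (\<Sum>x\<leftarrow>X. Gf (fst x) (fst (snd x)) (snd (snd x)))" by (simp add: N_def X_def)
        also have "\<dots> = (\<Sum>x\<leftarrow>X'. Gf (fst x) (fst (snd x)) (snd (snd x)))" by (rule XX') (simp_all add: Gfl)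
        also have "\<dots> = (\<Sum>\<beta>\<leftarrow>L. \<Sum>x\<leftarrow>Xb \<beta>. Gf \<beta> (fst x) (snd x))" by (rule decK) (simp_all add: Gfl)
        finally show ?thesis .
      qed
      have K00: "(\<Sum>\<beta>\<leftarrow>L. \<Sum>x\<leftarrow>Xb \<beta>. K0 \<beta> (fst x) (snd x)) = 0"
      proof -
        have "(\<Sum>\<beta>\<leftarrow>L. \<Sum>x\<leftarrow>Xb \<beta>. K0 \<beta> (fst x) (snd x)) = (\<Sum>x\<leftarrow>X'. K0 (fst x) (fst (snd x)) (snd (snd x)))"
          by (rule decK[symmetric]) (simp_all add: K0l)
        also have "\<dots> = (\<Sum>x\<leftarrow>X. K0 (fst x) (fst (snd x)) (snd (snd x)))" by (rule XX'[symmetric]) (simp_all add: K0l)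
        also have "\<dots> = 0"
        proof -
          have "(\<Sum>y\<leftarrow>Yp p. K0 (fst y) (snd y) v) = 0" for p v
          proof -
            have L0: "lin sP (\<lambda>z. \<Sum>b\<leftarrow>\<theta> v. f 1 (z * fst b) (snd b))"
              by ((auto intro!: linK)?; simp add: lin_def fe kalgP distrib_right)
            have "(\<Sum>y\<leftarrow>Yp p. K0 (fst y) (snd y) v) = (\<Sum>y\<leftarrow>Yp p. \<Sum>b\<leftarrow>\<theta> v. f 1 (fst y * snd y * fst b) (snd b))"
              by (simp add: K0_def mult.assoc)
            also have "\<dots> = (\<Sum>b\<leftarrow>\<theta> v. f 1 (sum_list (map (\<lambda>(a, b). a * b) (Yp p)) * fst b) (snd b))"
              using lin_sum_list_eq[OF vsP L0, of "\<lambda>y. fst y * snd y" "Yp p"] by simp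
            also have "\<dots> = 0" using Y_prod[of p] by (simp add: fe)
            finally show ?thesis .
          qed
          then show ?thesis by (simp add: X_def)
        qed
        finally show ?thesis .
      qed
      have rhs: "(\<Sum>x\<leftarrow>concat (map (\<lambda>(\<xi>, \<eta>). mult11 \<xi> \<eta>) xs). f (fst x) (fst (snd x)) (snd (snd x)))
         = (\<Sum>a\<leftarrow>u. f 1 (fst a) (snd a) - f 1 (fst a * snd a) 1 + f (- fst a) 1 (snd a) + f (fst a) (snd a) 1)
         + (\<Sum>\<beta>\<leftarrow>L. \<Sum>x\<leftarrow>Xb \<beta>. K0 \<beta> (fst x) (snd x) - Gf \<beta> (fst x) (snd x))"
        by (simp add: xs_def mult11_def dd_def nd_def s_theta_def lmul2_def fe K0_def Gf_def sum_list_addf sum_list_subtractf sum_list_negf)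
      show ?thesis
        unfolding lhs rhs Du NX
        using u1 K00 by (simp add: sum_list_subtractf sum_list_addf)
    qed
  qed
  show ?thesis unfolding Omega2M_def using xsO teq by blast
qed

lemma Dbar_POM: "Dbar v \<in> P_Omega2M sP M"
proof -
  obtain R where R: "\<And>\<beta>. lin sP (\<lambda>a. R \<beta> a)"
    and dec: "\<And>as. \<exists>L. (\<forall>a\<in>set as. a = sum_list (map (\<lambda>\<beta>. sP (R \<beta> a) \<beta>) L)) \<and> ((\<forall>a\<in>set as. a \<in> UNIV) \<longrightarrow> set L \<subseteq> UNIV)"
    using basis_decomp[OF vsP, where V=UNIV] by blast
  obtain L where L1: "\<forall>a\<in>set (map fst (Zl v)). a = sum_list (map (\<lambda>\<beta>. sP (R \<beta> a) \<beta>) L)"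
    using dec[of "map fst (Zl v)"] by auto
  define Zb where "Zb \<beta> = map (\<lambda>x. (sP (R \<beta> (fst x)) (fst (snd x)), snd (snd x))) (Zl v)" for \<beta>
  have ZbE: "Zb \<beta> \<in> E" for \<beta>
    unfolding Esec_def mem_Collect_eq
  proof (rule teq3I[OF vsP vsV vsH])
    fix G :: "'p \<Rightarrow> 'v \<Rightarrow> 'h \<Rightarrow> 'k"
    assume G1: "\<And>y z. lin sP (\<lambda>x. G x y z)" and G2: "\<And>x z. lin sV (\<lambda>y. G x y z)" and G3: "\<And>x y. lin sH (\<lambda>z. G x y z)"
    note Ge = lin_eqs[OF G1 vsP] lin_eqs[OF G2 vsV] lin_eqs[OF G3 vsH]
    have LL: "lin sP (\<lambda>p. \<Sum>q\<leftarrow>\<delta>P p. \<Sum>r\<leftarrow>\<delta>V v. G (fst q) (fst r) (snd q * snd r))" for v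
      by ((auto intro!: linK)?; simp add: lin_def Ge kalgH distrib_right)
    have "(\<Sum>x\<leftarrow>[(p', v', h * g). (p, v) \<leftarrow> Zb \<beta>, (p', h) \<leftarrow> \<delta>P p, (v', g) \<leftarrow> \<delta>V v]. G (fst x) (fst (snd x)) (snd (snd x)))
       = (\<Sum>x\<leftarrow>(Zl v). R \<beta> (fst x) * (\<Sum>q\<leftarrow>\<delta>P (fst (snd x)). \<Sum>r\<leftarrow>\<delta>V (snd (snd x)). G (fst q) (fst r) (snd q * snd r)))"
      by (simp add: Zb_def lin_scale_eq[OF LL])
    also have "\<dots> = (\<Sum>x\<leftarrow>(Zl v). R \<beta> (fst x) * G (fst (snd x)) (snd (snd x)) 1)"
      apply (rule teq4_use[OF Z2[of v] vsP vsP vsV vsH, of "\<lambda>y1 y2 v h. R \<beta> y1 * G y2 v h"])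
      subgoal by (simp add: mult_sum_list_left)
      subgoal by (simp add: lin_def lin_eqs[OF R vsP] distrib_right)
      subgoal by (simp add: lin_def Ge distrib_left)
      subgoal by (simp add: lin_def Ge distrib_left)
      subgoal by (simp add: lin_def Ge distrib_left)
      done
    also have "\<dots> = (\<Sum>x\<leftarrow>[(p, v, 1). (p, v) \<leftarrow> Zb \<beta>]. G (fst x) (fst (snd x)) (snd (snd x)))"
      by (simp add: Zb_def Ge)
    finally show "(\<Sum>x\<leftarrow>[(p', v', h * g). (p, v) \<leftarrow> Zb \<beta>, (p', h) \<leftarrow> \<delta>P p, (v', g) \<leftarrow> \<delta>V v]. G (fst x) (fst (snd x)) (snd (snd x)))
       = (\<Sum>x\<leftarrow>[(p, v, 1). (p, v) \<leftarrow> Zb \<beta>]. G (fst x) (fst (snd x)) (snd (snd x)))" .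
  qed
  define xs where "xs = map (\<lambda>\<beta>. (\<beta>, torsion sP sH sV \<delta>P \<delta>V \<theta> \<omega> (s_theta \<theta> (Zb \<beta>)))) L"
  have xsO: "\<forall>(p, \<xi>)\<in>set xs. \<xi> \<in> Omega2M sP M" using torsion_Om2[OF ZbE] by (auto simp: xs_def)
  have teq: "teq3 sP sP sP (Dbar v) (concat (map (\<lambda>(p, \<xi>). lmul3 p \<xi>) xs))"
  proof (rule teq3I[OF vsP vsP vsP])
    fix f assume f1: "\<And>y z. lin sP (\<lambda>x. f x y z)" and f2: "\<And>x z. lin sP (\<lambda>y. f x y z)" and f3: "\<And>x y. lin sP (\<lambda>z. f x y z)"
    note fe = lin_eqs[OF f1 vsP] lin_eqs[OF f2 vsP] lin_eqs[OF f3 vsP]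
    define \<Phi> where "\<Phi> x w = (\<Sum>c\<leftarrow>Dbar w. f (x * fst c) (fst (snd c)) (snd (snd c)))" for x w
    have \<Phi>1: "lin sP (\<lambda>x. \<Phi> x w)" for w
      unfolding \<Phi>_def by ((auto intro!: linK)?; simp add: lin_def fe kalgP distrib_right)
    have \<Phi>2: "lin sV (\<lambda>w. \<Phi> x w)" for x
      unfolding \<Phi>_def by (rule Dbar_lin) (simp_all add: lin_def fe kalgP distrib_left)
    have "(\<Sum>c\<leftarrow>Dbar v. f (fst c) (fst (snd c)) (snd (snd c))) = \<Phi> 1 v" by (simp add: \<Phi>_def)
    also have "\<dots> = (\<Sum>x\<leftarrow>(Zl v). \<Phi> (fst x * fst (snd x)) (snd (snd x)))"
      using teq2D[OF Z1 vsP vsV, of \<Phi>, OF \<Phi>1 \<Phi>2] by simp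
    also have "\<dots> = (\<Sum>\<beta>\<leftarrow>L. \<Sum>x\<leftarrow>Zb \<beta>. \<Phi> (\<beta> * fst x) (snd x))"
    proof -
      have "\<Phi> (fst x * fst (snd x)) (snd (snd x)) = (\<Sum>\<beta>\<leftarrow>L. \<Phi> (\<beta> * sP (R \<beta> (fst x)) (fst (snd x))) (snd (snd x)))" if "x \<in> set (Zl v)" for x
      proof -
        have e: "fst x = sum_list (map (\<lambda>\<beta>. sP (R \<beta> (fst x)) \<beta>) L)" using L1 that by auto
        have "\<Phi> (fst x * fst (snd x)) (snd (snd x)) = \<Phi> (sum_list (map (\<lambda>\<beta>. sP (R \<beta> (fst x)) \<beta>) L) * fst (snd x)) (snd (snd x))"
          by (rule arg_cong[where f="\<lambda>z. \<Phi> (z * fst (snd x)) (snd (snd x))"]) (rule e)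
        also have "\<dots> = (\<Sum>\<beta>\<leftarrow>L. \<Phi> (\<beta> * sP (R \<beta> (fst x)) (fst (snd x))) (snd (snd x)))"
          by (simp add: mult_sum_list_right lin_sum_list_eq[OF vsP \<Phi>1] kalgP)
        finally show ?thesis .
      qed
      then have "(\<Sum>x\<leftarrow>(Zl v). \<Phi> (fst x * fst (snd x)) (snd (snd x))) = (\<Sum>x\<leftarrow>(Zl v). \<Sum>\<beta>\<leftarrow>L. \<Phi> (\<beta> * sP (R \<beta> (fst x)) (fst (snd x))) (snd (snd x)))"
        by (rule sum_list_map_cong')
      also have "\<dots> = (\<Sum>\<beta>\<leftarrow>L. \<Sum>x\<leftarrow>(Zl v). \<Phi> (\<beta> * sP (R \<beta> (fst x)) (fst (snd x))) (snd (snd x)))"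
        by (rule sum_list_swap)
      finally show ?thesis by (simp add: Zb_def)
    qed
    also have "\<dots> = (\<Sum>\<beta>\<leftarrow>L. \<Sum>c\<leftarrow>torsion sP sH sV \<delta>P \<delta>V \<theta> \<omega> (s_theta \<theta> (Zb \<beta>)). f (\<beta> * fst c) (fst (snd c)) (snd (snd c)))"
    proof -
      have "(\<Sum>x\<leftarrow>Zb \<beta>. \<Phi> (\<beta> * fst x) (snd x)) = (\<Sum>c\<leftarrow>torsion sP sH sV \<delta>P \<delta>V \<theta> \<omega> (s_theta \<theta> (Zb \<beta>)). f (\<beta> * fst c) (fst (snd c)) (snd (snd c)))" for \<beta>
        apply (rule teq3_use[OF teq3_sym[OF torsion_eq[OF ZbE[of \<beta>]]] vsP vsP vsP, of "\<lambda>a b c. f (\<beta> * a) b c"])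
        subgoal by (simp add: \<Phi>_def lmul3_def mult.assoc)
        subgoal by (simp add: lin_def fe kalgP distrib_left)
        subgoal by (simp add: lin_def fe)
        subgoal by (simp add: lin_def fe)
        done
      then show ?thesis by simp
    qed
    also have "\<dots> = (\<Sum>c\<leftarrow>concat (map (\<lambda>(p, \<xi>). lmul3 p \<xi>) xs). f (fst c) (fst (snd c)) (snd (snd c)))"
      by (simp add: xs_def lmul3_def)
    finally show "(\<Sum>c\<leftarrow>Dbar v. f (fst c) (fst (snd c)) (snd (snd c))) = (\<Sum>c\<leftarrow>concat (map (\<lambda>(p, \<xi>). lmul3 p \<xi>) xs). f (fst c) (fst (snd c)) (snd (snd c)))" .
  qed
  show ?thesis unfolding P_Omega2M_def using xsO teq by blast
qed

lemma main: "rst2 sP sH sV \<delta>P \<delta>V Dbar \<and> (\<forall>t \<in> E. teq3 sP sP sP (torsion sP sH sV \<delta>P \<delta>V \<theta> \<omega> (s_theta \<theta> t))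
                 (concat (map (\<lambda>(p, v). lmul3 p (Dbar v)) t)))"
  unfolding rst2_def using Dbar_tlin Dbar_comod Dbar_POM torsion_eq by blast

end

theorem proposition3p5:
  fixes sP :: "'k::field \<Rightarrow> 'p::ring_1 \<Rightarrow> 'p"
    and sH :: "'k \<Rightarrow> 'h::ring_1 \<Rightarrow> 'h"
    and sV :: "'k \<Rightarrow> 'v::ab_group_add \<Rightarrow> 'v"
    and \<Delta> :: "'h \<Rightarrow> ('h \<times> 'h) list" and \<epsilon> :: "'h \<Rightarrow> 'k" and S :: "'h \<Rightarrow> 'h"
    and \<delta>P :: "'p \<Rightarrow> ('p \<times> 'h) list" and \<delta>V :: "'v \<Rightarrow> ('v \<times> 'h) list"
    and \<theta> :: "'v \<Rightarrow> ('p \<times> 'p) list" and \<omega> :: "'h \<Rightarrow> ('p \<times> 'p) list"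
  assumes "frame_resolution sP sH sV \<Delta> \<epsilon> S \<delta>P \<delta>V \<theta>"
    and "connection sP sH \<Delta> \<epsilon> S \<delta>P \<omega>"
    and "left_strong sP sH \<delta>P \<omega>"
  shows "rst2 sP sH sV \<delta>P \<delta>V (Dbar_theta S \<delta>V \<theta> \<omega>) \<and>
         (\<forall>t \<in> Esec sP sH sV \<delta>P \<delta>V.
            teq3 sP sP sP (torsion sP sH sV \<delta>P \<delta>V \<theta> \<omega> (s_theta \<theta> t))
                 (concat (map (\<lambda>(p, v). lmul3 p (Dbar_theta S \<delta>V \<theta> \<omega> v)) t)))"
proof -
  interpret setting sP sH sV \<Delta> \<epsilon> S \<delta>P \<delta>V \<theta> \<omega> using assms by unfold_locales
  show ?thesis by (rule main)
qed

end
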